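(* Assume the standing setting and Assumptions (A1)–(A2) described in the context, and fix $\xi\in L^2_{\mathcal{F}_{N-1}}(\Omega;\mathbb{R}^n)$. Then for every $u\in\mathcal{U}$ the map $u\mapsto\mathcal{J}(N,\xi;u)$ is Fréchet differentiable at $u$, and its derivative $\mathcal{J}'(N,\xi;u)$ satisfies $[[\mathcal{J}'(N,\xi;u),v]]=[[\mathcal{A}u+\mathcal{B}\xi+\mathbf{a},v]]$ for all $v\in\mathcal{U}$, where $\mathcal{A}=\mathcal{L}_0^*G_0\mathcal{L}_0+\mathcal{L}_1^*\Phi^*Q\Phi\mathcal{L}_1+\mathcal{L}_1^*\Phi^*S^\top+S\Phi\mathcal{L}_1+R$, $\mathcal{B}=\mathcal{L}_0^*G_0\mathcal{I}_0+\mathcal{L}_1^*\Phi^*Q\Phi\mathcal{I}_1+S\Phi\mathcal{I}_1$, and $\mathbf{a}=\mathcal{L}_0^*G_0\mathcal{Q}_0+\mathcal{L}_1^*\Phi^*Q\Phi\mathcal{Q}_1+\mathcal{L}_1^*\Phi^*\eta+S\Phi\mathcal{Q}_1+\rho$.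
   Context: Fix integers $N\ge 1$, $n,m\ge1$, and let $\mathcal{T}=\{0,1,\dots,N-1\}$. Let $(\Omega,\mathcal{F},\mathbb{P})$ be a complete probability space carrying a scalar random sequence $\{\omega_k\}_{k\in\mathcal{T}}$; let $\mathcal{F}_k=\sigma\{\omega_0,\dots,\omega_k\}$ ($\mathbb{P}$-completed), $\mathcal{F}_{-1}$ trivial, and assume $\mathbb{E}[\omega_k\mid\mathcal{F}_{k-1}]=0$, $\mathbb{E}[\omega_k^2\mid\mathcal{F}_{k-1}]=1$ for $k\in\mathcal{T}$. $\mathbb{E}_{k-1}[\cdot]=\mathbb{E}[\cdot\mid\mathcal{F}_{k-1}]$. $L^2_{\mathcal{F}_{j}}(\Omega;\mathbb{R}^n)$ = square-integrable $\mathcal{F}_j$-measurable $\mathbb{R}^n$-valued random variables; $L^2_{\mathbb{F}}(\mathcal{T};\mathbb{R}^d)$ = processes $(h_k)_{k\in\mathcal{T}}$ with $h_k$ $\mathcal{F}_{k-1}$-measurable and $\mathbb{E}\sum_k|h_k|^2<\infty$. $\mathcal{U}=L^2_{\mathbb{F}}(\mathcal{T};\mathbb{R}^m)$. Assumption (A1): $A_k,C_k\in\mathbb{R}^{n\times n}$, $B_k\in\mathbb{R}^{n\times m}$ deterministic, $q\in L^2_{\mathbb{F}}(\mathcal{T};\mathbb{R}^n)$. Assumption (A2): $G_0\in\mathbb{S}^n$, $Q_k\in\mathbb{S}^n$, $R_k\in\mathbb{S}^m$, $S_k\in\mathbb{R}^{m\times n}$ deterministic; $\eta\in L^2_{\mathbb{F}}(\mathcal{T};\mathbb{R}^n)$,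 $\rho\in L^2_{\mathbb{F}}(\mathcal{T};\mathbb{R}^m)$. State equation: $y_k=A_k\mathbb{E}_{k-1}[y_{k+1}]+B_ku_k+C_k\mathbb{E}_{k-1}[y_{k+1}\omega_k]+q_k$ ($k\in\mathcal{T}$), $y_N=\xi$; under (A1) it has a unique adapted square-integrable solution $y^{(\xi,u)}$ depending boundedly and affinely on $(\xi,u,q)$. Cost: $\mathcal{J}(N,\xi;u)=\frac12\mathbb{E}\{\langle G_0y_0,y_0\rangle+\sum_{k=0}^{N-1}[\langle Q_k\bar y_k,\bar y_k\rangle+2\langle S_k\bar y_k,u_k\rangle+\langle R_ku_k,u_k\rangle+2\langle\eta_k,\bar y_k\rangle+2\langle\rho_k,u_k\rangle]\}$ with $\bar y_k=\mathbb{E}_{k-1}[y_{k+1}]$, $y=y^{(\xi,u)}$. Operators: let $\mathscr{X}_{-1}=L^2_{\mathcal{F}_{-1}}(\Omega;\mathbb{R}^n)$, $\mathscr{X}_{N-1}=L^2_{\mathcal{F}_{N-1}}(\Omega;\mathbb{R}^n)$ (inner product $\mathbb{E}\langle X,Y\rangle$), $\mathscr{Z}=L^2_{\mathbb{F}}(\mathcal{T};\mathbb{R}^n)$, $\mathscr{Y}$ = processes $(\phi_k)_{k\in\mathcal{T}}$ with $\phi_k$ $\mathcal{F}_k$-measurable and $\mathbb{E}\sum|\phi_k|^2<\infty$; on $\mathscr{Y},\mathscr{Z},\mathcal{U}$ use $[[\phi,\psi]]=\mathbb{E}\sum_{k=0}^{N-1}\langle\phi_k,\psi_k\rangle$. Let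 $y^\xi$ solve the state equation with terminal $\xi$, zero control, $q=0$; $y^u$ with terminal $0$, control $u$, $q=0$; $y^0$ with terminal $0$, zero control and the given $q$. Define $\mathcal{I}_0\xi=y^\xi_0$, $(\mathcal{I}_1\xi)_k=y^\xi_{k+1}$; $\mathcal{L}_0u=y^u_0$, $(\mathcal{L}_1u)_k=y^u_{k+1}$; $\mathcal{Q}_0=y^0_0\in\mathscr{X}_{-1}$, $(\mathcal{Q}_1)_k=y^0_{k+1}$ (so $\mathcal{Q}_1\in\mathscr{Y}$); $\Phi:\mathscr{Y}\to\mathscr{Z}$, $(\Phi\phi)_k=\mathbb{E}_{k-1}[\phi_k]$; pointwise multiplication operators $(Q\phi)_k=Q_k\phi_k$ on $\mathscr{Z}$, $(S\phi)_k=S_k\phi_k$ from $\mathscr{Z}$ to $\mathcal{U}$, $(S^\top u)_k=S_k^\top u_k$ from $\mathcal{U}$ to $\mathscr{Z}$, $(Ru)_k=R_ku_k$ on $\mathcal{U}$; $G_0$ acts on $\mathscr{X}_{-1}$ by multiplication. All are bounded linear; ${}^*$ denotes Hilbert-space adjoint. $\eta,\rho$ are regarded as elements of $\mathscr{Z}$ and $\mathcal{U}$. *)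

theory Defs
  imports "HOL-Probability.Probability"
begin

text \<open>Index shift: filt M w j is the P-completed sigma-algebra generated by w 0, ..., w (j-1);
  hence filt M w (Suc k) = F_k and filt M w k = F_(k-1), filt M w 0 = F_(-1).\<close>

definition filt :: "'a measure \<Rightarrow> (nat \<Rightarrow> 'a \<Rightarrow> real) \<Rightarrow> nat \<Rightarrow> 'a measure" where
  "filt M w j = sigma (space M)
     ({w i -` B \<inter> space M | i B. i < j \<and> B \<in> sets borel} \<union> null_sets M)"

definition cexp :: "'a measure \<Rightarrow> 'a measure \<Rightarrow> ('a \<Rightarrow> real^'d) \<Rightarrow> 'a \<Rightarrow> real^'d" where
  "cexp M F X = (\<lambda>x. \<chi> i. real_cond_exp M F (\<lambda>y. X y $ i) x)"

definition sqint :: "'a measure \<Rightarrow> 'a measure \<Rightarrow> ('a \<Rightarrow> real^'d) \<Rightarrow> bool" where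
  "sqint M F X \<longleftrightarrow> X \<in> borel_measurable F \<and> integrable M (\<lambda>x. (norm (X x))\<^sup>2)"

text \<open>L^2_F(T;R^d): predictable processes (h_k is F_(k-1)-measurable), k < N.\<close>
definition predL2 :: "'a measure \<Rightarrow> (nat \<Rightarrow> 'a \<Rightarrow> real) \<Rightarrow> nat \<Rightarrow> (nat \<Rightarrow> 'a \<Rightarrow> real^'d) \<Rightarrow> bool" where
  "predL2 M w N h \<longleftrightarrow> (\<forall>k<N. sqint M (filt M w k) (h k))"

text \<open>The space Y: adapted processes (phi_k is F_k-measurable), k < N.\<close>
definition adaptL2 :: "'a measure \<Rightarrow> (nat \<Rightarrow> 'a \<Rightarrow> real) \<Rightarrow> nat \<Rightarrow> (nat \<Rightarrow> 'a \<Rightarrow> real^'d) \<Rightarrow> bool" where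
  "adaptL2 M w N h \<longleftrightarrow> (\<forall>k<N. sqint M (filt M w (Suc k)) (h k))"

definition ipp :: "'a measure \<Rightarrow> nat \<Rightarrow> (nat \<Rightarrow> 'a \<Rightarrow> real^'d) \<Rightarrow> (nat \<Rightarrow> 'a \<Rightarrow> real^'d) \<Rightarrow> real" where
  "ipp M N f g = (\<integral>x. (\<Sum>k<N. inner (f k x) (g k x)) \<partial>M)"

definition ipx :: "'a measure \<Rightarrow> ('a \<Rightarrow> real^'d) \<Rightarrow> ('a \<Rightarrow> real^'d) \<Rightarrow> real" where
  "ipx M X Y = (\<integral>x. inner (X x) (Y x) \<partial>M)"

text \<open>Hilbert-space adjoint: T maps the domain D (inner product ipD) into a space with
  inner product ipC; adj gives, for x in the codomain, an element z of D with
  ipD z v = ipC x (T v) for all v in D (unique up to null elements).\<close>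
definition hadj :: "'b set \<Rightarrow> ('b \<Rightarrow> 'b \<Rightarrow> real) \<Rightarrow> ('c \<Rightarrow> 'c \<Rightarrow> real) \<Rightarrow> ('b \<Rightarrow> 'c) \<Rightarrow> 'c \<Rightarrow> 'b" where
  "hadj D ipD ipC T x = (SOME z. z \<in> D \<and> (\<forall>v\<in>D. ipD z v = ipC x (T v)))"

definition is_sol :: "'a measure \<Rightarrow> (nat \<Rightarrow> 'a \<Rightarrow> real) \<Rightarrow> nat
   \<Rightarrow> (nat \<Rightarrow> real^'n^'n) \<Rightarrow> (nat \<Rightarrow> real^'m^'n) \<Rightarrow> (nat \<Rightarrow> real^'n^'n)
   \<Rightarrow> (nat \<Rightarrow> 'a \<Rightarrow> real^'n) \<Rightarrow> ('a \<Rightarrow> real^'n) \<Rightarrow> (nat \<Rightarrow> 'a \<Rightarrow> real^'m)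
   \<Rightarrow> (nat \<Rightarrow> 'a \<Rightarrow> real^'n) \<Rightarrow> bool" where
  "is_sol M w N A B C q xi u y \<longleftrightarrow>
     (\<forall>k<N. sqint M (filt M w (Suc k)) (y k)) \<and> sqint M (filt M w N) (y N) \<and>
     (AE x in M. y N x = xi x) \<and>
     (\<forall>k<N. AE x in M. y k x =
        A k *v cexp M (filt M w k) (y (Suc k)) x + B k *v u k x
        + C k *v cexp M (filt M w k) (\<lambda>z. w k z *\<^sub>R y (Suc k) z) x + q k x)"

definition sol :: "'a measure \<Rightarrow> (nat \<Rightarrow> 'a \<Rightarrow> real) \<Rightarrow> nat
   \<Rightarrow> (nat \<Rightarrow> real^'n^'n) \<Rightarrow> (nat \<Rightarrow> real^'m^'n) \<Rightarrow> (nat \<Rightarrow> real^'n^'n)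
   \<Rightarrow> (nat \<Rightarrow> 'a \<Rightarrow> real^'n) \<Rightarrow> ('a \<Rightarrow> real^'n) \<Rightarrow> (nat \<Rightarrow> 'a \<Rightarrow> real^'m)
   \<Rightarrow> nat \<Rightarrow> 'a \<Rightarrow> real^'n" where
  "sol M w N A B C q xi u = (SOME y. is_sol M w N A B C q xi u y)"

definition cost :: "'a measure \<Rightarrow> (nat \<Rightarrow> 'a \<Rightarrow> real) \<Rightarrow> nat
   \<Rightarrow> (nat \<Rightarrow> real^'n^'n) \<Rightarrow> (nat \<Rightarrow> real^'m^'n) \<Rightarrow> (nat \<Rightarrow> real^'n^'n)
   \<Rightarrow> (nat \<Rightarrow> 'a \<Rightarrow> real^'n)
   \<Rightarrow> real^'n^'n \<Rightarrow> (nat \<Rightarrow> real^'n^'n) \<Rightarrow> (nat \<Rightarrow> real^'n^'m) \<Rightarrow> (nat \<Rightarrow> real^'m^'m)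
   \<Rightarrow> (nat \<Rightarrow> 'a \<Rightarrow> real^'n) \<Rightarrow> (nat \<Rightarrow> 'a \<Rightarrow> real^'m)
   \<Rightarrow> ('a \<Rightarrow> real^'n) \<Rightarrow> (nat \<Rightarrow> 'a \<Rightarrow> real^'m) \<Rightarrow> real" where
  "cost M w N A B C q G0 Q S R eta rho xi u =
     (let y = sol M w N A B C q xi u;
          yb = (\<lambda>k. cexp M (filt M w k) (y (Suc k)))
      in (1/2) * (\<integral>x. inner (G0 *v y 0 x) (y 0 x)
           + (\<Sum>k<N. inner (Q k *v yb k x) (yb k x) + 2 * inner (S k *v yb k x) (u k x)
                 + inner (R k *v u k x) (u k x) + 2 * inner (eta k x) (yb k x)
                 + 2 * inner (rho k x) (u k x)) \<partial>M))"

definition frechet_at :: "(nat \<Rightarrow> 'a \<Rightarrow> real^'m) set \<Rightarrow> ((nat \<Rightarrow> 'a \<Rightarrow> real^'m) \<Rightarrow> real)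
   \<Rightarrow> ((nat \<Rightarrow> 'a \<Rightarrow> real^'m) \<Rightarrow> real) \<Rightarrow> (nat \<Rightarrow> 'a \<Rightarrow> real^'m)
   \<Rightarrow> ((nat \<Rightarrow> 'a \<Rightarrow> real^'m) \<Rightarrow> real) \<Rightarrow> bool" where
  "frechet_at D nrm J u Df \<longleftrightarrow>
     (\<forall>v\<in>D. \<forall>v'\<in>D. \<forall>a b. Df (\<lambda>k x. a *\<^sub>R v k x + b *\<^sub>R v' k x) = a * Df v + b * Df v') \<and>
     (\<exists>K. \<forall>v\<in>D. \<bar>Df v\<bar> \<le> K * nrm v) \<and>
     (\<forall>e>0. \<exists>d>0. \<forall>v\<in>D. nrm v < d \<longrightarrow>
        \<bar>J (\<lambda>k x. u k x + v k x) - J u - Df v\<bar> \<le> e * nrm v)"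

end

theory Submission
  imports Defs
begin


lemma vec_measurableI:
  fixes f :: "'a \<Rightarrow> real^'n"
  assumes "\<And>i. (\<lambda>x. f x $ i) \<in> borel_measurable M"
  shows "f \<in> borel_measurable M"
  unfolding borel_measurable_euclidean_space[where 'c="real^'n"]
  using assms by (auto simp: Basis_vec_def inner_axis)

locale stp =
  fixes M :: "'a measure" and w :: "nat \<Rightarrow> 'a \<Rightarrow> real" and N :: nat
  assumes ps: "prob_space M" and cm: "complete_measure M"
    and wm: "\<And>k. k<N \<Longrightarrow> w k \<in> borel_measurable M"
    and wi: "\<And>k. k<N \<Longrightarrow> integrable M (\<lambda>x. (w k x)\<^sup>2)"
    and w1: "\<And>k. k<N \<Longrightarrow> AE x in M. real_cond_exp M (filt M w k) (\<lambda>y. (w k y)\<^sup>2) x = 1"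
begin

abbreviation "F \<equiv> filt M w"

definition gen :: "nat \<Rightarrow> 'a set set" where
  "gen j = {w i -` B \<inter> space M | i B. i < j \<and> B \<in> sets borel} \<union> null_sets M"

lemma gen_pow: "gen j \<subseteq> Pow (space M)"
  unfolding gen_def using sets.sets_into_space by (auto dest: null_setsD2)

lemma gen_sub: "j \<le> N \<Longrightarrow> gen j \<subseteq> sets M"
  unfolding gen_def using wm by auto

lemma sets_F: "sets (F j) = sigma_sets (space M) (gen j)"
  unfolding filt_def gen_def[symmetric] using gen_pow by (simp add: sets_measure_of)

lemma space_F[simp]: "space (F j) = space M"
  unfolding filt_def by (simp add: space_measure_of_conv)

lemma sets_F_sub: "j \<le> N \<Longrightarrow> sets (F j) \<subseteq> sets M"
  unfolding sets_F using gen_sub by (simp add: sets.sigma_sets_subset)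

lemma gen_mono: "j \<le> j' \<Longrightarrow> gen j \<subseteq> gen j'"
proof
  fix A assume jj: "j \<le> j'" and "A \<in> gen j"
  then consider (a) i B where "A = w i -` B \<inter> space M" "i < j" "B \<in> sets borel" | (b) "A \<in> null_sets M"
    unfolding gen_def by blast
  then show "A \<in> gen j'"
  proof cases
    case a
    then have "i < j'" using jj by simp
    then show ?thesis unfolding gen_def using a by blast
  qed (simp add: gen_def)
qed

lemma F_mono: "j \<le> j' \<Longrightarrow> sets (F j) \<subseteq> sets (F j')"
  unfolding sets_F by (rule sigma_sets_mono') (rule gen_mono)

lemma null_F: "A \<in> null_sets M \<Longrightarrow> A \<in> sets (F j)"
  unfolding sets_F gen_def by (auto intro: sigma_sets.Basic)

lemma w_F: "i < j \<Longrightarrow> w i \<in> borel_measurable (F j)"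
  by (rule measurableI) (auto simp: sets_F gen_def intro!: sigma_sets.Basic)

lemma subalg: "j \<le> N \<Longrightarrow> subalgebra M (F j)"
  using sets_F_sub by (simp add: subalgebra_def)

lemma subalg2: "j \<le> j' \<Longrightarrow> subalgebra (F j') (F j)"
  using F_mono by (simp add: subalgebra_def)

lemma sfs: "j \<le> N \<Longrightarrow> sigma_finite_subalgebra M (F j)"
proof -
  assume "j \<le> N"
  interpret prob_space M by (rule ps)
  have "finite_measure_subalgebra M (F j)"
    unfolding finite_measure_subalgebra_def finite_measure_subalgebra_axioms_def
    using subalg[OF \<open>j \<le> N\<close>] finite_measure_axioms by simp
  then show ?thesis by (rule finite_measure_subalgebra_is_sigma_finite)
qed

lemma meas_FM: "j \<le> N \<Longrightarrow> f \<in> borel_measurable (F j) \<Longrightarrow> f \<in> borel_measurable M"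
  using measurable_from_subalg[OF subalg] by blast

lemma meas_Fmono: "j \<le> j' \<Longrightarrow> f \<in> borel_measurable (F j) \<Longrightarrow> f \<in> borel_measurable (F j')"
  using measurable_from_subalg[OF subalg2] by blast

lemma meas_complete:
  assumes f: "f \<in> borel_measurable (F j)" and ae: "AE x in M. f x = g x"
  shows "g \<in> borel_measurable (F j)"
proof -
  obtain Nn where Nn0: "{x \<in> space M. f x \<noteq> g x} \<subseteq> Nn" "emeasure M Nn = 0" "Nn \<in> sets M"
    using AE_E[OF ae] by blast
  then have Nn: "{x \<in> space M. f x \<noteq> g x} \<subseteq> Nn" "Nn \<in> null_sets M" by (auto intro: null_setsI)
  show ?thesis
  proof (rule measurableI)
    fix B :: "'b set" assume B: "B \<in> sets borel"
    have eq: "g -` B \<inter> space (F j) = ((f -` B \<inter> space (F j)) - Nn) \<union> (g -` B \<inter> space M \<inter> Nn)"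
      using Nn(1) by auto
    have 1: "f -` B \<inter> space (F j) \<in> sets (F j)" using measurable_sets[OF f B] .
    have "g -` B \<inter> space M \<inter> Nn \<in> sets M"
      by (rule complete_measure.complete[OF cm _ Nn(2)]) blast
    then have "g -` B \<inter> space M \<inter> Nn \<in> null_sets M"
      using null_sets_subset[OF Nn(2)] by blast
    then have 2: "g -` B \<inter> space M \<inter> Nn \<in> sets (F j)" by (rule null_F)
    show "g -` B \<inter> space (F j) \<in> sets (F j)"
      unfolding eq using 1 2 null_F[OF Nn(2)] by auto
  qed auto
qed

end


lemma sq_add_le: "((a::real) + b)\<^sup>2 \<le> 2 * a\<^sup>2 + 2 * b\<^sup>2"
proof -
  have "0 \<le> (a - b)\<^sup>2" by simp
  then show ?thesis by (simp add: power2_eq_square algebra_simps)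
qed

lemma norm_add_sq: "(norm (x + y))\<^sup>2 \<le> 2 * (norm x)\<^sup>2 + 2 * (norm (y::'b::real_normed_vector))\<^sup>2"
proof -
  have "norm (x + y) \<le> norm x + norm y" by (rule norm_triangle_ineq)
  then have "(norm (x + y))\<^sup>2 \<le> (norm x + norm y)\<^sup>2" by (simp add: power_mono)
  also have "\<dots> \<le> 2 * (norm x)\<^sup>2 + 2 * (norm y)\<^sup>2" by (rule sq_add_le)
  finally show ?thesis .
qed

lemma abs_inner_le: "\<bar>inner x y\<bar> \<le> (norm x)\<^sup>2 / 2 + (norm (y::'b::real_inner))\<^sup>2 / 2"
proof -
  have "\<bar>inner x y\<bar> \<le> norm x * norm y" by (rule Cauchy_Schwarz_ineq2)
  moreover have "0 \<le> (norm x - norm y)\<^sup>2" by simp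
  ultimately show ?thesis by (simp add: power2_eq_square algebra_simps)
qed

lemma matrix_bound: "\<exists>c\<ge>0. \<forall>x. norm ((A::real^'n^'m) *v x) \<le> c * norm x"
  using onorm[OF matrix_vector_mul_bounded_linear] onorm_pos_le[OF matrix_vector_mul_bounded_linear]
  by blast

lemma matrix_sq_bound: "\<exists>c\<ge>0. \<forall>x. (norm ((A::real^'n^'m) *v x))\<^sup>2 \<le> c * (norm x)\<^sup>2"
proof -
  obtain c where c: "c \<ge> 0" "\<forall>x. norm (A *v x) \<le> c * norm x" using matrix_bound by blast
  have "(norm (A *v x))\<^sup>2 \<le> c\<^sup>2 * (norm x)\<^sup>2" for x
  proof -
    have "(norm (A *v x))\<^sup>2 \<le> (c * norm x)\<^sup>2" using c by (intro power_mono) auto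
    then show ?thesis by (simp add: power_mult_distrib)
  qed
  then show ?thesis by (intro exI[of _ "c\<^sup>2"]) auto
qed

lemma inner_mat: "inner ((A::real^'n^'m) *v x) y = inner x (transpose A *v y)"
  by (metis dot_lmul_matrix inner_commute transpose_matrix_vector)

lemma mat_meas_borel: "(\<lambda>v. (A::real^'n^'m) *v v) \<in> borel_measurable borel"
  by (intro borel_measurable_continuous_onI linear_continuous_on matrix_vector_mul_bounded_linear)

lemma mat_meas[measurable]: "f \<in> borel_measurable M \<Longrightarrow> (\<lambda>x. (A::real^'n^'m) *v f x) \<in> borel_measurable M"
  using measurable_compose[OF _ mat_meas_borel] by blast

lemma sqint_meas: "sqint M F X \<Longrightarrow> X \<in> borel_measurable F"
  by (simp add: sqint_def)

lemma sqint_int: "sqint M F X \<Longrightarrow> integrable M (\<lambda>x. (norm (X x))\<^sup>2)"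
  by (simp add: sqint_def)

lemma sqint_add:
  fixes X Y :: "'a \<Rightarrow> real^'d"
  assumes X: "sqint M F X" and Y: "sqint M F Y" and MF: "X \<in> borel_measurable M" "Y \<in> borel_measurable M"
  shows "sqint M F (\<lambda>x. X x + Y x)"
  unfolding sqint_def
proof
  show "(\<lambda>x. X x + Y x) \<in> borel_measurable F" using X Y by (auto simp: sqint_def intro!: borel_measurable_add)
  have "integrable M (\<lambda>x. 2 * (norm (X x))\<^sup>2 + 2 * (norm (Y x))\<^sup>2)"
    using X Y by (simp add: sqint_def)
  then show "integrable M (\<lambda>x. (norm (X x + Y x))\<^sup>2)"
    by (rule Bochner_Integration.integrable_bound) (use MF norm_add_sq in auto)
qed

lemma sqint_mat:
  fixes X :: "'a \<Rightarrow> real^'d"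
  assumes X: "sqint M F X" and MF: "X \<in> borel_measurable M"
  shows "sqint M F (\<lambda>x. (A::real^'d^'e) *v X x)"
  unfolding sqint_def
proof
  show "(\<lambda>x. A *v X x) \<in> borel_measurable F" using X
    by (simp add: sqint_def mat_meas)
  obtain c where c: "c \<ge> 0" "\<forall>x. (norm (A *v x))\<^sup>2 \<le> c * (norm x)\<^sup>2" using matrix_sq_bound by blast
  have "integrable M (\<lambda>x. c * (norm (X x))\<^sup>2)"
    using X by (simp add: sqint_def)
  then show "integrable M (\<lambda>x. (norm (A *v X x))\<^sup>2)"
    by (rule Bochner_Integration.integrable_bound) (use MF c mat_meas in auto)
qed

lemma sqint_scale:
  fixes X :: "'a \<Rightarrow> real^'d"
  assumes X: "sqint M F X"
  shows "sqint M F (\<lambda>x. c *\<^sub>R X x)"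
  using X unfolding sqint_def by (auto simp: power_mult_distrib intro!: borel_measurable_scaleR)

lemma sqint_zero: "sqint M F (\<lambda>x. 0::real^'d)"
  unfolding sqint_def by simp

lemma sqint_subalg: "sqint M F X \<Longrightarrow> subalgebra G F \<Longrightarrow> sqint M G X"
  unfolding sqint_def using measurable_from_subalg by blast

lemma L2_inner:
  fixes X Y :: "'a \<Rightarrow> real^'d"
  assumes X: "sqint M M X" and Y: "sqint M M Y"
  shows "integrable M (\<lambda>x. inner (X x) (Y x))"
proof -
  have "integrable M (\<lambda>x. (norm (X x))\<^sup>2 / 2 + (norm (Y x))\<^sup>2 / 2)"
    using X Y by (simp add: sqint_def)
  then show ?thesis
    by (rule Bochner_Integration.integrable_bound) (use X Y abs_inner_le in \<open>auto simp: sqint_def\<close>)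
qed



lemma min_nat_tendsto: "(\<lambda>n. min (a::real) (real n)) \<longlonglongrightarrow> a"
proof -
  obtain n0 where "a \<le> real n0" using real_arch_simple by blast
  then have "eventually (\<lambda>n. min a (real n) = a) sequentially"
    unfolding eventually_sequentially by (intro exI[of _ n0]) auto
  then show ?thesis by (rule tendsto_eventually)
qed

definition clip :: "real \<Rightarrow> real \<Rightarrow> real" where
  "clip c a = max (- c) (min c a)"

lemma clip_tendsto: "(\<lambda>n. clip (real n) a) \<longlonglongrightarrow> a"
proof -
  obtain n0 where "\<bar>a\<bar> \<le> real n0" using real_arch_simple by blast
  then have "eventually (\<lambda>n. clip (real n) a = a) sequentially"
    unfolding eventually_sequentially clip_def by (intro exI[of _ n0]) auto
  then show ?thesis by (rule tendsto_eventually)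
qed

lemma clip_sq_le: assumes c: "0 \<le> c" shows "(clip c a)\<^sup>2 \<le> clip c a * a"
proof (cases "a \<le> -c")
  case True
  then have "clip c a = - c" unfolding clip_def using c by auto
  moreover have "c * a \<le> c * (- c)" using True c by (intro mult_left_mono) auto
  ultimately show ?thesis by (simp add: power2_eq_square)
next
  case False
  show ?thesis
  proof (cases "c \<le> a")
    case True
    then have "clip c a = c" unfolding clip_def using c by auto
    moreover have "c * c \<le> c * a" using True c by (intro mult_left_mono) auto
    ultimately show ?thesis by (simp add: power2_eq_square)
  next
    case F2: False
    then have "clip c a = a" unfolding clip_def using False by auto
    then show ?thesis by (simp add: power2_eq_square)
  qed
qed

lemma clip_abs: "0 \<le> c \<Longrightarrow> \<bar>clip c a\<bar> \<le> c"
  unfolding clip_def by auto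

lemma clip_sq_mono: "0 \<le> c \<Longrightarrow> c \<le> d \<Longrightarrow> (clip c a)\<^sup>2 \<le> (clip d a)\<^sup>2"
proof -
  assume "0 \<le> c" "c \<le> d"
  then have "\<bar>clip c a\<bar> \<le> \<bar>clip d a\<bar>" unfolding clip_def by auto
  then show ?thesis by (simp add: abs_le_square_iff)
qed

lemma clip_meas[measurable]: "f \<in> borel_measurable M \<Longrightarrow> (\<lambda>x. clip c (f x)) \<in> borel_measurable M"
  unfolding clip_def by (auto intro!: borel_measurable_max borel_measurable_min)

lemma mono_conv_bound:
  fixes g :: "nat \<Rightarrow> 'a \<Rightarrow> real"
  assumes gi: "\<And>n. integrable M (g n)" and g0: "\<And>n x. 0 \<le> g n x" and gm: "\<And>x. mono (\<lambda>n. g n x)"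
    and gl: "\<And>x. (\<lambda>n. g n x) \<longlonglongrightarrow> h x" and hm: "h \<in> borel_measurable M"
    and gK: "\<And>n. integral\<^sup>L M (g n) \<le> K"
  shows "integrable M h \<and> integral\<^sup>L M h \<le> K"
proof -
  have inc: "incseq (\<lambda>n. integral\<^sup>L M (g n))"
    unfolding incseq_def using gm gi by (auto intro!: integral_mono simp: mono_def)
  have bdd: "bdd_above (range (\<lambda>n. integral\<^sup>L M (g n)))" by (intro bdd_aboveI2[where M=K]) (rule gK)
  have lim: "(\<lambda>n. integral\<^sup>L M (g n)) \<longlonglongrightarrow> (SUP n. integral\<^sup>L M (g n))"
    by (rule LIMSEQ_incseq_SUP[OF bdd inc])
  have "integrable M h" "integral\<^sup>L M h = (SUP n. integral\<^sup>L M (g n))"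
    using integral_monotone_convergence_nonneg[OF gi _ _ _ lim hm] gm g0 gl by auto
  moreover have "(SUP n. integral\<^sup>L M (g n)) \<le> K" by (rule cSUP_least) (auto simp: gK)
  ultimately show ?thesis by simp
qed

lemma int_prod:
  fixes f g :: "'a \<Rightarrow> real"
  assumes "integrable M (\<lambda>x. (f x)\<^sup>2)" "integrable M (\<lambda>x. (g x)\<^sup>2)"
    "f \<in> borel_measurable M" "g \<in> borel_measurable M"
  shows "integrable M (\<lambda>x. f x * g x)"
proof -
  have "integrable M (\<lambda>x. (f x)\<^sup>2 / 2 + (g x)\<^sup>2 / 2)" using assms by simp
  then show ?thesis
    by (rule Bochner_Integration.integrable_bound) (use assms abs_inner_le[of "f x" "g x" for x] in auto)
qed

lemma norm_sq_sum: "(norm (x::real^'n))\<^sup>2 = (\<Sum>i\<in>UNIV. (x$i)\<^sup>2)"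
  unfolding power2_norm_eq_inner inner_vec_def by (simp add: power2_eq_square)

lemma inner_sum: "inner (x::real^'n) y = (\<Sum>i\<in>UNIV. x$i * y$i)"
  by (simp add: inner_vec_def)

lemma cexp_comp[simp]: "cexp M G X x $ i = real_cond_exp M G (\<lambda>y. X y $ i) x"
  by (simp add: cexp_def)

lemma cexp_meas: "cexp M G X \<in> borel_measurable G"
  by (rule vec_measurableI) (simp add: borel_measurable_cond_exp)

lemma comp_meas: fixes X :: "'a \<Rightarrow> real^'n" assumes "X \<in> borel_measurable G" shows "(\<lambda>y. X y $ i) \<in> borel_measurable G"
  using measurable_compose[OF assms borel_measurable_nth[of i]] .

lemma sqint_L2: "sqint M G X \<Longrightarrow> subalgebra M G \<Longrightarrow> sqint M M X"
  by (rule sqint_subalg)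

sublocale stp \<subseteq> P: prob_space M by (rule ps)

context stp
begin

lemma L2_comp:
  assumes X: "sqint M M X"
  shows "integrable M (\<lambda>x. (X x $ i)\<^sup>2)" "integrable M (\<lambda>x. X x $ i)"
proof -
  have m: "(\<lambda>x. X x $ i) \<in> borel_measurable M" using X by (simp add: sqint_def comp_meas)
  have n: "integrable M (\<lambda>x. (norm (X x))\<^sup>2)" using X by (simp add: sqint_def)
  have le: "(X x $ i)\<^sup>2 \<le> (norm (X x))\<^sup>2" for x
    using component_le_norm_cart[of "X x" i] by (simp add: abs_le_square_iff[symmetric])
  show "integrable M (\<lambda>x. (X x $ i)\<^sup>2)"
    by (rule Bochner_Integration.integrable_bound[OF n]) (use m le in auto)
  have n1: "integrable M (\<lambda>x. 1 + (norm (X x))\<^sup>2)" using n by simp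
  have le1: "\<bar>X x $ i\<bar> \<le> 1 + (norm (X x))\<^sup>2" for x
  proof -
    have "0 \<le> (\<bar>X x $ i\<bar> - 1/2)\<^sup>2" by simp
    then have "\<bar>X x $ i\<bar> \<le> 1 + (X x $ i)\<^sup>2" by (simp add: power2_eq_square algebra_simps)
    then show ?thesis using le[of x] by linarith
  qed
  show "integrable M (\<lambda>x. X x $ i)"
    by (rule Bochner_Integration.integrable_bound[OF n1]) (use m le1 in auto)
qed

lemma L2_meas: "sqint M M X \<Longrightarrow> X \<in> borel_measurable M"
  by (simp add: sqint_def)

lemma cexp_L2:
  assumes j: "j \<le> N" and X: "sqint M M X"
  shows "sqint M (F j) (cexp M (F j) X)"
    "integral\<^sup>L M (\<lambda>x. (norm (cexp M (F j) X x))\<^sup>2) \<le> integral\<^sup>L M (\<lambda>x. (norm (X x))\<^sup>2)"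
proof -
  interpret S: sigma_finite_subalgebra M "F j" by (rule sfs[OF j])
  have comp: "integrable M (\<lambda>x. (real_cond_exp M (F j) (\<lambda>y. X y $ i) x)\<^sup>2) \<and>
      integral\<^sup>L M (\<lambda>x. (real_cond_exp M (F j) (\<lambda>y. X y $ i) x)\<^sup>2) \<le> integral\<^sup>L M (\<lambda>x. (X x $ i)\<^sup>2)" for i
  proof -
    have i1: "integrable M (\<lambda>y. X y $ i)" and i2: "integrable M (\<lambda>y. (X y $ i)\<^sup>2)" using L2_comp[OF X] by auto
    have cv: "convex_on UNIV (\<lambda>t::real. t\<^sup>2)" using convex_power2 by simp
    have int: "integrable M (\<lambda>x. (real_cond_exp M (F j) (\<lambda>y. X y $ i) x)\<^sup>2)"
      using S.integrable_convex_cond_exp[of "\<lambda>y. X y $ i" UNIV _ _ "\<lambda>t. t\<^sup>2"] i1 i2 cv by auto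
    have "AE x in M. (real_cond_exp M (F j) (\<lambda>y. X y $ i) x)\<^sup>2 \<le> real_cond_exp M (F j) (\<lambda>x. (X x $ i)\<^sup>2) x"
      using S.real_cond_exp_jensens_inequality(2)[of "\<lambda>y. X y $ i" UNIV _ _ "\<lambda>t. t\<^sup>2"] i1 i2 cv by auto
    then have "integral\<^sup>L M (\<lambda>x. (real_cond_exp M (F j) (\<lambda>y. X y $ i) x)\<^sup>2) \<le> integral\<^sup>L M (real_cond_exp M (F j) (\<lambda>x. (X x $ i)\<^sup>2))"
      by (intro integral_mono_AE int S.real_cond_exp_int(1)[OF i2])
    also have "\<dots> = integral\<^sup>L M (\<lambda>x. (X x $ i)\<^sup>2)" by (rule S.real_cond_exp_int(2)[OF i2])
    finally show ?thesis using int by simp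
  qed
  have eq: "(\<lambda>x. (norm (cexp M (F j) X x))\<^sup>2) = (\<lambda>x. \<Sum>i\<in>UNIV. (real_cond_exp M (F j) (\<lambda>y. X y $ i) x)\<^sup>2)"
    by (simp add: norm_sq_sum)
  show "sqint M (F j) (cexp M (F j) X)"
    unfolding sqint_def eq using comp cexp_meas by auto
  have "integral\<^sup>L M (\<lambda>x. (norm (cexp M (F j) X x))\<^sup>2) = (\<Sum>i\<in>UNIV. integral\<^sup>L M (\<lambda>x. (real_cond_exp M (F j) (\<lambda>y. X y $ i) x)\<^sup>2))"
    unfolding eq using comp by (simp add: Bochner_Integration.integral_sum)
  also have "\<dots> \<le> (\<Sum>i\<in>UNIV. integral\<^sup>L M (\<lambda>x. (X x $ i)\<^sup>2))"
    using comp by (intro sum_mono) auto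
  also have "\<dots> = integral\<^sup>L M (\<lambda>x. (norm (X x))\<^sup>2)"
    using L2_comp[OF X] by (simp add: norm_sq_sum Bochner_Integration.integral_sum)
  finally show "integral\<^sup>L M (\<lambda>x. (norm (cexp M (F j) X x))\<^sup>2) \<le> integral\<^sup>L M (\<lambda>x. (norm (X x))\<^sup>2)" .
qed

end


context stp
begin

lemma cexp_add:
  assumes j: "j \<le> N" and X: "sqint M M X" and Y: "sqint M M Y"
  shows "AE x in M. cexp M (F j) (\<lambda>x. X x + Y x) x = cexp M (F j) X x + cexp M (F j) Y x"
proof -
  interpret S: sigma_finite_subalgebra M "F j" by (rule sfs[OF j])
  have "AE x in M. \<forall>i\<in>UNIV. real_cond_exp M (F j) (\<lambda>y. X y $ i + Y y $ i) x
      = real_cond_exp M (F j) (\<lambda>y. X y $ i) x + real_cond_exp M (F j) (\<lambda>y. Y y $ i) x"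
    by (rule AE_finite_allI) (use S.real_cond_exp_add L2_comp(2)[OF X] L2_comp(2)[OF Y] in auto)
  then show ?thesis by eventually_elim (simp add: vec_eq_iff)
qed

lemma cexp_scale:
  assumes j: "j \<le> N" and X: "sqint M M X"
  shows "AE x in M. cexp M (F j) (\<lambda>x. c *\<^sub>R X x) x = c *\<^sub>R cexp M (F j) X x"
proof -
  interpret S: sigma_finite_subalgebra M "F j" by (rule sfs[OF j])
  have "AE x in M. \<forall>i\<in>UNIV. real_cond_exp M (F j) (\<lambda>y. c * X y $ i) x
      = c * real_cond_exp M (F j) (\<lambda>y. X y $ i) x"
    by (rule AE_finite_allI) (use S.real_cond_exp_cmult L2_comp(2)[OF X] in auto)
  then show ?thesis by eventually_elim (simp add: vec_eq_iff)
qed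

lemma cexp_mat:
  assumes j: "j \<le> N" and X: "sqint M M X"
  shows "AE x in M. cexp M (F j) (\<lambda>x. (A::real^'n^'m) *v X x) x = A *v cexp M (F j) X x"
proof -
  interpret S: sigma_finite_subalgebra M "F j" by (rule sfs[OF j])
  have "AE x in M. \<forall>i\<in>UNIV. \<forall>k\<in>UNIV. real_cond_exp M (F j) (\<lambda>y. A $ i $ k * X y $ k) x
      = A $ i $ k * real_cond_exp M (F j) (\<lambda>y. X y $ k) x"
    by (intro AE_finite_allI) (use S.real_cond_exp_cmult L2_comp(2)[OF X] in auto)
  moreover have "AE x in M. \<forall>i\<in>UNIV. real_cond_exp M (F j) (\<lambda>y. \<Sum>k\<in>UNIV. A $ i $ k * X y $ k) x
      = (\<Sum>k\<in>UNIV. real_cond_exp M (F j) (\<lambda>y. A $ i $ k * X y $ k) x)"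
    by (intro AE_finite_allI S.real_cond_exp_sum) (use L2_comp(2)[OF X] in auto)
  ultimately show ?thesis
    by eventually_elim (simp add: vec_eq_iff matrix_vector_mult_def)
qed

lemma cexp_cong:
  assumes j: "j \<le> N" and ae: "AE x in M. X x = Y x" and X: "X \<in> borel_measurable M" and Y: "Y \<in> borel_measurable M"
  shows "AE x in M. cexp M (F j) X x = cexp M (F j) Y x"
proof -
  interpret S: sigma_finite_subalgebra M "F j" by (rule sfs[OF j])
  have "AE x in M. \<forall>i\<in>UNIV. real_cond_exp M (F j) (\<lambda>y. X y $ i) x = real_cond_exp M (F j) (\<lambda>y. Y y $ i) x"
    by (intro AE_finite_allI S.real_cond_exp_cong) (use ae comp_meas[OF X] comp_meas[OF Y] in auto)
  then show ?thesis by eventually_elim (simp add: vec_eq_iff)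
qed

lemma cexp_self:
  assumes j: "j \<le> N" and X: "sqint M (F j) X"
  shows "AE x in M. cexp M (F j) X x = X x"
proof -
  interpret S: sigma_finite_subalgebra M "F j" by (rule sfs[OF j])
  have X2: "sqint M M X" using sqint_subalg[OF X subalg[OF j]] .
  have "AE x in M. \<forall>i\<in>UNIV. real_cond_exp M (F j) (\<lambda>y. X y $ i) x = X x $ i"
    by (intro AE_finite_allI S.real_cond_exp_F_meas) (use L2_comp(2)[OF X2] comp_meas[OF sqint_meas[OF X]] in auto)
  then show ?thesis by eventually_elim (simp add: vec_eq_iff)
qed

lemma cexp_intg:
  assumes j: "j \<le> N" and Z: "sqint M (F j) Z" and X: "sqint M M X"
  shows "integral\<^sup>L M (\<lambda>x. inner (Z x) (cexp M (F j) X x)) = integral\<^sup>L M (\<lambda>x. inner (Z x) (X x))"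
proof -
  interpret S: sigma_finite_subalgebra M "F j" by (rule sfs[OF j])
  have Z2: "sqint M M Z" using sqint_subalg[OF Z subalg[OF j]] .
  have pi: "integrable M (\<lambda>x. Z x $ i * X x $ i)" for i
    by (rule int_prod) (use L2_comp[OF Z2] L2_comp[OF X] comp_meas L2_meas[OF Z2] L2_meas[OF X] in auto)
  have c: "integrable M (\<lambda>x. Z x $ i * real_cond_exp M (F j) (\<lambda>y. X y $ i) x)"
       "integral\<^sup>L M (\<lambda>x. Z x $ i * real_cond_exp M (F j) (\<lambda>y. X y $ i) x) = integral\<^sup>L M (\<lambda>x. Z x $ i * X x $ i)" for i
    using S.real_cond_exp_intg[OF pi] comp_meas[OF sqint_meas[OF Z]] comp_meas[OF L2_meas[OF X]] by auto
  show ?thesis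
    unfolding inner_sum using c pi by (simp add: Bochner_Integration.integral_sum)
qed

lemma wsq_eq:
  assumes k: "k < N" and f: "f \<in> borel_measurable (F k)" and fi: "integrable M (\<lambda>x. f x * (w k x)\<^sup>2)"
  shows "integral\<^sup>L M (\<lambda>x. f x * (w k x)\<^sup>2) = integral\<^sup>L M f"
proof -
  interpret S: sigma_finite_subalgebra M "F k" by (rule sfs) (use k in simp)
  have fM: "f \<in> borel_measurable M" using meas_FM[OF _ f] k by simp
  have "integral\<^sup>L M (\<lambda>x. f x * (w k x)\<^sup>2) = integral\<^sup>L M (\<lambda>x. f x * real_cond_exp M (F k) (\<lambda>y. (w k y)\<^sup>2) x)"
    using S.real_cond_exp_intg(2)[OF fi f] wm[OF k] by simp
  also have "\<dots> = integral\<^sup>L M f"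
    by (rule integral_cong_AE) (use fM w1[OF k] in auto)
  finally show ?thesis .
qed

lemma wsq:
  assumes k: "k < N" and f: "f \<in> borel_measurable (F k)" and f0: "\<And>x. 0 \<le> f x" and fi: "integrable M f"
  shows "integrable M (\<lambda>x. f x * (w k x)\<^sup>2) \<and> integral\<^sup>L M (\<lambda>x. f x * (w k x)\<^sup>2) \<le> integral\<^sup>L M f"
proof (rule mono_conv_bound)
  have fM: "f \<in> borel_measurable M" using meas_FM[OF _ f] k by simp
  have wk: "w k \<in> borel_measurable M" using wm[OF k] .
  define g where "g = (\<lambda>n x. min (f x) (real n) * (w k x)\<^sup>2)"
  show gi: "integrable M (g n)" for n
  proof -
    have "integrable M (\<lambda>x. real n * (w k x)\<^sup>2)" using wi[OF k] by simp
    then show ?thesis unfolding g_def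
      by (rule Bochner_Integration.integrable_bound) (use fM wk f0 in \<open>auto intro!: mult_right_mono simp: abs_mult\<close>)
  qed
  show "0 \<le> g n x" for n x unfolding g_def using f0[of x] by simp
  show "mono (\<lambda>n. g n x)" for x unfolding g_def mono_def by (auto intro!: mult_right_mono)
  show "(\<lambda>n. g n x) \<longlonglongrightarrow> f x * (w k x)\<^sup>2" for x unfolding g_def
    by (intro tendsto_mult_right min_nat_tendsto)
  show "(\<lambda>x. f x * (w k x)\<^sup>2) \<in> borel_measurable M" using fM wk by simp
  show "integral\<^sup>L M (g n) \<le> integral\<^sup>L M f" for n
  proof -
    have fn: "(\<lambda>x. min (f x) (real n)) \<in> borel_measurable (F k)" using f by simp
    have "integral\<^sup>L M (g n) = integral\<^sup>L M (\<lambda>x. min (f x) (real n))"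
      unfolding g_def by (rule wsq_eq[OF k fn]) (use gi[of n] in \<open>simp only: g_def\<close>)
    also have "\<dots> \<le> integral\<^sup>L M f"
    proof (rule integral_mono[OF _ fi])
      show "integrable M (\<lambda>x. min (f x) (real n))"
        by (rule Bochner_Integration.integrable_bound[OF fi]) (use fM f0 in auto)
    qed auto
    finally show ?thesis .
  qed
qed

lemma wX:
  assumes k: "k < N" and X: "sqint M (F k) X"
  shows "sqint M (F (Suc k)) (\<lambda>z. w k z *\<^sub>R X z)"
    "integral\<^sup>L M (\<lambda>z. (norm (w k z *\<^sub>R X z))\<^sup>2) \<le> integral\<^sup>L M (\<lambda>z. (norm (X z))\<^sup>2)"
proof -
  have Xm: "X \<in> borel_measurable (F k)" using sqint_meas[OF X] .
  have Xm': "X \<in> borel_measurable (F (Suc k))" using meas_Fmono[OF _ Xm] by simp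
  have f: "(\<lambda>z. (norm (X z))\<^sup>2) \<in> borel_measurable (F k)" using Xm by simp
  have eq: "(\<lambda>z. (norm (w k z *\<^sub>R X z))\<^sup>2) = (\<lambda>z. (norm (X z))\<^sup>2 * (w k z)\<^sup>2)"
    by (simp add: power_mult_distrib mult.commute)
  have W: "integrable M (\<lambda>z. (norm (X z))\<^sup>2 * (w k z)\<^sup>2) \<and> integral\<^sup>L M (\<lambda>z. (norm (X z))\<^sup>2 * (w k z)\<^sup>2) \<le> integral\<^sup>L M (\<lambda>z. (norm (X z))\<^sup>2)"
    by (rule wsq[OF k f]) (use X in \<open>auto simp: sqint_def\<close>)
  show "sqint M (F (Suc k)) (\<lambda>z. w k z *\<^sub>R X z)"
    unfolding sqint_def eq using W Xm' w_F[of k "Suc k"] by (auto intro!: borel_measurable_scaleR)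
  show "integral\<^sup>L M (\<lambda>z. (norm (w k z *\<^sub>R X z))\<^sup>2) \<le> integral\<^sup>L M (\<lambda>z. (norm (X z))\<^sup>2)"
    unfolding eq using W by simp
qed

end


lemma mult_le_sq: "(a::real) * b \<le> a\<^sup>2 / 2 + b\<^sup>2 / 2"
proof -
  have "0 \<le> (a - b)\<^sup>2" by simp
  then show ?thesis by (simp add: power2_eq_square algebra_simps)
qed

context stp
begin

lemma cexp_w:
  assumes k: "k < N" and Y: "sqint M M Y"
  shows "sqint M (F k) (cexp M (F k) (\<lambda>z. w k z *\<^sub>R Y z))"
    "integral\<^sup>L M (\<lambda>x. (norm (cexp M (F k) (\<lambda>z. w k z *\<^sub>R Y z) x))\<^sup>2) \<le> integral\<^sup>L M (\<lambda>x. (norm (Y x))\<^sup>2)"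
proof -
  interpret S: sigma_finite_subalgebra M "F k" by (rule sfs) (use k in simp)
  have wk: "w k \<in> borel_measurable M" using wm[OF k] .
  have comp: "integrable M (\<lambda>x. (real_cond_exp M (F k) (\<lambda>z. w k z * Y z $ i) x)\<^sup>2) \<and>
      integral\<^sup>L M (\<lambda>x. (real_cond_exp M (F k) (\<lambda>z. w k z * Y z $ i) x)\<^sup>2) \<le> integral\<^sup>L M (\<lambda>x. (Y x $ i)\<^sup>2)" for i
  proof -
    define Z where "Z = real_cond_exp M (F k) (\<lambda>z. w k z * Y z $ i)"
    have Ym: "(\<lambda>z. Y z $ i) \<in> borel_measurable M" using comp_meas[OF L2_meas[OF Y]] .
    have wy: "integrable M (\<lambda>z. w k z * Y z $ i)"
      by (rule int_prod) (use wi[OF k] L2_comp(1)[OF Y] wk Ym in auto)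
    have wym: "(\<lambda>z. w k z * Y z $ i) \<in> borel_measurable M" using wk Ym by simp
    have Zi: "integrable M Z" unfolding Z_def by (rule S.real_cond_exp_int(1)[OF wy])
    have ZF: "Z \<in> borel_measurable (F k)" unfolding Z_def by simp
    have ZM: "Z \<in> borel_measurable M" using Zi by auto
    have Y2: "integrable M (\<lambda>x. (Y x $ i)\<^sup>2)" using L2_comp(1)[OF Y] .
    show ?thesis unfolding Z_def[symmetric]
    proof (rule mono_conv_bound)
      fix n
      have cF: "(\<lambda>x. clip (real n) (Z x)) \<in> borel_measurable (F k)" using ZF by simp
      have cM: "(\<lambda>x. clip (real n) (Z x)) \<in> borel_measurable M" using ZM by simp
      have cb: "\<bar>clip (real n) (Z x)\<bar> \<le> real n" for x by (rule clip_abs) simp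
      have cb2: "(clip (real n) (Z x))\<^sup>2 \<le> (real n)\<^sup>2" for x
        using cb[of x] by (simp add: abs_le_square_iff[symmetric])
      have gi: "integrable M (\<lambda>x. (clip (real n) (Z x))\<^sup>2)"
        by (rule Bochner_Integration.integrable_bound[of _ "\<lambda>x. (real n)\<^sup>2"]) (use cM cb2 in auto)
      then show "integrable M (\<lambda>x. (clip (real n) (Z x))\<^sup>2)" .
      have i1: "integrable M (\<lambda>x. clip (real n) (Z x) * (w k x * Y x $ i))"
      proof (rule Bochner_Integration.integrable_bound[of _ "\<lambda>x. real n * \<bar>w k x * Y x $ i\<bar>"])
        show "integrable M (\<lambda>x. real n * \<bar>w k x * Y x $ i\<bar>)" using wy by simp
        show "AE x in M. norm (clip (real n) (Z x) * (w k x * Y x $ i)) \<le> norm (real n * \<bar>w k x * Y x $ i\<bar>)"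
          using cb by (auto simp: abs_mult intro!: mult_right_mono)
      qed (use cM wym in simp)
      have e1: "integral\<^sup>L M (\<lambda>x. clip (real n) (Z x) * Z x) = integral\<^sup>L M (\<lambda>x. clip (real n) (Z x) * (w k x * Y x $ i))"
        using S.real_cond_exp_intg(2)[OF i1 cF wym] unfolding Z_def by simp
      have i2: "integrable M (\<lambda>x. clip (real n) (Z x) * Z x)"
      proof (rule Bochner_Integration.integrable_bound[of _ "\<lambda>x. real n * \<bar>Z x\<bar>"])
        show "integrable M (\<lambda>x. real n * \<bar>Z x\<bar>)" using Zi by simp
        show "AE x in M. norm (clip (real n) (Z x) * Z x) \<le> norm (real n * \<bar>Z x\<bar>)"
          using cb by (auto simp: abs_mult intro!: mult_right_mono)
      qed (use cM ZM in simp)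
      have l1: "integral\<^sup>L M (\<lambda>x. (clip (real n) (Z x))\<^sup>2) \<le> integral\<^sup>L M (\<lambda>x. clip (real n) (Z x) * Z x)"
        by (rule integral_mono[OF gi i2]) (rule clip_sq_le, simp)
      have i3: "integrable M (\<lambda>x. (clip (real n) (Z x))\<^sup>2 * (w k x)\<^sup>2)"
      proof (rule Bochner_Integration.integrable_bound[of _ "\<lambda>x. (real n)\<^sup>2 * (w k x)\<^sup>2"])
        show "integrable M (\<lambda>x. (real n)\<^sup>2 * (w k x)\<^sup>2)" using wi[OF k] by simp
        show "AE x in M. norm ((clip (real n) (Z x))\<^sup>2 * (w k x)\<^sup>2) \<le> norm ((real n)\<^sup>2 * (w k x)\<^sup>2)"
          using cb2 by (auto intro!: mult_right_mono)
      qed (use cM wk in simp)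
      have e3: "integral\<^sup>L M (\<lambda>x. (clip (real n) (Z x))\<^sup>2 * (w k x)\<^sup>2) = integral\<^sup>L M (\<lambda>x. (clip (real n) (Z x))\<^sup>2)"
        by (rule wsq_eq[OF k _ i3]) (use cF in simp)
      have l2: "integral\<^sup>L M (\<lambda>x. clip (real n) (Z x) * (w k x * Y x $ i))
          \<le> integral\<^sup>L M (\<lambda>x. (clip (real n) (Z x))\<^sup>2 * (w k x)\<^sup>2 / 2 + (Y x $ i)\<^sup>2 / 2)"
      proof (rule integral_mono[OF i1])
        show "integrable M (\<lambda>x. (clip (real n) (Z x))\<^sup>2 * (w k x)\<^sup>2 / 2 + (Y x $ i)\<^sup>2 / 2)"
          using i3 Y2 by simp
        fix x
        show "clip (real n) (Z x) * (w k x * Y x $ i) \<le> (clip (real n) (Z x))\<^sup>2 * (w k x)\<^sup>2 / 2 + (Y x $ i)\<^sup>2 / 2"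
          using mult_le_sq[of "clip (real n) (Z x) * w k x" "Y x $ i"] by (simp add: power_mult_distrib mult.assoc)
      qed
      also have "\<dots> = integral\<^sup>L M (\<lambda>x. (clip (real n) (Z x))\<^sup>2) / 2 + integral\<^sup>L M (\<lambda>x. (Y x $ i)\<^sup>2) / 2"
        using i3 Y2 e3 by simp
      finally show "integral\<^sup>L M (\<lambda>x. (clip (real n) (Z x))\<^sup>2) \<le> integral\<^sup>L M (\<lambda>x. (Y x $ i)\<^sup>2)"
        using l1 e1 by simp
    next
      show "0 \<le> (clip (real n) (Z x))\<^sup>2" for n x by simp
      show "mono (\<lambda>n. (clip (real n) (Z x))\<^sup>2)" for x
        unfolding mono_def by (auto intro!: clip_sq_mono)
      show "(\<lambda>n. (clip (real n) (Z x))\<^sup>2) \<longlonglongrightarrow> (Z x)\<^sup>2" for x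
        by (intro tendsto_power clip_tendsto)
      show "(\<lambda>x. (Z x)\<^sup>2) \<in> borel_measurable M" using ZM by simp
    qed
  qed
  have eq: "(\<lambda>x. (norm (cexp M (F k) (\<lambda>z. w k z *\<^sub>R Y z) x))\<^sup>2) = (\<lambda>x. \<Sum>i\<in>UNIV. (real_cond_exp M (F k) (\<lambda>z. w k z * Y z $ i) x)\<^sup>2)"
    by (simp add: norm_sq_sum)
  show "sqint M (F k) (cexp M (F k) (\<lambda>z. w k z *\<^sub>R Y z))"
    unfolding sqint_def eq using comp cexp_meas by auto
  have "integral\<^sup>L M (\<lambda>x. (norm (cexp M (F k) (\<lambda>z. w k z *\<^sub>R Y z) x))\<^sup>2) = (\<Sum>i\<in>UNIV. integral\<^sup>L M (\<lambda>x. (real_cond_exp M (F k) (\<lambda>z. w k z * Y z $ i) x)\<^sup>2))"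
    unfolding eq using comp by (simp add: Bochner_Integration.integral_sum)
  also have "\<dots> \<le> (\<Sum>i\<in>UNIV. integral\<^sup>L M (\<lambda>x. (Y x $ i)\<^sup>2))"
    using comp by (intro sum_mono) auto
  also have "\<dots> = integral\<^sup>L M (\<lambda>x. (norm (Y x))\<^sup>2)"
    using L2_comp[OF Y] by (simp add: norm_sq_sum Bochner_Integration.integral_sum)
  finally show "integral\<^sup>L M (\<lambda>x. (norm (cexp M (F k) (\<lambda>z. w k z *\<^sub>R Y z) x))\<^sup>2) \<le> integral\<^sup>L M (\<lambda>x. (norm (Y x))\<^sup>2)" .
qed

lemma cexp_w_intg:
  assumes k: "k < N" and Z: "sqint M (F k) Z" and Y: "sqint M M Y"
  shows "integral\<^sup>L M (\<lambda>x. inner (Z x) (cexp M (F k) (\<lambda>z. w k z *\<^sub>R Y z) x))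
       = integral\<^sup>L M (\<lambda>x. inner (w k x *\<^sub>R Z x) (Y x))"
proof -
  interpret S: sigma_finite_subalgebra M "F k" by (rule sfs) (use k in simp)
  have wk: "w k \<in> borel_measurable M" using wm[OF k] .
  have WZ: "sqint M M (\<lambda>z. w k z *\<^sub>R Z z)"
    using sqint_subalg[OF wX(1)[OF k Z] subalg] k by simp
  have pi0: "integrable M (\<lambda>x. (w k x *\<^sub>R Z x) $ i * Y x $ i)" for i
    by (rule int_prod) (use L2_comp[OF WZ] L2_comp[OF Y] comp_meas L2_meas[OF WZ] L2_meas[OF Y] in auto)
  have eqf: "(\<lambda>x. Z x $ i * (w k x * Y x $ i)) = (\<lambda>x. (w k x *\<^sub>R Z x) $ i * Y x $ i)" for i
    by (simp add: fun_eq_iff algebra_simps)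
  have pi: "integrable M (\<lambda>x. Z x $ i * (w k x * Y x $ i))" for i
    unfolding eqf by (rule pi0)
  have c: "integrable M (\<lambda>x. Z x $ i * real_cond_exp M (F k) (\<lambda>y. w k y * Y y $ i) x)"
       "integral\<^sup>L M (\<lambda>x. Z x $ i * real_cond_exp M (F k) (\<lambda>y. w k y * Y y $ i) x) = integral\<^sup>L M (\<lambda>x. Z x $ i * (w k x * Y x $ i))" for i
    using S.real_cond_exp_intg[OF pi] comp_meas[OF sqint_meas[OF Z]] comp_meas[OF L2_meas[OF Y]] wk by auto
  show ?thesis
    unfolding inner_sum using c pi pi0 eqf by (simp add: Bochner_Integration.integral_sum)
qed

end


context stp
begin

lemma cexp_add2:
  assumes j: "j \<le> N" and X: "\<And>i. integrable M (\<lambda>x. X x $ i)" and Y: "\<And>i. integrable M (\<lambda>x. Y x $ i)"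
  shows "AE x in M. cexp M (F j) (\<lambda>x. X x + Y x) x = cexp M (F j) X x + cexp M (F j) Y x"
proof -
  interpret S: sigma_finite_subalgebra M "F j" by (rule sfs[OF j])
  have "AE x in M. \<forall>i\<in>UNIV. real_cond_exp M (F j) (\<lambda>y. X y $ i + Y y $ i) x
      = real_cond_exp M (F j) (\<lambda>y. X y $ i) x + real_cond_exp M (F j) (\<lambda>y. Y y $ i) x"
    by (rule AE_finite_allI) (use S.real_cond_exp_add X Y in auto)
  then show ?thesis by eventually_elim (simp add: vec_eq_iff)
qed

lemma wY_int:
  assumes k: "k < N" and Y: "sqint M M Y"
  shows "integrable M (\<lambda>x. (w k x *\<^sub>R Y x) $ i)"
  using int_prod[where f="w k" and M=M and g="\<lambda>x. Y x $ i"] wi[OF k] L2_comp(1)[OF Y] wm[OF k] comp_meas[OF L2_meas[OF Y]]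
  by simp

primrec ysq :: "(nat \<Rightarrow> real^'n^'n) \<Rightarrow> (nat \<Rightarrow> real^'m^'n) \<Rightarrow> (nat \<Rightarrow> real^'n^'n)
   \<Rightarrow> (nat \<Rightarrow> 'a \<Rightarrow> real^'n) \<Rightarrow> ('a \<Rightarrow> real^'n) \<Rightarrow> (nat \<Rightarrow> 'a \<Rightarrow> real^'m) \<Rightarrow> nat \<Rightarrow> 'a \<Rightarrow> real^'n" where
  "ysq A B C q xi u 0 = xi"
| "ysq A B C q xi u (Suc j) = (\<lambda>x. A (N - Suc j) *v cexp M (F (N - Suc j)) (ysq A B C q xi u j) x
       + B (N - Suc j) *v u (N - Suc j) x
       + C (N - Suc j) *v cexp M (F (N - Suc j)) (\<lambda>z. w (N - Suc j) z *\<^sub>R ysq A B C q xi u j z) x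
       + q (N - Suc j) x)"

lemma rhs_sqint:
  assumes k: "k < N" and Y: "sqint M M Y" and u: "predL2 M w N u" and q: "predL2 M w N q"
  shows "sqint M (F k) (\<lambda>x. A k *v cexp M (F k) Y x + B k *v u k x
       + C k *v cexp M (F k) (\<lambda>z. w k z *\<^sub>R Y z) x + q k x)"
proof -
  have kN: "k \<le> N" using k by simp
  have c1: "sqint M (F k) (cexp M (F k) Y)" using cexp_L2(1)[OF kN Y] .
  have c2: "sqint M (F k) (cexp M (F k) (\<lambda>z. w k z *\<^sub>R Y z))" using cexp_w(1)[OF k Y] .
  have uk: "sqint M (F k) (u k)" and qk: "sqint M (F k) (q k)" using u q k by (auto simp: predL2_def)
  have a1: "sqint M (F k) (\<lambda>x. A k *v cexp M (F k) Y x)" using sqint_mat[OF c1 meas_FM[OF kN sqint_meas[OF c1]]] .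
  have a2: "sqint M (F k) (\<lambda>x. B k *v u k x)" using sqint_mat[OF uk meas_FM[OF kN sqint_meas[OF uk]]] .
  have a3: "sqint M (F k) (\<lambda>x. C k *v cexp M (F k) (\<lambda>z. w k z *\<^sub>R Y z) x)" using sqint_mat[OF c2 meas_FM[OF kN sqint_meas[OF c2]]] .
  note mm = meas_FM[OF kN sqint_meas]
  have s12: "sqint M (F k) (\<lambda>x. A k *v cexp M (F k) Y x + B k *v u k x)"
    using sqint_add[OF a1 a2 mm[OF a1] mm[OF a2]] .
  have s123: "sqint M (F k) (\<lambda>x. A k *v cexp M (F k) Y x + B k *v u k x
       + C k *v cexp M (F k) (\<lambda>z. w k z *\<^sub>R Y z) x)"
    using sqint_add[OF s12 a3 mm[OF s12] mm[OF a3]] .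
  show ?thesis using sqint_add[OF s123 qk mm[OF s123] mm[OF qk]] .
qed

lemma ysq_sqint:
  assumes u: "predL2 M w N u" and q: "predL2 M w N q" and xi: "sqint M (F N) xi"
  shows "j \<le> N \<Longrightarrow> sqint M (F (N - j)) (ysq A B C q xi u j)"
proof (induction j)
  case 0
  then show ?case using xi by simp
next
  case (Suc j)
  then have IH: "sqint M (F (N - j)) (ysq A B C q xi u j)" by simp
  have L: "sqint M M (ysq A B C q xi u j)" using sqint_subalg[OF IH subalg] by simp
  have k: "N - Suc j < N" using Suc.prems by simp
  show ?case using rhs_sqint[OF k L u q, of A B C] by simp
qed

definition ycon where "ycon A B C q xi u = (\<lambda>k. ysq A B C q xi u (N - k))"

lemma exist_sol:
  assumes u: "predL2 M w N u" and q: "predL2 M w N q" and xi: "sqint M (F N) xi"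
  shows "is_sol M w N A B C q xi u (ycon A B C q xi u)"
  unfolding is_sol_def
proof (intro conjI allI impI)
  fix k assume k: "k < N"
  have "sqint M (F (N - (N - k))) (ysq A B C q xi u (N - k))" by (rule ysq_sqint[OF u q xi]) simp
  then have "sqint M (F k) (ycon A B C q xi u k)" using k by (simp add: ycon_def)
  then show "sqint M (F (Suc k)) (ycon A B C q xi u k)" by (rule sqint_subalg) (rule subalg2, simp)
  have e: "N - k = Suc (N - Suc k)" using k by simp
  have e2: "N - Suc (N - Suc k) = k" using k by simp
  show "AE x in M. ycon A B C q xi u k x = A k *v cexp M (F k) (ycon A B C q xi u (Suc k)) x + B k *v u k x
     + C k *v cexp M (F k) (\<lambda>z. w k z *\<^sub>R ycon A B C q xi u (Suc k) z) x + q k x"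
    unfolding ycon_def e using e2 by simp
qed (use xi in \<open>simp_all add: ycon_def\<close>)

lemma sol_is:
  assumes u: "predL2 M w N u" and q: "predL2 M w N q" and xi: "sqint M (F N) xi"
  shows "is_sol M w N A B C q xi u (sol M w N A B C q xi u)"
  unfolding sol_def by (rule someI[where P="\<lambda>y. is_sol M w N A B C q xi u y", OF exist_sol[OF u q xi]])

lemma sol_L2:
  assumes y: "is_sol M w N A B C q xi u y" and k: "k \<le> N"
  shows "sqint M M (y k)"
proof (cases "k < N")
  case True
  then show ?thesis using y sqint_subalg[OF _ subalg[of "Suc k"]] by (auto simp: is_sol_def)
next
  case False
  then have "k = N" using k by simp
  then show ?thesis using y sqint_subalg[OF _ subalg[of N]] by (auto simp: is_sol_def)
qed

lemma sol_Fk: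
  assumes y: "is_sol M w N A B C q xi u y" and u: "predL2 M w N u" and q: "predL2 M w N q" and k: "k < N"
  shows "sqint M (F k) (y k)"
proof -
  have L: "sqint M M (y (Suc k))" using sol_L2[OF y] k by simp
  have R: "sqint M (F k) (\<lambda>x. A k *v cexp M (F k) (y (Suc k)) x + B k *v u k x
       + C k *v cexp M (F k) (\<lambda>z. w k z *\<^sub>R y (Suc k) z) x + q k x)"
    by (rule rhs_sqint[OF k L u q])
  have ae: "AE x in M. (A k *v cexp M (F k) (y (Suc k)) x + B k *v u k x
       + C k *v cexp M (F k) (\<lambda>z. w k z *\<^sub>R y (Suc k) z) x + q k x) = y k x"
    using y k unfolding is_sol_def by (auto elim!: AE_mp)
  have m: "y k \<in> borel_measurable (F k)" by (rule meas_complete[OF sqint_meas[OF R] ae])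
  show ?thesis using m sol_L2[OF y] k by (simp add: sqint_def)
qed

lemma sol_Y:
  assumes y: "is_sol M w N A B C q xi u y" and u: "predL2 M w N u" and q: "predL2 M w N q" and k: "k < N"
  shows "sqint M (F (Suc k)) (y (Suc k))"
proof (cases "Suc k < N")
  case True
  then show ?thesis using sol_Fk[OF y u q True] by simp
next
  case False
  then have "Suc k = N" using k by simp
  then show ?thesis using y by (simp add: is_sol_def)
qed

end


lemma norm_add3_sq: "(norm (a + b + c))\<^sup>2 \<le> 4 * (norm a)\<^sup>2 + 4 * (norm b)\<^sup>2 + 4 * (norm (c::'b::real_normed_vector))\<^sup>2"
proof -
  have "(norm (a + b + c))\<^sup>2 \<le> 2 * (norm (a + b))\<^sup>2 + 2 * (norm c)\<^sup>2" by (rule norm_add_sq)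
  moreover have "(norm (a + b))\<^sup>2 \<le> 2 * (norm a)\<^sup>2 + 2 * (norm b)\<^sup>2" by (rule norm_add_sq)
  moreover have "0 \<le> (norm c)\<^sup>2" by simp
  ultimately show ?thesis by linarith
qed

context stp
begin

lemma sol_lin:
  assumes y1: "is_sol M w N A B C q1 xi1 u1 y1" and y2: "is_sol M w N A B C q2 xi2 u2 y2"
    and y: "is_sol M w N A B C q xi u y"
    and xi: "AE x in M. xi x = xi1 x + xi2 x"
    and uu: "\<And>k x. k < N \<Longrightarrow> u k x = u1 k x + u2 k x"
    and qq: "\<And>k x. k < N \<Longrightarrow> q k x = q1 k x + q2 k x"
    and kN: "k \<le> N"
  shows "AE x in M. y k x = y1 k x + y2 k x"
proof -
  have main: "j \<le> N \<Longrightarrow> AE x in M. y (N-j) x = y1 (N-j) x + y2 (N-j) x" for j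
  proof (induction j)
    case 0
    have a: "AE x in M. y N x = xi x" and b: "AE x in M. y1 N x = xi1 x" and c: "AE x in M. y2 N x = xi2 x"
      using y y1 y2 by (auto simp: is_sol_def)
    have "AE x in M. y N x = y1 N x + y2 N x" using xi a b c by eventually_elim simp
    then show ?case by simp
  next
    case (Suc j)
    define k where "k = N - Suc j"
    have k: "k < N" and sk: "Suc k = N - j" and kN: "k \<le> N" using Suc.prems by (auto simp: k_def)
    have IH: "AE x in M. y (Suc k) x = y1 (Suc k) x + y2 (Suc k) x" using Suc sk by simp
    have L: "sqint M M (y (Suc k))" using sol_L2[OF y] k by simp
    have L1: "sqint M M (y1 (Suc k))" using sol_L2[OF y1] k by simp
    have L2: "sqint M M (y2 (Suc k))" using sol_L2[OF y2] k by simp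
    have wk: "w k \<in> borel_measurable M" using wm[OF k] .
    note LM = L2_meas[OF L] L2_meas[OF L1] L2_meas[OF L2]
    have e1: "AE x in M. cexp M (F k) (y (Suc k)) x = cexp M (F k) (\<lambda>x. y1 (Suc k) x + y2 (Suc k) x) x"
      by (rule cexp_cong[OF kN IH]) (use LM in auto)
    have e2: "AE x in M. cexp M (F k) (\<lambda>x. y1 (Suc k) x + y2 (Suc k) x) x = cexp M (F k) (y1 (Suc k)) x + cexp M (F k) (y2 (Suc k)) x"
      by (rule cexp_add[OF kN L1 L2])
    have IHw: "AE x in M. w k x *\<^sub>R y (Suc k) x = w k x *\<^sub>R y1 (Suc k) x + w k x *\<^sub>R y2 (Suc k) x"
      using IH by eventually_elim (simp add: scaleR_right_distrib)
    have e3: "AE x in M. cexp M (F k) (\<lambda>z. w k z *\<^sub>R y (Suc k) z) x = cexp M (F k) (\<lambda>z. w k z *\<^sub>R y1 (Suc k) z + w k z *\<^sub>R y2 (Suc k) z) x"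
      by (rule cexp_cong[OF kN IHw]) (use LM wk in auto)
    have e4: "AE x in M. cexp M (F k) (\<lambda>z. w k z *\<^sub>R y1 (Suc k) z + w k z *\<^sub>R y2 (Suc k) z) x
        = cexp M (F k) (\<lambda>z. w k z *\<^sub>R y1 (Suc k) z) x + cexp M (F k) (\<lambda>z. w k z *\<^sub>R y2 (Suc k) z) x"
      by (rule cexp_add2[OF kN]) (use wY_int[OF k L1] wY_int[OF k L2] in auto)
    have r: "AE x in M. y k x = A k *v cexp M (F k) (y (Suc k)) x + B k *v u k x
        + C k *v cexp M (F k) (\<lambda>z. w k z *\<^sub>R y (Suc k) z) x + q k x"
      using y k by (simp add: is_sol_def)
    have r1: "AE x in M. y1 k x = A k *v cexp M (F k) (y1 (Suc k)) x + B k *v u1 k x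
        + C k *v cexp M (F k) (\<lambda>z. w k z *\<^sub>R y1 (Suc k) z) x + q1 k x"
      using y1 k by (simp add: is_sol_def)
    have r2: "AE x in M. y2 k x = A k *v cexp M (F k) (y2 (Suc k)) x + B k *v u2 k x
        + C k *v cexp M (F k) (\<lambda>z. w k z *\<^sub>R y2 (Suc k) z) x + q2 k x"
      using y2 k by (simp add: is_sol_def)
    have "AE x in M. y k x = y1 k x + y2 k x"
      using e1 e2 e3 e4 r r1 r2
      by eventually_elim (simp add: uu[OF k] qq[OF k] matrix_vector_right_distrib algebra_simps)
    then show ?case by (simp add: k_def)
  qed
  show ?thesis using main[of "N - k"] kN by simp
qed

lemma int_sq_le:
  assumes X: "sqint M M X" and Ym: "Y \<in> borel_measurable M" and c: "\<And>x. (norm (Y x))\<^sup>2 \<le> c * (norm (X x))\<^sup>2"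
  shows "integrable M (\<lambda>x. (norm (Y x))\<^sup>2)" "integral\<^sup>L M (\<lambda>x. (norm (Y x))\<^sup>2) \<le> c * integral\<^sup>L M (\<lambda>x. (norm (X x))\<^sup>2)"
proof -
  have Xi: "integrable M (\<lambda>x. c * (norm (X x))\<^sup>2)" using X by (simp add: sqint_def)
  show Yi: "integrable M (\<lambda>x. (norm (Y x))\<^sup>2)"
    by (rule Bochner_Integration.integrable_bound[OF Xi]) (use Ym c in \<open>auto intro: order_trans[OF _ abs_ge_self]\<close>)
  have "integral\<^sup>L M (\<lambda>x. (norm (Y x))\<^sup>2) \<le> integral\<^sup>L M (\<lambda>x. c * (norm (X x))\<^sup>2)"
    by (rule integral_mono[OF Yi Xi c])
  then show "integral\<^sup>L M (\<lambda>x. (norm (Y x))\<^sup>2) \<le> c * integral\<^sup>L M (\<lambda>x. (norm (X x))\<^sup>2)" by simp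
qed

definition vnorm :: "(nat \<Rightarrow> 'a \<Rightarrow> real^'m) \<Rightarrow> real" where
  "vnorm v = (\<Sum>j<N. integral\<^sup>L M (\<lambda>x. (norm (v j x))\<^sup>2))"

lemma vnorm_ge: "k < N \<Longrightarrow> integral\<^sup>L M (\<lambda>x. (norm (v k x))\<^sup>2) \<le> vnorm v"
  unfolding vnorm_def by (rule member_le_sum) auto

lemma vnorm_nonneg: "0 \<le> vnorm v"
  unfolding vnorm_def by (intro sum_nonneg) auto

lemma sol_bound_aux:
  fixes A C :: "nat \<Rightarrow> real^'n^'n" and B :: "nat \<Rightarrow> real^'m^'n"
  shows "j \<le> N \<Longrightarrow> \<exists>K\<ge>0. \<forall>v y. predL2 M w N v \<longrightarrow> is_sol M w N A B C (\<lambda>k x. 0) (\<lambda>x. 0) v y \<longrightarrow>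
     (\<forall>i\<le>j. integral\<^sup>L M (\<lambda>x. (norm (y (N - i) x))\<^sup>2) \<le> K * vnorm v)"
proof (induction j)
  case 0
  show ?case
  proof (intro exI[of _ 0] conjI allI impI)
    fix v y i assume y: "is_sol M w N A B C (\<lambda>k x. 0) (\<lambda>x. 0) v y" and i: "i \<le> (0::nat)"
    have "AE x in M. y N x = 0" using y by (simp add: is_sol_def)
    then have "integral\<^sup>L M (\<lambda>x. (norm (y N x))\<^sup>2) = integral\<^sup>L M (\<lambda>x. 0)"
      by (intro integral_cong_AE) (use sol_L2[OF y, of N] in \<open>auto simp: sqint_def\<close>)
    then show "integral\<^sup>L M (\<lambda>x. (norm (y (N - i) x))\<^sup>2) \<le> 0 * vnorm v" using i by simp
  qed simp
next
  case (Suc j)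
  then obtain K where K0: "K \<ge> 0" and K: "\<forall>v y. predL2 M w N v \<longrightarrow> is_sol M w N A B C (\<lambda>k x. 0) (\<lambda>x. 0) v y \<longrightarrow>
     (\<forall>i\<le>j. integral\<^sup>L M (\<lambda>x. (norm (y (N - i) x))\<^sup>2) \<le> K * vnorm v)" by auto
  define k where "k = N - Suc j"
  have k: "k < N" and sk: "Suc k = N - j" and kN: "k \<le> N" using Suc.prems by (auto simp: k_def)
  obtain cA where cA: "cA \<ge> 0" "\<forall>x. (norm (A k *v x))\<^sup>2 \<le> cA * (norm x)\<^sup>2" using matrix_sq_bound by blast
  obtain cB where cB: "cB \<ge> 0" "\<forall>x. (norm (B k *v x))\<^sup>2 \<le> cB * (norm x)\<^sup>2" using matrix_sq_bound by blast
  obtain cC where cC: "cC \<ge> 0" "\<forall>x. (norm (C k *v x))\<^sup>2 \<le> cC * (norm x)\<^sup>2" using matrix_sq_bound by blast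
  define K' where "K' = 4 * (cA * K + cB + cC * K)"
  have K'0: "K' \<ge> 0" using K0 cA cB cC by (simp add: K'_def)
  show ?case
  proof (intro exI[of _ "max K K'"] conjI allI impI)
    fix v y i assume v: "predL2 M w N v" and y: "is_sol M w N A B C (\<lambda>k x. 0) (\<lambda>x. 0) v y" and i: "i \<le> Suc j"
    have KK: "\<forall>i\<le>j. integral\<^sup>L M (\<lambda>x. (norm (y (N - i) x))\<^sup>2) \<le> K * vnorm v" using K v y by blast
    have Vn: "0 \<le> vnorm v" by (rule vnorm_nonneg)
    show "integral\<^sup>L M (\<lambda>x. (norm (y (N - i) x))\<^sup>2) \<le> max K K' * vnorm v"
    proof (cases "i \<le> j")
      case True
      then have "integral\<^sup>L M (\<lambda>x. (norm (y (N - i) x))\<^sup>2) \<le> K * vnorm v" using KK by simp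
      also have "\<dots> \<le> max K K' * vnorm v" using Vn by (intro mult_right_mono) auto
      finally show ?thesis .
    next
      case False
      then have iS: "N - i = k" using i by (simp add: k_def)
      have Ls: "sqint M M (y (Suc k))" using sol_L2[OF y] k by simp
      have Kk: "integral\<^sup>L M (\<lambda>x. (norm (y (Suc k) x))\<^sup>2) \<le> K * vnorm v" using KK sk by (metis order_refl)
      define a where "a = (\<lambda>x. A k *v cexp M (F k) (y (Suc k)) x)"
      define b where "b = (\<lambda>x. B k *v v k x)"
      define c where "c = (\<lambda>x. C k *v cexp M (F k) (\<lambda>z. w k z *\<^sub>R y (Suc k) z) x)"
      have c1: "sqint M M (cexp M (F k) (y (Suc k)))" using sqint_subalg[OF cexp_L2(1)[OF kN Ls] subalg[OF kN]] .
      have c2: "sqint M M (cexp M (F k) (\<lambda>z. w k z *\<^sub>R y (Suc k) z))" using sqint_subalg[OF cexp_w(1)[OF k Ls] subalg[OF kN]] .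
      have vk: "sqint M M (v k)" using v k sqint_subalg[OF _ subalg[OF kN]] by (auto simp: predL2_def)
      have ia: "integrable M (\<lambda>x. (norm (a x))\<^sup>2)" "integral\<^sup>L M (\<lambda>x. (norm (a x))\<^sup>2) \<le> cA * integral\<^sup>L M (\<lambda>x. (norm (cexp M (F k) (y (Suc k)) x))\<^sup>2)"
        using int_sq_le[OF c1, of a cA] cA L2_meas[OF c1] unfolding a_def by auto
      have ib: "integrable M (\<lambda>x. (norm (b x))\<^sup>2)" "integral\<^sup>L M (\<lambda>x. (norm (b x))\<^sup>2) \<le> cB * integral\<^sup>L M (\<lambda>x. (norm (v k x))\<^sup>2)"
        using int_sq_le[OF vk, of b cB] cB L2_meas[OF vk] unfolding b_def by auto
      have ic: "integrable M (\<lambda>x. (norm (c x))\<^sup>2)" "integral\<^sup>L M (\<lambda>x. (norm (c x))\<^sup>2) \<le> cC * integral\<^sup>L M (\<lambda>x. (norm (cexp M (F k) (\<lambda>z. w k z *\<^sub>R y (Suc k) z) x))\<^sup>2)"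
        using int_sq_le[OF c2, of c cC] cC L2_meas[OF c2] unfolding c_def by auto
      have ae: "AE x in M. y k x = a x + b x + c x"
        using y k by (simp add: is_sol_def a_def b_def c_def)
      have yk: "sqint M M (y k)" using sol_L2[OF y] k by simp
      have "integral\<^sup>L M (\<lambda>x. (norm (y k x))\<^sup>2) = integral\<^sup>L M (\<lambda>x. (norm (a x + b x + c x))\<^sup>2)"
        by (rule integral_cong_AE) (use ae yk L2_meas[OF c1] L2_meas[OF c2] L2_meas[OF vk] in \<open>auto simp: a_def b_def c_def sqint_def elim: AE_mp\<close>)
      also have "\<dots> \<le> integral\<^sup>L M (\<lambda>x. 4 * (norm (a x))\<^sup>2 + 4 * (norm (b x))\<^sup>2 + 4 * (norm (c x))\<^sup>2)"
      proof (rule integral_mono)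
        show "integrable M (\<lambda>x. 4 * (norm (a x))\<^sup>2 + 4 * (norm (b x))\<^sup>2 + 4 * (norm (c x))\<^sup>2)"
          using ia ib ic by simp
        show "integrable M (\<lambda>x. (norm (a x + b x + c x))\<^sup>2)"
          by (rule Bochner_Integration.integrable_bound[of _ "\<lambda>x. 4 * (norm (a x))\<^sup>2 + 4 * (norm (b x))\<^sup>2 + 4 * (norm (c x))\<^sup>2"])
             (use ia ib ic norm_add3_sq L2_meas[OF c1] L2_meas[OF c2] L2_meas[OF vk] in \<open>auto simp: a_def b_def c_def\<close>)
      qed (rule norm_add3_sq)
      also have "\<dots> = 4 * integral\<^sup>L M (\<lambda>x. (norm (a x))\<^sup>2) + 4 * integral\<^sup>L M (\<lambda>x. (norm (b x))\<^sup>2) + 4 * integral\<^sup>L M (\<lambda>x. (norm (c x))\<^sup>2)"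
        using ia ib ic by simp
      also have "\<dots> \<le> 4 * (cA * (K * vnorm v)) + 4 * (cB * vnorm v) + 4 * (cC * (K * vnorm v))"
      proof -
        have "integral\<^sup>L M (\<lambda>x. (norm (cexp M (F k) (y (Suc k)) x))\<^sup>2) \<le> K * vnorm v"
          using cexp_L2(2)[OF kN Ls] Kk by linarith
        then have 1: "integral\<^sup>L M (\<lambda>x. (norm (a x))\<^sup>2) \<le> cA * (K * vnorm v)"
          using ia(2) cA(1) by (meson mult_left_mono order_trans)
        have 2: "integral\<^sup>L M (\<lambda>x. (norm (b x))\<^sup>2) \<le> cB * vnorm v"
          using ib(2) cB(1) vnorm_ge[OF k, of v] by (meson mult_left_mono order_trans)
        have "integral\<^sup>L M (\<lambda>x. (norm (cexp M (F k) (\<lambda>z. w k z *\<^sub>R y (Suc k) z) x))\<^sup>2) \<le> K * vnorm v"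
          using cexp_w(2)[OF k Ls] Kk by linarith
        then have 3: "integral\<^sup>L M (\<lambda>x. (norm (c x))\<^sup>2) \<le> cC * (K * vnorm v)"
          using ic(2) cC(1) by (meson mult_left_mono order_trans)
        show ?thesis using 1 2 3 by linarith
      qed
      also have "\<dots> = K' * vnorm v" by (simp add: K'_def algebra_simps)
      also have "\<dots> \<le> max K K' * vnorm v" using Vn by (intro mult_right_mono) auto
      finally show ?thesis using iS by simp
    qed
  qed (use K0 in simp)
qed

lemma sol_bound:
  fixes A C :: "nat \<Rightarrow> real^'n^'n" and B :: "nat \<Rightarrow> real^'m^'n"
  shows "\<exists>K\<ge>0. \<forall>v y. predL2 M w N v \<longrightarrow> is_sol M w N A B C (\<lambda>k x. 0) (\<lambda>x. 0) v y \<longrightarrow>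
     (\<forall>k\<le>N. integral\<^sup>L M (\<lambda>x. (norm (y k x))\<^sup>2) \<le> K * vnorm v)"
proof -
  obtain K where K: "K \<ge> 0" "\<forall>v y. predL2 M w N v \<longrightarrow> is_sol M w N A B C (\<lambda>k x. 0) (\<lambda>x. 0) v y \<longrightarrow>
     (\<forall>i\<le>N. integral\<^sup>L M (\<lambda>x. (norm (y (N - i) x))\<^sup>2) \<le> K * vnorm v)"
    using sol_bound_aux[of N A B C] by auto
  show ?thesis
  proof (intro exI[of _ K] conjI allI impI)
    fix v y k assume "predL2 M w N v" "is_sol M w N A B C (\<lambda>k x. 0) (\<lambda>x. 0) v y" "k \<le> N"
    then show "integral\<^sup>L M (\<lambda>x. (norm (y k x))\<^sup>2) \<le> K * vnorm v"
      using K(2)[rule_format, of v y "N - k"] by simp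
  qed (rule K(1))
qed

end


lemma int_inner_add_left:
  fixes P Q R :: "'a \<Rightarrow> real^'n"
  assumes "sqint M M P" "sqint M M Q" "sqint M M R"
  shows "integral\<^sup>L M (\<lambda>x. inner (P x + Q x) (R x)) = integral\<^sup>L M (\<lambda>x. inner (P x) (R x)) + integral\<^sup>L M (\<lambda>x. inner (Q x) (R x))"
  using L2_inner[OF assms(1,3)] L2_inner[OF assms(2,3)] by (simp add: inner_add_left)

lemma int_inner_add_right:
  fixes P Q R :: "'a \<Rightarrow> real^'n"
  assumes "sqint M M P" "sqint M M Q" "sqint M M R"
  shows "integral\<^sup>L M (\<lambda>x. inner (R x) (P x + Q x)) = integral\<^sup>L M (\<lambda>x. inner (R x) (P x)) + integral\<^sup>L M (\<lambda>x. inner (R x) (Q x))"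
  using L2_inner[OF assms(3,1)] L2_inner[OF assms(3,2)] by (simp add: inner_add_right)

lemma inner_mat2: "inner x ((A::real^'n^'m) *v y) = inner (transpose A *v x) y"
  by (metis inner_commute inner_mat)

lemma ipp_sum:
  fixes f g :: "nat \<Rightarrow> 'a \<Rightarrow> real^'n"
  assumes "\<And>k. k < N \<Longrightarrow> sqint M M (f k)" "\<And>k. k < N \<Longrightarrow> sqint M M (g k)"
  shows "ipp M N f g = (\<Sum>k<N. integral\<^sup>L M (\<lambda>x. inner (f k x) (g k x)))"
  unfolding ipp_def using assms by (intro Bochner_Integration.integral_sum) (auto intro: L2_inner)

context stp
begin

primrec xsq :: "(nat \<Rightarrow> real^'n^'n) \<Rightarrow> (nat \<Rightarrow> real^'n^'n) \<Rightarrow> ('a \<Rightarrow> real^'n) \<Rightarrow> (nat \<Rightarrow> 'a \<Rightarrow> real^'n) \<Rightarrow> nat \<Rightarrow> 'a \<Rightarrow> real^'n" where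
  "xsq A C x0 \<phi> 0 = x0"
| "xsq A C x0 \<phi> (Suc k) = (\<lambda>z. transpose (A k) *v xsq A C x0 \<phi> k z + w k z *\<^sub>R (transpose (C k) *v xsq A C x0 \<phi> k z) + \<phi> k z)"

lemma xsq_sqint:
  assumes x0: "sqint M (F 0) x0" and \<phi>: "\<And>k. k < N \<Longrightarrow> sqint M (F (Suc k)) (\<phi> k)"
  shows "k \<le> N \<Longrightarrow> sqint M (F k) (xsq A C x0 \<phi> k)"
proof (induction k)
  case 0
  then show ?case using x0 by simp
next
  case (Suc k)
  then have k: "k < N" and kN: "k \<le> N" and SkN: "Suc k \<le> N" by auto
  have X: "sqint M (F k) (xsq A C x0 \<phi> k)" using Suc kN by simp
  have XM: "xsq A C x0 \<phi> k \<in> borel_measurable M" using meas_FM[OF kN sqint_meas[OF X]] .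
  have a: "sqint M (F (Suc k)) (\<lambda>z. transpose (A k) *v xsq A C x0 \<phi> k z)"
  proof -
    have s2: "subalgebra (F (Suc k)) (F k)" by (rule subalg2) simp
    show ?thesis using sqint_subalg[OF sqint_mat[OF X XM] s2] .
  qed
  have cX: "sqint M (F k) (\<lambda>z. transpose (C k) *v xsq A C x0 \<phi> k z)" using sqint_mat[OF X XM] .
  have b: "sqint M (F (Suc k)) (\<lambda>z. w k z *\<^sub>R (transpose (C k) *v xsq A C x0 \<phi> k z))"
    using wX(1)[OF k cX] .
  note mm = meas_FM[OF SkN sqint_meas]
  have ab: "sqint M (F (Suc k)) (\<lambda>z. transpose (A k) *v xsq A C x0 \<phi> k z + w k z *\<^sub>R (transpose (C k) *v xsq A C x0 \<phi> k z))"
    using sqint_add[OF a b mm[OF a] mm[OF b]] .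
  show ?case using sqint_add[OF ab \<phi>[OF k] mm[OF ab] mm[OF \<phi>[OF k]]] by simp
qed

lemma duality:
  assumes y: "is_sol M w N A B C (\<lambda>k x. 0) (\<lambda>x. 0) v y" and v: "predL2 M w N v"
    and x0: "sqint M (F 0) x0" and \<phi>: "\<And>k. k < N \<Longrightarrow> sqint M (F (Suc k)) (\<phi> k)"
  shows "integral\<^sup>L M (\<lambda>x. inner (x0 x) (y 0 x)) + (\<Sum>k<N. integral\<^sup>L M (\<lambda>x. inner (\<phi> k x) (y (Suc k) x)))
       = (\<Sum>k<N. integral\<^sup>L M (\<lambda>x. inner (transpose (B k) *v xsq A C x0 \<phi> k x) (v k x)))"
proof -
  let ?X = "xsq A C x0 \<phi>"
  let ?I = "\<lambda>P Q. integral\<^sup>L M (\<lambda>x. inner (P x) (Q x))"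
  have XL: "sqint M M (?X k)" if "k \<le> N" for k
    using sqint_subalg[OF xsq_sqint[OF x0 \<phi> that] subalg[OF that]] .
  have step: "?I (?X (Suc k)) (y (Suc k)) = ?I (?X k) (y k) - ?I (\<lambda>x. transpose (B k) *v ?X k x) (v k) + ?I (\<phi> k) (y (Suc k))"
    if k: "k < N" for k
  proof -
    have kN: "k \<le> N" using k by simp
    have X: "sqint M (F k) (?X k)" using xsq_sqint[OF x0 \<phi> kN] .
    have XM: "?X k \<in> borel_measurable M" using meas_FM[OF kN sqint_meas[OF X]] .
    have X2: "sqint M M (?X k)" using XL[OF kN] .
    have Ys: "sqint M M (y (Suc k))" using sol_L2[OF y] k by simp
    have yk: "sqint M M (y k)" using sol_L2[OF y] k by simp
    have vk: "sqint M M (v k)" using v k sqint_subalg[OF _ subalg[OF kN]] by (auto simp: predL2_def)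
    have AX: "sqint M (F k) (\<lambda>z. transpose (A k) *v ?X k z)" using sqint_mat[OF X XM] .
    have CX: "sqint M (F k) (\<lambda>z. transpose (C k) *v ?X k z)" using sqint_mat[OF X XM] .
    have AX2: "sqint M M (\<lambda>z. transpose (A k) *v ?X k z)" using sqint_subalg[OF AX subalg[OF kN]] .
    have WCX: "sqint M M (\<lambda>z. w k z *\<^sub>R (transpose (C k) *v ?X k z))"
      using sqint_subalg[OF wX(1)[OF k CX] subalg] k by simp
    have ph: "sqint M M (\<phi> k)" using sqint_subalg[OF \<phi>[OF k] subalg] k by simp
    have c1: "sqint M M (cexp M (F k) (y (Suc k)))" using sqint_subalg[OF cexp_L2(1)[OF kN Ys] subalg[OF kN]] .
    have c2: "sqint M M (cexp M (F k) (\<lambda>z. w k z *\<^sub>R y (Suc k) z))" using sqint_subalg[OF cexp_w(1)[OF k Ys] subalg[OF kN]] .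
    have a: "sqint M M (\<lambda>x. A k *v cexp M (F k) (y (Suc k)) x)" using sqint_mat[OF c1 L2_meas[OF c1]] .
    have b: "sqint M M (\<lambda>x. B k *v v k x)" using sqint_mat[OF vk L2_meas[OF vk]] .
    have c: "sqint M M (\<lambda>x. C k *v cexp M (F k) (\<lambda>z. w k z *\<^sub>R y (Suc k) z) x)" using sqint_mat[OF c2 L2_meas[OF c2]] .
    have ab: "sqint M M (\<lambda>x. A k *v cexp M (F k) (y (Suc k)) x + B k *v v k x)"
      using sqint_add[OF a b L2_meas[OF a] L2_meas[OF b]] .
    have ae: "AE x in M. y k x = A k *v cexp M (F k) (y (Suc k)) x + B k *v v k x + C k *v cexp M (F k) (\<lambda>z. w k z *\<^sub>R y (Suc k) z) x"
      using y k by (simp add: is_sol_def)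
    have "?I (?X k) (y k) = ?I (?X k) (\<lambda>x. A k *v cexp M (F k) (y (Suc k)) x + B k *v v k x + C k *v cexp M (F k) (\<lambda>z. w k z *\<^sub>R y (Suc k) z) x)"
      by (rule integral_cong_AE) (use ae XM L2_meas[OF yk] L2_meas[OF ab] L2_meas[OF c] in \<open>auto elim: AE_mp\<close>)
    also have "\<dots> = ?I (?X k) (\<lambda>x. A k *v cexp M (F k) (y (Suc k)) x) + ?I (?X k) (\<lambda>x. B k *v v k x)
        + ?I (?X k) (\<lambda>x. C k *v cexp M (F k) (\<lambda>z. w k z *\<^sub>R y (Suc k) z) x)"
      using int_inner_add_right[OF ab c X2] int_inner_add_right[OF a b X2] by simp
    also have "?I (?X k) (\<lambda>x. A k *v cexp M (F k) (y (Suc k)) x) = ?I (\<lambda>z. transpose (A k) *v ?X k z) (y (Suc k))"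
      unfolding inner_mat2 using cexp_intg[OF kN AX Ys] .
    also have "?I (?X k) (\<lambda>x. B k *v v k x) = ?I (\<lambda>x. transpose (B k) *v ?X k x) (v k)"
      unfolding inner_mat2 ..
    also have "?I (?X k) (\<lambda>x. C k *v cexp M (F k) (\<lambda>z. w k z *\<^sub>R y (Suc k) z) x) = ?I (\<lambda>z. w k z *\<^sub>R (transpose (C k) *v ?X k z)) (y (Suc k))"
      unfolding inner_mat2 using cexp_w_intg[OF k CX Ys] .
    finally have e1: "?I (?X k) (y k) = ?I (\<lambda>z. transpose (A k) *v ?X k z) (y (Suc k)) + ?I (\<lambda>x. transpose (B k) *v ?X k x) (v k)
        + ?I (\<lambda>z. w k z *\<^sub>R (transpose (C k) *v ?X k z)) (y (Suc k))" .
    have AW: "sqint M M (\<lambda>z. transpose (A k) *v ?X k z + w k z *\<^sub>R (transpose (C k) *v ?X k z))"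
      using sqint_add[OF AX2 WCX L2_meas[OF AX2] L2_meas[OF WCX]] .
    have e2: "?I (?X (Suc k)) (y (Suc k)) = ?I (\<lambda>z. transpose (A k) *v ?X k z) (y (Suc k)) + ?I (\<lambda>z. w k z *\<^sub>R (transpose (C k) *v ?X k z)) (y (Suc k))
        + ?I (\<phi> k) (y (Suc k))"
      using int_inner_add_left[OF AW ph Ys] int_inner_add_left[OF AX2 WCX Ys] by simp
    show ?thesis using e1 e2 by simp
  qed
  have tel: "m \<le> N \<Longrightarrow> ?I (?X m) (y m) = ?I x0 (y 0) - (\<Sum>k<m. ?I (\<lambda>x. transpose (B k) *v ?X k x) (v k)) + (\<Sum>k<m. ?I (\<phi> k) (y (Suc k)))" for m
  proof (induction m)
    case 0
    then show ?case by simp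
  next
    case (Suc m)
    then show ?case using step[of m] by simp
  qed
  have "?I (?X N) (y N) = 0"
  proof -
    have "AE x in M. y N x = 0" using y by (simp add: is_sol_def)
    then have "?I (?X N) (y N) = integral\<^sup>L M (\<lambda>x. 0)"
      by (intro integral_cong_AE) (use L2_meas[OF XL[of N]] L2_meas[OF sol_L2[OF y, of N]] in \<open>auto elim: AE_mp\<close>)
    then show ?thesis by simp
  qed
  then show ?thesis using tel[of N] by simp
qed

end


declare transpose_matrix_vector[simp del]

lemma hadj_spec:
  assumes "z \<in> D" "\<forall>v\<in>D. ipD z v = ipC x (T v)"
  shows "hadj D ipD ipC T x \<in> D \<and> (\<forall>v\<in>D. ipD (hadj D ipD ipC T x) v = ipC x (T v))"
  unfolding hadj_def by (rule someI[where P="\<lambda>z. z \<in> D \<and> (\<forall>v\<in>D. ipD z v = ipC x (T v))"]) (use assms in blast)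

context stp
begin

lemma predL2_zero: "predL2 M w N (\<lambda>k x. 0)"
  by (simp add: predL2_def sqint_zero)

lemma predL2_L2: "predL2 M w N u \<Longrightarrow> k < N \<Longrightarrow> sqint M M (u k)"
  unfolding predL2_def using sqint_subalg[OF _ subalg] by (meson less_imp_le)

lemma adaptL2_L2: "adaptL2 M w N u \<Longrightarrow> k < N \<Longrightarrow> sqint M M (u k)"
  unfolding adaptL2_def using sqint_subalg[OF _ subalg] by (meson Suc_leI)

lemma L1_Y:
  assumes v: "predL2 M w N v"
  shows "adaptL2 M w N (\<lambda>k. sol M w N A B C (\<lambda>k x. 0) (\<lambda>x. 0) v (Suc k))"
  unfolding adaptL2_def
  using sol_Y[OF sol_is[OF v predL2_zero sqint_zero] v predL2_zero] by blast

lemma adjL1: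
  fixes A C :: "nat \<Rightarrow> real^'n^'n" and B :: "nat \<Rightarrow> real^'m^'n" and \<phi> :: "nat \<Rightarrow> 'a \<Rightarrow> real^'n"
  assumes \<phi>: "adaptL2 M w N \<phi>"
  shows "hadj {h :: nat \<Rightarrow> 'a \<Rightarrow> real^'m. predL2 M w N h} (ipp M N) (ipp M N) (\<lambda>v k. sol M w N A B C (\<lambda>k x. 0) (\<lambda>x. 0) v (Suc k)) \<phi> \<in> {h. predL2 M w N h}
   \<and> (\<forall>v\<in>{h. predL2 M w N h}. ipp M N (hadj {h :: nat \<Rightarrow> 'a \<Rightarrow> real^'m. predL2 M w N h} (ipp M N) (ipp M N) (\<lambda>v k. sol M w N A B C (\<lambda>k x. 0) (\<lambda>x. 0) v (Suc k)) \<phi>) v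
        = ipp M N \<phi> ((\<lambda>v k. sol M w N A B C (\<lambda>k x. 0) (\<lambda>x. 0) v (Suc k)) v))"
proof (rule hadj_spec)
  define z where "z = (\<lambda>k x. transpose (B k) *v xsq A C (\<lambda>x. 0) \<phi> k x)"
  have \<phi>k: "\<And>k. k < N \<Longrightarrow> sqint M (F (Suc k)) (\<phi> k)" using \<phi> by (simp add: adaptL2_def)
  have X: "k \<le> N \<Longrightarrow> sqint M (F k) (xsq A C (\<lambda>x. 0) \<phi> k)" for k
    by (rule xsq_sqint[OF sqint_zero \<phi>k])
  have zk: "sqint M (F k) (z k)" if "k < N" for k
  proof -
    have kN: "k \<le> N" using that by simp
    have Xk: "sqint M (F k) (xsq A C (\<lambda>x. 0) \<phi> k)" using X[OF kN] .
    show ?thesis unfolding z_def using sqint_mat[OF Xk meas_FM[OF kN sqint_meas[OF Xk]]] .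
  qed
  have zP: "predL2 M w N z" using zk by (simp add: predL2_def)
  show "z \<in> {h. predL2 M w N h}" using zP by simp
  show "\<forall>v\<in>{h. predL2 M w N h}. ipp M N z v = ipp M N \<phi> ((\<lambda>v k. sol M w N A B C (\<lambda>k x. 0) (\<lambda>x. 0) v (Suc k)) v)"
  proof
    fix v :: "nat \<Rightarrow> 'a \<Rightarrow> real^'m" assume "v \<in> {h. predL2 M w N h}"
    then have v: "predL2 M w N v" by simp
    let ?y = "sol M w N A B C (\<lambda>k x. 0) (\<lambda>x. 0) v"
    have y: "is_sol M w N A B C (\<lambda>k x. 0) (\<lambda>x. 0) v ?y" by (rule sol_is[OF v predL2_zero sqint_zero])
    have d: "integral\<^sup>L M (\<lambda>x. inner 0 (?y 0 x)) + (\<Sum>k<N. integral\<^sup>L M (\<lambda>x. inner (\<phi> k x) (?y (Suc k) x)))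
       = (\<Sum>k<N. integral\<^sup>L M (\<lambda>x. inner (transpose (B k) *v xsq A C (\<lambda>x. 0) \<phi> k x) (v k x)))"
      using duality[OF y v sqint_zero \<phi>k] by simp
    have "ipp M N z v = (\<Sum>k<N. integral\<^sup>L M (\<lambda>x. inner (z k x) (v k x)))"
      by (rule ipp_sum) (use predL2_L2[OF zP] predL2_L2[OF v] in auto)
    also have "\<dots> = (\<Sum>k<N. integral\<^sup>L M (\<lambda>x. inner (\<phi> k x) (?y (Suc k) x)))"
      using d by (simp add: z_def)
    also have "\<dots> = ipp M N \<phi> (\<lambda>k. ?y (Suc k))"
      by (rule ipp_sum[symmetric]) (use adaptL2_L2[OF \<phi>] sol_L2[OF y] in auto)
    finally show "ipp M N z v = ipp M N \<phi> ((\<lambda>v k. sol M w N A B C (\<lambda>k x. 0) (\<lambda>x. 0) v (Suc k)) v)" by simp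
  qed
qed

lemma adjL0:
  fixes A C :: "nat \<Rightarrow> real^'n^'n" and B :: "nat \<Rightarrow> real^'m^'n" and X :: "'a \<Rightarrow> real^'n"
  assumes N0: "0 < N" and X: "sqint M M X"
  shows "hadj {h :: nat \<Rightarrow> 'a \<Rightarrow> real^'m. predL2 M w N h} (ipp M N) (ipx M) (\<lambda>v. sol M w N A B C (\<lambda>k x. 0) (\<lambda>x. 0) v 0) X \<in> {h. predL2 M w N h}
   \<and> (\<forall>v\<in>{h. predL2 M w N h}. ipp M N (hadj {h :: nat \<Rightarrow> 'a \<Rightarrow> real^'m. predL2 M w N h} (ipp M N) (ipx M) (\<lambda>v. sol M w N A B C (\<lambda>k x. 0) (\<lambda>x. 0) v 0) X) v
        = ipx M X ((\<lambda>v. sol M w N A B C (\<lambda>k x. 0) (\<lambda>x. 0) v 0) v))"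
proof (rule hadj_spec)
  define x0 where "x0 = cexp M (F 0) X"
  have x0: "sqint M (F 0) x0" unfolding x0_def using cexp_L2(1)[OF _ X] by simp
  have \<phi>k: "\<And>k. k < N \<Longrightarrow> sqint M (F (Suc k)) ((\<lambda>k x. 0::real^'n) k)" by (simp add: sqint_zero)
  define z where "z = (\<lambda>k x. transpose (B k) *v xsq A C x0 (\<lambda>k x. 0) k x)"
  have Xk: "k \<le> N \<Longrightarrow> sqint M (F k) (xsq A C x0 (\<lambda>k x. 0) k)" for k
    by (rule xsq_sqint[OF x0 \<phi>k])
  have zk: "sqint M (F k) (z k)" if "k < N" for k
  proof -
    have kN: "k \<le> N" using that by simp
    have Xk': "sqint M (F k) (xsq A C x0 (\<lambda>k x. 0) k)" using Xk[OF kN] .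
    show ?thesis unfolding z_def using sqint_mat[OF Xk' meas_FM[OF kN sqint_meas[OF Xk']]] .
  qed
  have zP: "predL2 M w N z" using zk by (simp add: predL2_def)
  show "z \<in> {h. predL2 M w N h}" using zP by simp
  show "\<forall>v\<in>{h. predL2 M w N h}. ipp M N z v = ipx M X ((\<lambda>v. sol M w N A B C (\<lambda>k x. 0) (\<lambda>x. 0) v 0) v)"
  proof
    fix v :: "nat \<Rightarrow> 'a \<Rightarrow> real^'m" assume "v \<in> {h. predL2 M w N h}"
    then have v: "predL2 M w N v" by simp
    let ?y = "sol M w N A B C (\<lambda>k x. 0) (\<lambda>x. 0) v"
    have y: "is_sol M w N A B C (\<lambda>k x. 0) (\<lambda>x. 0) v ?y" by (rule sol_is[OF v predL2_zero sqint_zero])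
    have d: "integral\<^sup>L M (\<lambda>x. inner (x0 x) (?y 0 x))
       = (\<Sum>k<N. integral\<^sup>L M (\<lambda>x. inner (transpose (B k) *v xsq A C x0 (\<lambda>k x. 0) k x) (v k x)))"
      using duality[OF y v x0 \<phi>k] by simp
    have y0: "sqint M (F 0) (?y 0)" by (rule sol_Fk[OF y v predL2_zero N0])
    have "ipp M N z v = (\<Sum>k<N. integral\<^sup>L M (\<lambda>x. inner (z k x) (v k x)))"
      by (rule ipp_sum) (use predL2_L2[OF zP] predL2_L2[OF v] in auto)
    also have "\<dots> = integral\<^sup>L M (\<lambda>x. inner (x0 x) (?y 0 x))"
      using d by (simp add: z_def)
    also have "\<dots> = integral\<^sup>L M (\<lambda>x. inner (?y 0 x) (X x))"
      using cexp_intg[OF _ y0 X] by (simp add: x0_def inner_commute)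
    also have "\<dots> = ipx M X (?y 0)" by (simp add: ipx_def inner_commute)
    finally show "ipp M N z v = ipx M X ((\<lambda>v. sol M w N A B C (\<lambda>k x. 0) (\<lambda>x. 0) v 0) v)" by simp
  qed
qed

lemma adjPhi:
  fixes x :: "nat \<Rightarrow> 'a \<Rightarrow> real^'n"
  assumes x: "predL2 M w N x"
  shows "hadj {h :: nat \<Rightarrow> 'a \<Rightarrow> real^'n. adaptL2 M w N h} (ipp M N) (ipp M N) (\<lambda>\<phi> k. cexp M (F k) (\<phi> k)) x \<in> {h. adaptL2 M w N h}
   \<and> (\<forall>v\<in>{h. adaptL2 M w N h}. ipp M N (hadj {h :: nat \<Rightarrow> 'a \<Rightarrow> real^'n. adaptL2 M w N h} (ipp M N) (ipp M N) (\<lambda>\<phi> k. cexp M (F k) (\<phi> k)) x) v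
        = ipp M N x ((\<lambda>\<phi> k. cexp M (F k) (\<phi> k)) v))"
proof (rule hadj_spec)
  have xk: "k < N \<Longrightarrow> sqint M (F k) (x k)" for k using x by (simp add: predL2_def)
  show "x \<in> {h. adaptL2 M w N h}"
    unfolding adaptL2_def
  proof (intro CollectI allI impI)
    fix k assume k: "k < N"
    have s2: "subalgebra (F (Suc k)) (F k)" by (rule subalg2) simp
    show "sqint M (F (Suc k)) (x k)" using sqint_subalg[OF xk[OF k] s2] .
  qed
  show "\<forall>v\<in>{h. adaptL2 M w N h}. ipp M N x v = ipp M N x ((\<lambda>\<phi> k. cexp M (F k) (\<phi> k)) v)"
  proof
    fix v :: "nat \<Rightarrow> 'a \<Rightarrow> real^'n" assume "v \<in> {h. adaptL2 M w N h}"
    then have v: "adaptL2 M w N v" by simp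
    have vL: "k < N \<Longrightarrow> sqint M M (v k)" for k using adaptL2_L2[OF v] .
    have cL: "k < N \<Longrightarrow> sqint M M (cexp M (F k) (v k))" for k
      using sqint_subalg[OF cexp_L2(1)[OF _ vL] subalg] by simp
    have "ipp M N x v = (\<Sum>k<N. integral\<^sup>L M (\<lambda>z. inner (x k z) (v k z)))"
      by (rule ipp_sum) (use predL2_L2[OF x] vL in auto)
    also have "\<dots> = (\<Sum>k<N. integral\<^sup>L M (\<lambda>z. inner (x k z) (cexp M (F k) (v k) z)))"
      using cexp_intg[OF _ xk vL] by simp
    also have "\<dots> = ipp M N x (\<lambda>k. cexp M (F k) (v k))"
      by (rule ipp_sum[symmetric]) (use predL2_L2[OF x] cL in auto)
    finally show "ipp M N x v = ipp M N x ((\<lambda>\<phi> k. cexp M (F k) (\<phi> k)) v)" by simp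
  qed
qed

end


lemma amgm_t: assumes t: "0 < t" shows "(x::real) * y \<le> t / 2 * x\<^sup>2 + y\<^sup>2 / (2 * t)"
proof -
  have "0 \<le> (t * x - y)\<^sup>2" by simp
  then have "2 * t * (x * y) \<le> t\<^sup>2 * x\<^sup>2 + y\<^sup>2" by (simp add: power2_eq_square algebra_simps)
  then show ?thesis using t by (simp add: field_simps power2_eq_square)
qed

lemma abs_inner_t: assumes t: "0 < t" shows "\<bar>inner a b\<bar> \<le> t / 2 * (norm a)\<^sup>2 + (norm (b::'b::real_inner))\<^sup>2 / (2 * t)"
  using Cauchy_Schwarz_ineq2[of a b] amgm_t[OF t, of "norm a" "norm b"] by linarith

lemma le_eps: assumes c: "0 \<le> c" and h: "\<And>t. 0 < t \<Longrightarrow> (x::real) \<le> t * c" shows "x \<le> 0"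
proof (rule ccontr)
  assume "\<not> x \<le> 0"
  then have x: "0 < x" by simp
  have "x \<le> x / (2 * (c + 1)) * c" using h[of "x / (2 * (c + 1))"] x c by simp
  also have "\<dots> < x"
  proof -
    have "0 \<le> c * x" using x c by simp
    then have "c * x < x * (2 * (c + 1))" using x by (simp add: algebra_simps)
    then show ?thesis using x c by (simp add: field_simps)
  qed
  finally show False by simp
qed

context stp
begin

lemma L2_add: "sqint M M X \<Longrightarrow> sqint M M Y \<Longrightarrow> sqint M M (\<lambda>x. X x + (Y x :: real^'d))"
  by (rule sqint_add) (auto simp: sqint_def)

lemma ipp_nonneg: "0 \<le> ipp M N v v"
  unfolding ipp_def by (intro integral_nonneg_AE) (auto intro!: sum_nonneg)

lemma ipp_vnorm:
  assumes v: "predL2 M w N v"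
  shows "ipp M N v v = vnorm v"
proof -
  have "ipp M N v v = (\<Sum>k<N. integral\<^sup>L M (\<lambda>x. inner (v k x) (v k x)))"
    by (rule ipp_sum) (use predL2_L2[OF v] in auto)
  then show ?thesis by (simp add: vnorm_def power2_norm_eq_inner)
qed

lemma frechet_intro:
  fixes g :: "nat \<Rightarrow> 'a \<Rightarrow> real^'m" and J :: "(nat \<Rightarrow> 'a \<Rightarrow> real^'m) \<Rightarrow> real"
  assumes gL: "\<And>k. k < N \<Longrightarrow> sqint M M (g k)"
    and rem: "\<And>v. predL2 M w N v \<Longrightarrow> J (\<lambda>k x. u k x + v k x) - J u - ipp M N g v = Qd v"
    and qb: "\<And>v. predL2 M w N v \<Longrightarrow> \<bar>Qd v\<bar> \<le> K * ipp M N v v" and K0: "0 \<le> K"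
  shows "frechet_at {h. predL2 M w N h} (\<lambda>v. sqrt (ipp M N v v)) J u (\<lambda>v. ipp M N g v)"
  unfolding frechet_at_def
proof (intro conjI)
  show "\<forall>v\<in>{h. predL2 M w N h}. \<forall>v'\<in>{h. predL2 M w N h}. \<forall>a b.
      ipp M N g (\<lambda>k x. a *\<^sub>R v k x + b *\<^sub>R v' k x) = a * ipp M N g v + b * ipp M N g v'"
  proof (intro ballI allI)
    fix v v' :: "nat \<Rightarrow> 'a \<Rightarrow> real^'m" and a b :: real
    assume "v \<in> {h. predL2 M w N h}" "v' \<in> {h. predL2 M w N h}"
    then have v: "predL2 M w N v" and v': "predL2 M w N v'" by auto
    note vL = predL2_L2[OF v] and vL' = predL2_L2[OF v']
    have cL: "k < N \<Longrightarrow> sqint M M (\<lambda>x. a *\<^sub>R v k x + b *\<^sub>R v' k x)" for k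
      by (intro L2_add sqint_scale vL vL')
    have "ipp M N g (\<lambda>k x. a *\<^sub>R v k x + b *\<^sub>R v' k x) = (\<Sum>k<N. integral\<^sup>L M (\<lambda>x. inner (g k x) (a *\<^sub>R v k x + b *\<^sub>R v' k x)))"
      by (rule ipp_sum) (use gL cL in auto)
    also have "\<dots> = (\<Sum>k<N. a * integral\<^sup>L M (\<lambda>x. inner (g k x) (v k x)) + b * integral\<^sup>L M (\<lambda>x. inner (g k x) (v' k x)))"
    proof (rule sum.cong[OF refl])
      fix k assume "k \<in> {..<N}"
      then have k: "k < N" by simp
      have i1: "integrable M (\<lambda>x. inner (g k x) (v k x))" using L2_inner[OF gL[OF k] vL[OF k]] .
      have i2: "integrable M (\<lambda>x. inner (g k x) (v' k x))" using L2_inner[OF gL[OF k] vL'[OF k]] .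
      show "integral\<^sup>L M (\<lambda>x. inner (g k x) (a *\<^sub>R v k x + b *\<^sub>R v' k x)) = a * integral\<^sup>L M (\<lambda>x. inner (g k x) (v k x)) + b * integral\<^sup>L M (\<lambda>x. inner (g k x) (v' k x))"
        using i1 i2 by (simp add: inner_add_right)
    qed
    also have "\<dots> = a * ipp M N g v + b * ipp M N g v'"
      using ipp_sum[where M=M and N=N and f=g and g=v] ipp_sum[where M=M and N=N and f=g and g=v'] gL vL vL'
      by (simp add: sum.distrib sum_distrib_left)
    finally show "ipp M N g (\<lambda>k x. a *\<^sub>R v k x + b *\<^sub>R v' k x) = a * ipp M N g v + b * ipp M N g v'" .
  qed
next
  define G where "G = vnorm g"
  have G0: "0 \<le> G" unfolding G_def by (rule vnorm_nonneg)
  show "\<exists>K. \<forall>v\<in>{h. predL2 M w N h}. \<bar>ipp M N g v\<bar> \<le> K * sqrt (ipp M N v v)"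
  proof (intro exI[of _ "(G + 1) / 2"] ballI)
    fix v :: "nat \<Rightarrow> 'a \<Rightarrow> real^'m" assume "v \<in> {h. predL2 M w N h}"
    then have v: "predL2 M w N v" by simp
    note vL = predL2_L2[OF v]
    define V where "V = ipp M N v v"
    have V0: "0 \<le> V" unfolding V_def by (rule ipp_nonneg)
    have Vv: "V = vnorm v" unfolding V_def by (rule ipp_vnorm[OF v])
    have tb: "\<bar>ipp M N g v\<bar> \<le> t / 2 * G + V / (2 * t)" if t: "0 < t" for t
    proof -
      have "ipp M N g v = (\<Sum>k<N. integral\<^sup>L M (\<lambda>x. inner (g k x) (v k x)))"
        by (rule ipp_sum) (use gL vL in auto)
      then have "\<bar>ipp M N g v\<bar> \<le> (\<Sum>k<N. \<bar>integral\<^sup>L M (\<lambda>x. inner (g k x) (v k x))\<bar>)"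
        by (simp add: sum_abs)
      also have "\<dots> \<le> (\<Sum>k<N. t / 2 * integral\<^sup>L M (\<lambda>x. (norm (g k x))\<^sup>2) + integral\<^sup>L M (\<lambda>x. (norm (v k x))\<^sup>2) / (2 * t))"
      proof (rule sum_mono)
        fix k assume "k \<in> {..<N}"
        then have k: "k < N" by simp
        have i1: "integrable M (\<lambda>x. inner (g k x) (v k x))" using L2_inner[OF gL[OF k] vL[OF k]] .
        have i2: "integrable M (\<lambda>x. t / 2 * (norm (g k x))\<^sup>2 + (norm (v k x))\<^sup>2 / (2 * t))"
          using gL[OF k] vL[OF k] by (simp add: sqint_def)
        have "\<bar>integral\<^sup>L M (\<lambda>x. inner (g k x) (v k x))\<bar> \<le> integral\<^sup>L M (\<lambda>x. \<bar>inner (g k x) (v k x)\<bar>)"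
          by (rule integral_abs_bound)
        also have "\<dots> \<le> integral\<^sup>L M (\<lambda>x. t / 2 * (norm (g k x))\<^sup>2 + (norm (v k x))\<^sup>2 / (2 * t))"
          by (rule integral_mono[OF _ i2]) (use i1 abs_inner_t[OF t] in auto)
        also have "\<dots> = t / 2 * integral\<^sup>L M (\<lambda>x. (norm (g k x))\<^sup>2) + integral\<^sup>L M (\<lambda>x. (norm (v k x))\<^sup>2) / (2 * t)"
          using gL[OF k] vL[OF k] by (simp add: sqint_def)
        finally show "\<bar>integral\<^sup>L M (\<lambda>x. inner (g k x) (v k x))\<bar> \<le> t / 2 * integral\<^sup>L M (\<lambda>x. (norm (g k x))\<^sup>2) + integral\<^sup>L M (\<lambda>x. (norm (v k x))\<^sup>2) / (2 * t)" .
      qed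
      also have "\<dots> = t / 2 * G + V / (2 * t)"
        unfolding G_def Vv vnorm_def by (simp add: sum.distrib sum_distrib_left sum_divide_distrib)
      finally show ?thesis .
    qed
    show "\<bar>ipp M N g v\<bar> \<le> (G + 1) / 2 * sqrt (ipp M N v v)"
    proof (cases "V = 0")
      case True
      have "\<bar>ipp M N g v\<bar> \<le> t * G" if t: "0 < t" for t
      proof -
        have "\<bar>ipp M N g v\<bar> \<le> (2 * t) / 2 * G + V / (2 * (2 * t))" by (rule tb) (use t in simp)
        then show ?thesis using True by simp
      qed
      then have "\<bar>ipp M N g v\<bar> \<le> 0" by (rule le_eps[OF G0])
      then show ?thesis using True by (simp add: V_def)
    next
      case False
      then have sV: "0 < sqrt V" using V0 by simp
      have "\<bar>ipp M N g v\<bar> \<le> sqrt V / 2 * G + V / (2 * sqrt V)" by (rule tb[OF sV])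
      also have "V / (2 * sqrt V) = sqrt V / 2"
      proof -
        have "V / (2 * sqrt V) = (V / sqrt V) / 2" by simp
        also have "\<dots> = sqrt V / 2" using real_div_sqrt[OF V0] by simp
        finally show ?thesis .
      qed
      finally show ?thesis by (simp add: V_def[symmetric] field_simps)
    qed
  qed
next
  show "\<forall>e>0. \<exists>d>0. \<forall>v\<in>{h. predL2 M w N h}. sqrt (ipp M N v v) < d \<longrightarrow>
        \<bar>J (\<lambda>k x. u k x + v k x) - J u - ipp M N g v\<bar> \<le> e * sqrt (ipp M N v v)"
  proof (intro allI impI)
    fix e :: real assume e: "0 < e"
    show "\<exists>d>0. \<forall>v\<in>{h. predL2 M w N h}. sqrt (ipp M N v v) < d \<longrightarrow>
        \<bar>J (\<lambda>k x. u k x + v k x) - J u - ipp M N g v\<bar> \<le> e * sqrt (ipp M N v v)"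
    proof (intro exI[of _ "e / (K + 1)"] conjI ballI impI)
      show "0 < e / (K + 1)" using e K0 by simp
      fix v :: "nat \<Rightarrow> 'a \<Rightarrow> real^'m" assume "v \<in> {h. predL2 M w N h}" and s: "sqrt (ipp M N v v) < e / (K + 1)"
      then have v: "predL2 M w N v" by simp
      define s where "s = sqrt (ipp M N v v)"
      have ipn: "0 \<le> ipp M N v v" unfolding ipp_def by (intro integral_nonneg_AE) (auto intro!: sum_nonneg)
      have s0: "0 \<le> s" unfolding s_def using ipn by simp
      have ss: "ipp M N v v = s * s" unfolding s_def using ipn by simp
      have "\<bar>J (\<lambda>k x. u k x + v k x) - J u - ipp M N g v\<bar> = \<bar>Qd v\<bar>" using rem[OF v] by simp
      also have "\<dots> \<le> K * (s * s)" using qb[OF v] ss by simp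
      also have "\<dots> \<le> K * (e / (K + 1) * s)"
        using s s0 K0 unfolding s_def[symmetric] by (intro mult_left_mono mult_right_mono) auto
      also have "\<dots> \<le> e * s"
      proof -
        have "K * (e / (K + 1)) \<le> e" using K0 e by (simp add: field_simps)
        then show ?thesis using s0 by (metis mult.assoc mult_right_mono)
      qed
      finally show "\<bar>J (\<lambda>k x. u k x + v k x) - J u - ipp M N g v\<bar> \<le> e * sqrt (ipp M N v v)"
        unfolding s_def .
    qed
  qed
qed

end


lemma sym_inner: "transpose A = A \<Longrightarrow> inner ((A::real^'n^'n) *v a) b = inner (A *v b) a"
  by (metis inner_commute inner_mat)

lemma alg_0:
  assumes "transpose G = (G::real^'n^'n)"
  shows "inner (G *v (y + d)) (y + d) = inner (G *v y) y + 2 * inner (G *v y) d + inner (G *v d) d"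
proof -
  have "inner (G *v d) y = inner (G *v y) d" by (rule sym_inner[OF assms])
  then show ?thesis by (simp add: matrix_vector_right_distrib inner_add_left inner_add_right)
qed

lemma alg_k:
  fixes Q :: "real^'n^'n" and R :: "real^'m^'m" and S :: "real^'n^'m"
  assumes Qs: "transpose Q = Q" and Rs: "transpose R = R"
  shows "inner (Q *v (yb + db)) (yb + db) + 2 * inner (S *v (yb + db)) (u + v) + inner (R *v (u + v)) (u + v)
      + 2 * inner e (yb + db) + 2 * inner r (u + v)
   = (inner (Q *v yb) yb + 2 * inner (S *v yb) u + inner (R *v u) u + 2 * inner e yb + 2 * inner r u)
     + 2 * (inner (Q *v yb) db + inner (S *v yb) v + inner (transpose S *v u) db + inner (R *v u) v + inner e db + inner r v)
     + (inner (Q *v db) db + 2 * inner (S *v db) v + inner (R *v v) v)"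
proof -
  have 1: "inner (Q *v db) yb = inner (Q *v yb) db" by (rule sym_inner[OF Qs])
  have 2: "inner (R *v v) u = inner (R *v u) v" by (rule sym_inner[OF Rs])
  have 3: "inner (S *v db) u = inner (transpose S *v u) db" by (metis inner_commute inner_mat)
  show ?thesis by (simp add: matrix_vector_right_distrib inner_add_left inner_add_right 1 2 3 algebra_simps)
qed

context stp
begin

lemma L2_inner_mat: "sqint M M X \<Longrightarrow> sqint M M Y \<Longrightarrow> integrable M (\<lambda>x. inner ((A::real^'n^'m) *v X x) (Y x))"
  by (rule L2_inner[OF sqint_mat[OF _ L2_meas]])

lemma L2_mat: "sqint M M X \<Longrightarrow> sqint M M (\<lambda>x. (A::real^'n^'m) *v X x)"
  by (rule sqint_mat[OF _ L2_meas])

lemma cost_diff: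
  fixes A C :: "nat \<Rightarrow> real^'n^'n" and B :: "nat \<Rightarrow> real^'m^'n"
    and q eta :: "nat \<Rightarrow> 'a \<Rightarrow> real^'n" and rho :: "nat \<Rightarrow> 'a \<Rightarrow> real^'m"
    and G0 :: "real^'n^'n" and Q :: "nat \<Rightarrow> real^'n^'n" and S :: "nat \<Rightarrow> real^'n^'m"
    and R :: "nat \<Rightarrow> real^'m^'m"
    and xi :: "'a \<Rightarrow> real^'n" and u v :: "nat \<Rightarrow> 'a \<Rightarrow> real^'m"
  assumes q: "predL2 M w N q" and G0s: "transpose G0 = G0" and Qs: "\<forall>k<N. transpose (Q k) = Q k"
    and Rs: "\<forall>k<N. transpose (R k) = R k" and eta: "predL2 M w N eta" and rho: "predL2 M w N rho"
    and xi: "sqint M (F N) xi" and u: "predL2 M w N u" and v: "predL2 M w N v"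
  defines "y \<equiv> sol M w N A B C q xi u" and "d \<equiv> sol M w N A B C (\<lambda>k x. 0) (\<lambda>x. 0) v"
  shows "cost M w N A B C q G0 Q S R eta rho xi (\<lambda>k x. u k x + v k x) - cost M w N A B C q G0 Q S R eta rho xi u
     = integral\<^sup>L M (\<lambda>x. inner (G0 *v y 0 x) (d 0 x) + (\<Sum>k<N. inner (Q k *v cexp M (F k) (y (Suc k)) x) (cexp M (F k) (d (Suc k)) x)
          + inner (S k *v cexp M (F k) (y (Suc k)) x) (v k x) + inner (transpose (S k) *v u k x) (cexp M (F k) (d (Suc k)) x)
          + inner (R k *v u k x) (v k x) + inner (eta k x) (cexp M (F k) (d (Suc k)) x) + inner (rho k x) (v k x)))
       + 1/2 * integral\<^sup>L M (\<lambda>x. inner (G0 *v d 0 x) (d 0 x) + (\<Sum>k<N. inner (Q k *v cexp M (F k) (d (Suc k)) x) (cexp M (F k) (d (Suc k)) x)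
          + 2 * inner (S k *v cexp M (F k) (d (Suc k)) x) (v k x) + inner (R k *v v k x) (v k x)))"
    (is "_ = integral\<^sup>L M ?D + 1/2 * integral\<^sup>L M ?Q")
proof -
  define uv where "uv = (\<lambda>k x. u k x + v k x)"
  have uvP: "predL2 M w N uv"
    unfolding uv_def predL2_def
  proof (intro allI impI)
    fix k assume k: "k < N"
    have a: "sqint M (F k) (u k)" "sqint M (F k) (v k)" using u v k by (auto simp: predL2_def)
    show "sqint M (F k) (\<lambda>x. u k x + v k x)"
      by (rule sqint_add[OF a]) (use meas_FM[OF _ sqint_meas[OF a(1)]] meas_FM[OF _ sqint_meas[OF a(2)]] k in auto)
  qed
  define yv where "yv = sol M w N A B C q xi uv"
  have yS: "is_sol M w N A B C q xi u y" unfolding y_def by (rule sol_is[OF u q xi])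
  have dS: "is_sol M w N A B C (\<lambda>k x. 0) (\<lambda>x. 0) v d" unfolding d_def by (rule sol_is[OF v predL2_zero sqint_zero])
  have yvS: "is_sol M w N A B C q xi uv yv" unfolding yv_def by (rule sol_is[OF uvP q xi])
  have lin: "k \<le> N \<Longrightarrow> AE x in M. yv k x = y k x + d k x" for k
    by (rule sol_lin[OF yS dS yvS]) (auto simp: uv_def)
  have Ly: "k \<le> N \<Longrightarrow> sqint M M (y k)" for k using sol_L2[OF yS] .
  have Ld: "k \<le> N \<Longrightarrow> sqint M M (d k)" for k using sol_L2[OF dS] .
  have Lyv: "k \<le> N \<Longrightarrow> sqint M M (yv k)" for k using sol_L2[OF yvS] .
  have Lc: "sqint M M (cexp M (F k) X)" if k: "k < N" and X: "sqint M M X" for k and X :: "'a \<Rightarrow> real^'n"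
  proof -
    have kN: "k \<le> N" using k by simp
    show ?thesis using sqint_subalg[OF cexp_L2(1)[OF kN X] subalg[OF kN]] .
  qed
  have Lyb: "k < N \<Longrightarrow> sqint M M (cexp M (F k) (y (Suc k)))" for k using Lc Ly by simp
  have Ldb: "k < N \<Longrightarrow> sqint M M (cexp M (F k) (d (Suc k)))" for k using Lc Ld by simp
  have Lybv: "k < N \<Longrightarrow> sqint M M (cexp M (F k) (yv (Suc k)))" for k using Lc Lyv by simp
  have Lu: "k < N \<Longrightarrow> sqint M M (u k)" for k using predL2_L2[OF u] .
  have Lv: "k < N \<Longrightarrow> sqint M M (v k)" for k using predL2_L2[OF v] .
  have Le: "k < N \<Longrightarrow> sqint M M (eta k)" for k using predL2_L2[OF eta] .
  have Lr: "k < N \<Longrightarrow> sqint M M (rho k)" for k using predL2_L2[OF rho] .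
  have e0: "AE x in M. yv 0 x = y 0 x + d 0 x" using lin by simp
  have ek: "AE x in M. \<forall>k\<in>{..<N}. cexp M (F k) (yv (Suc k)) x = cexp M (F k) (y (Suc k)) x + cexp M (F k) (d (Suc k)) x"
  proof (rule AE_finite_allI[OF finite_lessThan])
    fix k assume "k \<in> {..<N}"
    then have k: "k < N" by simp
    have 1: "AE x in M. cexp M (F k) (yv (Suc k)) x = cexp M (F k) (\<lambda>x. y (Suc k) x + d (Suc k) x) x"
      by (rule cexp_cong) (use k lin[of "Suc k"] L2_meas[OF Lyv[of "Suc k"]] L2_meas[OF Ly[of "Suc k"]] L2_meas[OF Ld[of "Suc k"]] in auto)
    have 2: "AE x in M. cexp M (F k) (\<lambda>x. y (Suc k) x + d (Suc k) x) x = cexp M (F k) (y (Suc k)) x + cexp M (F k) (d (Suc k)) x"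
      by (rule cexp_add) (use k Ly[of "Suc k"] Ld[of "Suc k"] in auto)
    show "AE x in M. cexp M (F k) (yv (Suc k)) x = cexp M (F k) (y (Suc k)) x + cexp M (F k) (d (Suc k)) x"
      using 1 2 by eventually_elim simp
  qed
  define cf where "cf = (\<lambda>(Y :: nat \<Rightarrow> 'a \<Rightarrow> real^'n) (U :: nat \<Rightarrow> 'a \<Rightarrow> real^'m) x. inner (G0 *v Y 0 x) (Y 0 x)
      + (\<Sum>k<N. inner (Q k *v cexp M (F k) (Y (Suc k)) x) (cexp M (F k) (Y (Suc k)) x)
        + 2 * inner (S k *v cexp M (F k) (Y (Suc k)) x) (U k x) + inner (R k *v U k x) (U k x)
        + 2 * inner (eta k x) (cexp M (F k) (Y (Suc k)) x) + 2 * inner (rho k x) (U k x)))"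
  have cost_u: "cost M w N A B C q G0 Q S R eta rho xi u = 1/2 * integral\<^sup>L M (cf y u)"
    unfolding cost_def Let_def cf_def y_def by simp
  have cost_uv: "cost M w N A B C q G0 Q S R eta rho xi uv = 1/2 * integral\<^sup>L M (cf yv uv)"
    unfolding cost_def Let_def cf_def yv_def by simp
  have ae: "AE x in M. cf yv uv x = cf y u x + 2 * ?D x + ?Q x"
    using e0 ek
  proof eventually_elim
    case (elim x)
    have s: "(\<Sum>k<N. inner (Q k *v cexp M (F k) (yv (Suc k)) x) (cexp M (F k) (yv (Suc k)) x)
        + 2 * inner (S k *v cexp M (F k) (yv (Suc k)) x) (uv k x) + inner (R k *v uv k x) (uv k x)
        + 2 * inner (eta k x) (cexp M (F k) (yv (Suc k)) x) + 2 * inner (rho k x) (uv k x))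
      = (\<Sum>k<N. (inner (Q k *v cexp M (F k) (y (Suc k)) x) (cexp M (F k) (y (Suc k)) x)
        + 2 * inner (S k *v cexp M (F k) (y (Suc k)) x) (u k x) + inner (R k *v u k x) (u k x)
        + 2 * inner (eta k x) (cexp M (F k) (y (Suc k)) x) + 2 * inner (rho k x) (u k x))
        + 2 * (inner (Q k *v cexp M (F k) (y (Suc k)) x) (cexp M (F k) (d (Suc k)) x)
          + inner (S k *v cexp M (F k) (y (Suc k)) x) (v k x) + inner (transpose (S k) *v u k x) (cexp M (F k) (d (Suc k)) x)
          + inner (R k *v u k x) (v k x) + inner (eta k x) (cexp M (F k) (d (Suc k)) x) + inner (rho k x) (v k x))
        + (inner (Q k *v cexp M (F k) (d (Suc k)) x) (cexp M (F k) (d (Suc k)) x)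
          + 2 * inner (S k *v cexp M (F k) (d (Suc k)) x) (v k x) + inner (R k *v v k x) (v k x)))"
    proof (rule sum.cong[OF refl])
      fix k assume "k \<in> {..<N}"
      then have k: "k < N" by simp
      show "inner (Q k *v cexp M (F k) (yv (Suc k)) x) (cexp M (F k) (yv (Suc k)) x)
        + 2 * inner (S k *v cexp M (F k) (yv (Suc k)) x) (uv k x) + inner (R k *v uv k x) (uv k x)
        + 2 * inner (eta k x) (cexp M (F k) (yv (Suc k)) x) + 2 * inner (rho k x) (uv k x)
        = (inner (Q k *v cexp M (F k) (y (Suc k)) x) (cexp M (F k) (y (Suc k)) x)
        + 2 * inner (S k *v cexp M (F k) (y (Suc k)) x) (u k x) + inner (R k *v u k x) (u k x)
        + 2 * inner (eta k x) (cexp M (F k) (y (Suc k)) x) + 2 * inner (rho k x) (u k x))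
        + 2 * (inner (Q k *v cexp M (F k) (y (Suc k)) x) (cexp M (F k) (d (Suc k)) x)
          + inner (S k *v cexp M (F k) (y (Suc k)) x) (v k x) + inner (transpose (S k) *v u k x) (cexp M (F k) (d (Suc k)) x)
          + inner (R k *v u k x) (v k x) + inner (eta k x) (cexp M (F k) (d (Suc k)) x) + inner (rho k x) (v k x))
        + (inner (Q k *v cexp M (F k) (d (Suc k)) x) (cexp M (F k) (d (Suc k)) x)
          + 2 * inner (S k *v cexp M (F k) (d (Suc k)) x) (v k x) + inner (R k *v v k x) (v k x))"
        using elim(2) k alg_k[OF Qs[rule_format, OF k] Rs[rule_format, OF k], of "cexp M (F k) (y (Suc k)) x" "cexp M (F k) (d (Suc k)) x" "S k" "u k x" "v k x" "eta k x" "rho k x"]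
        by (simp add: uv_def)
    qed
    show ?case
      unfolding cf_def using elim(1) s alg_0[OF G0s, of "y 0 x" "d 0 x"]
      by (simp add: sum.distrib sum_distrib_left algebra_simps)
  qed
  have iD: "integrable M ?D"
    by (auto intro!: Bochner_Integration.integrable_add integrable_sum integrable_mult_right L2_inner L2_mat Ly Ld Lyb Ldb Lu Lv Le Lr)
  have iQ: "integrable M ?Q"
    by (auto intro!: Bochner_Integration.integrable_add integrable_sum integrable_mult_right L2_inner L2_mat Ly Ld Lyb Ldb Lu Lv Le Lr)
  have icf: "integrable M (cf y u)"
    unfolding cf_def
    by (auto intro!: Bochner_Integration.integrable_add integrable_sum integrable_mult_right L2_inner L2_mat Ly Ld Lyb Ldb Lu Lv Le Lr)
  have Luv: "k < N \<Longrightarrow> sqint M M (uv k)" for k using predL2_L2[OF uvP] .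
  have icf2: "integrable M (cf yv uv)"
    unfolding cf_def
    by (auto intro!: Bochner_Integration.integrable_add integrable_sum integrable_mult_right L2_inner L2_mat Lyv Lybv Luv Le Lr)
  have m1: "cf yv uv \<in> borel_measurable M" using icf2 by (rule borel_measurable_integrable)
  have i2D: "integrable M (\<lambda>x. 2 * ?D x)" by (rule integrable_mult_right) (rule iD)
  have "integrable M (\<lambda>x. cf y u x + 2 * ?D x + ?Q x)"
    by (rule Bochner_Integration.integrable_add[OF Bochner_Integration.integrable_add[OF icf i2D] iQ])
  then have m2: "(\<lambda>x. cf y u x + 2 * ?D x + ?Q x) \<in> borel_measurable M" by (rule borel_measurable_integrable)
  have "integral\<^sup>L M (cf yv uv) = integral\<^sup>L M (\<lambda>x. cf y u x + 2 * ?D x + ?Q x)"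
    by (rule integral_cong_AE[OF m1 m2 ae])
  also have "\<dots> = integral\<^sup>L M (\<lambda>x. cf y u x + 2 * ?D x) + integral\<^sup>L M ?Q"
    by (rule Bochner_Integration.integral_add[OF Bochner_Integration.integrable_add[OF icf i2D] iQ])
  also have "integral\<^sup>L M (\<lambda>x. cf y u x + 2 * ?D x) = integral\<^sup>L M (cf y u) + integral\<^sup>L M (\<lambda>x. 2 * ?D x)"
    by (rule Bochner_Integration.integral_add[OF icf i2D])
  also have "integral\<^sup>L M (\<lambda>x. 2 * ?D x) = 2 * integral\<^sup>L M ?D"
    by (rule integral_mult_right_zero)
  finally show ?thesis using cost_u cost_uv unfolding uv_def by (simp add: algebra_simps)
qed

end


lemma abs_inner_mat:
  assumes c: "\<forall>x. (norm (A *v x))\<^sup>2 \<le> c * (norm x)\<^sup>2"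
  shows "\<bar>inner ((A::real^'n^'m) *v a) b\<bar> \<le> c / 2 * (norm a)\<^sup>2 + (norm b)\<^sup>2 / 2"
  using abs_inner_le[of "A *v a" b] c[rule_format, of a] by linarith

context stp
begin

lemma quad_bound:
  fixes A C :: "nat \<Rightarrow> real^'n^'n" and B :: "nat \<Rightarrow> real^'m^'n"
    and G0 :: "real^'n^'n" and Q :: "nat \<Rightarrow> real^'n^'n" and S :: "nat \<Rightarrow> real^'n^'m"
    and R :: "nat \<Rightarrow> real^'m^'m"
  shows "\<exists>K\<ge>0. \<forall>v d. predL2 M w N v \<longrightarrow> is_sol M w N A B C (\<lambda>k x. 0) (\<lambda>x. 0) v d \<longrightarrow>
     \<bar>integral\<^sup>L M (\<lambda>x. inner (G0 *v d 0 x) (d 0 x) + (\<Sum>k<N. inner (Q k *v cexp M (F k) (d (Suc k)) x) (cexp M (F k) (d (Suc k)) x)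
          + 2 * inner (S k *v cexp M (F k) (d (Suc k)) x) (v k x) + inner (R k *v v k x) (v k x)))\<bar> \<le> K * vnorm v"
proof -
  obtain Kd where Kd0: "Kd \<ge> 0" and Kd: "\<forall>v y. predL2 M w N v \<longrightarrow> is_sol M w N A B C (\<lambda>k x. 0) (\<lambda>x. 0) v y \<longrightarrow>
     (\<forall>k\<le>N. integral\<^sup>L M (\<lambda>x. (norm (y k x))\<^sup>2) \<le> Kd * vnorm v)"
    using sol_bound[of A B C] by blast
  obtain cG where cG: "cG \<ge> 0" "\<forall>x. (norm (G0 *v x))\<^sup>2 \<le> cG * (norm x)\<^sup>2" using matrix_sq_bound by blast
  have "\<forall>k. \<exists>c. c \<ge> 0 \<and> (\<forall>x. (norm (Q k *v x))\<^sup>2 \<le> c * (norm x)\<^sup>2)" using matrix_sq_bound by blast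
  then obtain cQ where cQ: "\<And>k. cQ k \<ge> 0" "\<And>k. \<forall>x. (norm (Q k *v x))\<^sup>2 \<le> cQ k * (norm x)\<^sup>2" by metis
  have "\<forall>k. \<exists>c. c \<ge> 0 \<and> (\<forall>x. (norm (S k *v x))\<^sup>2 \<le> c * (norm x)\<^sup>2)" using matrix_sq_bound by blast
  then obtain cS where cS: "\<And>k. cS k \<ge> 0" "\<And>k. \<forall>x. (norm (S k *v x))\<^sup>2 \<le> cS k * (norm x)\<^sup>2" by metis
  have "\<forall>k. \<exists>c. c \<ge> 0 \<and> (\<forall>x. (norm (R k *v x))\<^sup>2 \<le> c * (norm x)\<^sup>2)" using matrix_sq_bound by blast
  then obtain cR where cR: "\<And>k. cR k \<ge> 0" "\<And>k. \<forall>x. (norm (R k *v x))\<^sup>2 \<le> cR k * (norm x)\<^sup>2" by metis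
  define K where "K = (cG / 2 + 1 / 2) * Kd + (\<Sum>k<N. (cQ k / 2 + 1 / 2 + cS k) * Kd + (1 + cR k / 2 + 1 / 2))"
  have K0: "K \<ge> 0" unfolding K_def using Kd0 cG cQ cS cR by (intro add_nonneg_nonneg sum_nonneg mult_nonneg_nonneg) auto
  show ?thesis
  proof (intro exI[of _ K] conjI allI impI K0)
    fix v d assume v: "predL2 M w N v" and d: "is_sol M w N A B C (\<lambda>k x. 0) (\<lambda>x. 0) v d"
    let ?db = "\<lambda>k. cexp M (F k) (d (Suc k))"
    define V where "V = vnorm v"
    have Ld: "k \<le> N \<Longrightarrow> sqint M M (d k)" for k using sol_L2[OF d] .
    have Ldb: "sqint M M (?db k)" if k: "k < N" for k
    proof -
      have kN: "k \<le> N" using k by simp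
      show ?thesis using sqint_subalg[OF cexp_L2(1)[OF kN Ld[of "Suc k"]] subalg[OF kN]] k by simp
    qed
    have Lv: "k < N \<Longrightarrow> sqint M M (v k)" for k using predL2_L2[OF v] .
    have bd0: "integral\<^sup>L M (\<lambda>x. (norm (d 0 x))\<^sup>2) \<le> Kd * V" using Kd v d unfolding V_def by auto
    have bdb: "integral\<^sup>L M (\<lambda>x. (norm (?db k x))\<^sup>2) \<le> Kd * V" if k: "k < N" for k
    proof -
      have kN: "k \<le> N" using k by simp
      have "integral\<^sup>L M (\<lambda>x. (norm (?db k x))\<^sup>2) \<le> integral\<^sup>L M (\<lambda>x. (norm (d (Suc k) x))\<^sup>2)"
        using cexp_L2(2)[OF kN Ld[of "Suc k"]] k by simp
      also have "\<dots> \<le> Kd * V" using Kd v d k unfolding V_def by auto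
      finally show ?thesis .
    qed
    have bv: "k < N \<Longrightarrow> integral\<^sup>L M (\<lambda>x. (norm (v k x))\<^sup>2) \<le> V" for k unfolding V_def by (rule vnorm_ge)
    define Bd where "Bd = (\<lambda>x. (cG / 2 + 1 / 2) * (norm (d 0 x))\<^sup>2 + (\<Sum>k<N. (cQ k / 2 + 1 / 2 + cS k) * (norm (?db k x))\<^sup>2
       + (1 + cR k / 2 + 1 / 2) * (norm (v k x))\<^sup>2))"
    let ?Qe = "\<lambda>x. inner (G0 *v d 0 x) (d 0 x) + (\<Sum>k<N. inner (Q k *v ?db k x) (?db k x)
          + 2 * inner (S k *v ?db k x) (v k x) + inner (R k *v v k x) (v k x))"
    have pw: "\<bar>?Qe x\<bar> \<le> Bd x" for x
    proof -
      have t0: "\<bar>inner (G0 *v d 0 x) (d 0 x)\<bar> \<le> (cG / 2 + 1 / 2) * (norm (d 0 x))\<^sup>2"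
        using abs_inner_mat[OF cG(2), of "d 0 x" "d 0 x"] by (simp add: algebra_simps)
      have tk: "\<bar>inner (Q k *v ?db k x) (?db k x) + 2 * inner (S k *v ?db k x) (v k x) + inner (R k *v v k x) (v k x)\<bar>
         \<le> (cQ k / 2 + 1 / 2 + cS k) * (norm (?db k x))\<^sup>2 + (1 + cR k / 2 + 1 / 2) * (norm (v k x))\<^sup>2" for k
      proof -
        have 1: "\<bar>inner (Q k *v ?db k x) (?db k x)\<bar> \<le> cQ k / 2 * (norm (?db k x))\<^sup>2 + (norm (?db k x))\<^sup>2 / 2"
          by (rule abs_inner_mat[OF cQ(2)])
        have 2: "\<bar>inner (S k *v ?db k x) (v k x)\<bar> \<le> cS k / 2 * (norm (?db k x))\<^sup>2 + (norm (v k x))\<^sup>2 / 2"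
          by (rule abs_inner_mat[OF cS(2)])
        have 3: "\<bar>inner (R k *v v k x) (v k x)\<bar> \<le> cR k / 2 * (norm (v k x))\<^sup>2 + (norm (v k x))\<^sup>2 / 2"
          by (rule abs_inner_mat[OF cR(2)])
        show ?thesis using 1 2 3 by (simp add: algebra_simps)
      qed
      have "\<bar>?Qe x\<bar> \<le> \<bar>inner (G0 *v d 0 x) (d 0 x)\<bar> + \<bar>\<Sum>k<N. inner (Q k *v ?db k x) (?db k x)
          + 2 * inner (S k *v ?db k x) (v k x) + inner (R k *v v k x) (v k x)\<bar>" by (rule abs_triangle_ineq)
      also have "\<dots> \<le> \<bar>inner (G0 *v d 0 x) (d 0 x)\<bar> + (\<Sum>k<N. \<bar>inner (Q k *v ?db k x) (?db k x)
          + 2 * inner (S k *v ?db k x) (v k x) + inner (R k *v v k x) (v k x)\<bar>)" by (simp add: sum_abs)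
      also have "\<dots> \<le> Bd x" unfolding Bd_def using t0 tk by (intro add_mono sum_mono) auto
      finally show ?thesis .
    qed
    have iQe: "integrable M ?Qe"
      by (auto intro!: Bochner_Integration.integrable_add integrable_sum integrable_mult_right L2_inner L2_mat Ld Ldb Lv)
    have iN: "integrable M (\<lambda>x. (norm (X x))\<^sup>2)" if "sqint M M X" for X :: "'a \<Rightarrow> real^'d" using that by (simp add: sqint_def)
    have iBd: "integrable M Bd" unfolding Bd_def
      by (auto intro!: Bochner_Integration.integrable_add integrable_sum integrable_mult_right iN Ld Ldb Lv)
    have "\<bar>integral\<^sup>L M ?Qe\<bar> \<le> integral\<^sup>L M (\<lambda>x. \<bar>?Qe x\<bar>)" by (rule integral_abs_bound)
    also have "\<dots> \<le> integral\<^sup>L M Bd" by (rule integral_mono[OF _ iBd pw]) (use iQe in simp)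
    also have "integral\<^sup>L M Bd = (cG / 2 + 1 / 2) * integral\<^sup>L M (\<lambda>x. (norm (d 0 x))\<^sup>2)
        + (\<Sum>k<N. (cQ k / 2 + 1 / 2 + cS k) * integral\<^sup>L M (\<lambda>x. (norm (?db k x))\<^sup>2) + (1 + cR k / 2 + 1 / 2) * integral\<^sup>L M (\<lambda>x. (norm (v k x))\<^sup>2))"
    proof -
      have i0: "integrable M (\<lambda>x. (cG / 2 + 1 / 2) * (norm (d 0 x))\<^sup>2)" using iN[OF Ld[of 0]] by simp
      have ik: "integrable M (\<lambda>x. (cQ k / 2 + 1 / 2 + cS k) * (norm (?db k x))\<^sup>2 + (1 + cR k / 2 + 1 / 2) * (norm (v k x))\<^sup>2)"
        if k: "k \<in> {..<N}" for k using iN[OF Ldb] iN[OF Lv] k by simp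
      have isum: "integrable M (\<lambda>x. \<Sum>k<N. (cQ k / 2 + 1 / 2 + cS k) * (norm (?db k x))\<^sup>2 + (1 + cR k / 2 + 1 / 2) * (norm (v k x))\<^sup>2)"
        by (rule Bochner_Integration.integrable_sum) (rule ik)
      have "integral\<^sup>L M Bd = integral\<^sup>L M (\<lambda>x. (cG / 2 + 1 / 2) * (norm (d 0 x))\<^sup>2)
         + integral\<^sup>L M (\<lambda>x. \<Sum>k<N. (cQ k / 2 + 1 / 2 + cS k) * (norm (?db k x))\<^sup>2 + (1 + cR k / 2 + 1 / 2) * (norm (v k x))\<^sup>2)"
        unfolding Bd_def by (rule Bochner_Integration.integral_add[OF i0 isum])
      also have "integral\<^sup>L M (\<lambda>x. \<Sum>k<N. (cQ k / 2 + 1 / 2 + cS k) * (norm (?db k x))\<^sup>2 + (1 + cR k / 2 + 1 / 2) * (norm (v k x))\<^sup>2)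
         = (\<Sum>k<N. integral\<^sup>L M (\<lambda>x. (cQ k / 2 + 1 / 2 + cS k) * (norm (?db k x))\<^sup>2 + (1 + cR k / 2 + 1 / 2) * (norm (v k x))\<^sup>2))"
        by (rule Bochner_Integration.integral_sum) (rule ik)
      also have "\<dots> = (\<Sum>k<N. (cQ k / 2 + 1 / 2 + cS k) * integral\<^sup>L M (\<lambda>x. (norm (?db k x))\<^sup>2) + (1 + cR k / 2 + 1 / 2) * integral\<^sup>L M (\<lambda>x. (norm (v k x))\<^sup>2))"
      proof (rule sum.cong[OF refl])
        fix k assume k: "k \<in> {..<N}"
        have a: "integrable M (\<lambda>x. (cQ k / 2 + 1 / 2 + cS k) * (norm (?db k x))\<^sup>2)" using iN[OF Ldb] k by simp
        have b: "integrable M (\<lambda>x. (1 + cR k / 2 + 1 / 2) * (norm (v k x))\<^sup>2)" using iN[OF Lv] k by simp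
        show "integral\<^sup>L M (\<lambda>x. (cQ k / 2 + 1 / 2 + cS k) * (norm (?db k x))\<^sup>2 + (1 + cR k / 2 + 1 / 2) * (norm (v k x))\<^sup>2)
          = (cQ k / 2 + 1 / 2 + cS k) * integral\<^sup>L M (\<lambda>x. (norm (?db k x))\<^sup>2) + (1 + cR k / 2 + 1 / 2) * integral\<^sup>L M (\<lambda>x. (norm (v k x))\<^sup>2)"
          using Bochner_Integration.integral_add[OF a b] by simp
      qed
      finally show ?thesis by simp
    qed
    also have "\<dots> \<le> (cG / 2 + 1 / 2) * (Kd * V) + (\<Sum>k<N. (cQ k / 2 + 1 / 2 + cS k) * (Kd * V) + (1 + cR k / 2 + 1 / 2) * V)"
      using cG cQ cS cR bd0 bdb bv by (intro add_mono sum_mono mult_left_mono) auto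
    also have "\<dots> = K * V" unfolding K_def by (simp add: algebra_simps sum.distrib sum_distrib_left sum_distrib_right)
    finally show "\<bar>integral\<^sup>L M ?Qe\<bar> \<le> K * vnorm v" unfolding V_def .
  qed
qed

end


lemma int6:
  assumes "integrable M f1" "integrable M f2" "integrable M f3" "integrable M f4" "integrable M f5" "integrable M (f6::'a \<Rightarrow> real)"
  shows "integral\<^sup>L M (\<lambda>x. f1 x + f2 x + f3 x + f4 x + f5 x + f6 x) = integral\<^sup>L M f1 + integral\<^sup>L M f2 + integral\<^sup>L M f3 + integral\<^sup>L M f4 + integral\<^sup>L M f5 + integral\<^sup>L M f6"
  using assms by simp

lemma int_split:
  assumes "integrable M (a::'a \<Rightarrow> real)" "\<And>k. k \<in> I \<Longrightarrow> integrable M (b k)"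
  shows "integral\<^sup>L M (\<lambda>x. a x + (\<Sum>k\<in>I. b k x)) = integral\<^sup>L M a + (\<Sum>k\<in>I. integral\<^sup>L M (b k))"
proof -
  have "integrable M (\<lambda>x. \<Sum>k\<in>I. b k x)" by (rule Bochner_Integration.integrable_sum) (rule assms(2))
  then have "integral\<^sup>L M (\<lambda>x. a x + (\<Sum>k\<in>I. b k x)) = integral\<^sup>L M a + integral\<^sup>L M (\<lambda>x. \<Sum>k\<in>I. b k x)"
    by (rule Bochner_Integration.integral_add[OF assms(1)])
  also have "integral\<^sup>L M (\<lambda>x. \<Sum>k\<in>I. b k x) = (\<Sum>k\<in>I. integral\<^sup>L M (b k))"
    by (rule Bochner_Integration.integral_sum) (rule assms(2))
  finally show ?thesis .
qed

context stp
begin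

lemma ipp_add:
  fixes f h :: "nat \<Rightarrow> 'a \<Rightarrow> real^'d"
  assumes "\<And>k. k < N \<Longrightarrow> sqint M M (f k)" "\<And>k. k < N \<Longrightarrow> sqint M M (h k)" "\<And>k. k < N \<Longrightarrow> sqint M M (v k)"
  shows "ipp M N (\<lambda>k x. f k x + h k x) v = ipp M N f v + ipp M N h v"
proof -
  have "ipp M N (\<lambda>k x. f k x + h k x) v = (\<Sum>k<N. integral\<^sup>L M (\<lambda>x. inner (f k x + h k x) (v k x)))"
    by (rule ipp_sum) (use assms in \<open>auto intro!: L2_add\<close>)
  also have "\<dots> = (\<Sum>k<N. integral\<^sup>L M (\<lambda>x. inner (f k x) (v k x)) + integral\<^sup>L M (\<lambda>x. inner (h k x) (v k x)))"
    by (rule sum.cong[OF refl]) (use assms in \<open>auto intro!: int_inner_add_left\<close>)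
  also have "\<dots> = ipp M N f v + ipp M N h v"
    using ipp_sum[where M=M and N=N and f=f and g=v] ipp_sum[where M=M and N=N and f=h and g=v] assms
    by (simp add: sum.distrib)
  finally show ?thesis .
qed

lemma int3_AE:
  assumes ae: "AE x in M. Y x = Y1 x + Y2 x + Y3 x" and L: "sqint M M Y" "sqint M M Y1" "sqint M M Y2" "sqint M M Y3" "sqint M M Z"
  shows "integral\<^sup>L M (\<lambda>x. inner ((A::real^'n^'m) *v Y x) (Z x)) = integral\<^sup>L M (\<lambda>x. inner (A *v Y1 x) (Z x))
     + integral\<^sup>L M (\<lambda>x. inner (A *v Y2 x) (Z x)) + integral\<^sup>L M (\<lambda>x. inner (A *v Y3 x) (Z x))"
proof -
  have i: "integrable M (\<lambda>x. inner (A *v Y1 x) (Z x))" "integrable M (\<lambda>x. inner (A *v Y2 x) (Z x))"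
     "integrable M (\<lambda>x. inner (A *v Y3 x) (Z x))" "integrable M (\<lambda>x. inner (A *v Y x) (Z x))"
    using L by (auto intro!: L2_inner L2_mat)
  have "integral\<^sup>L M (\<lambda>x. inner (A *v Y x) (Z x)) = integral\<^sup>L M (\<lambda>x. inner (A *v Y1 x) (Z x) + inner (A *v Y2 x) (Z x) + inner (A *v Y3 x) (Z x))"
    by (rule integral_cong_AE) (use i ae in \<open>auto simp: matrix_vector_right_distrib inner_add_left elim!: AE_mp\<close>)
  also have "\<dots> = integral\<^sup>L M (\<lambda>x. inner (A *v Y1 x) (Z x)) + integral\<^sup>L M (\<lambda>x. inner (A *v Y2 x) (Z x)) + integral\<^sup>L M (\<lambda>x. inner (A *v Y3 x) (Z x))"
    using i by simp
  finally show ?thesis .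
qed

end


lemma L2_mat_g: "sqint M M X \<Longrightarrow> sqint M M (\<lambda>x. (A::real^'n^'m) *v X x)"
  by (rule sqint_mat) (auto simp: sqint_def)

lemma main_stmt:
  fixes M :: "'a measure" and w :: "nat \<Rightarrow> 'a \<Rightarrow> real" and N :: nat
    and A C :: "nat \<Rightarrow> real^'n^'n" and B :: "nat \<Rightarrow> real^'m^'n"
    and q eta :: "nat \<Rightarrow> 'a \<Rightarrow> real^'n" and rho :: "nat \<Rightarrow> 'a \<Rightarrow> real^'m"
    and G0 :: "real^'n^'n" and Q :: "nat \<Rightarrow> real^'n^'n" and S :: "nat \<Rightarrow> real^'n^'m"
    and R :: "nat \<Rightarrow> real^'m^'m"
    and xi :: "'a \<Rightarrow> real^'n" and u :: "nat \<Rightarrow> 'a \<Rightarrow> real^'m"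
  assumes stp: "stp M w N" and N0: "0 < N"
    and qP: "predL2 M w N q"
    and G0s: "transpose G0 = G0" and Qs: "\<forall>k<N. transpose (Q k) = Q k" and Rs: "\<forall>k<N. transpose (R k) = R k"
    and etaP: "predL2 M w N eta" and rhoP: "predL2 M w N rho"
    and xiP: "sqint M (filt M w N) xi"
    and uP: "predL2 M w N u"
  shows
   "let U = {h :: nat \<Rightarrow> 'a \<Rightarrow> real^'m. predL2 M w N h};
        Y = {h :: nat \<Rightarrow> 'a \<Rightarrow> real^'n. adaptL2 M w N h};
        z0 = (\<lambda>k x. 0 :: real^'n);
        I0 = (\<lambda>\<zeta>. sol M w N A B C z0 \<zeta> (\<lambda>k x. 0) 0);
        I1 = (\<lambda>\<zeta> k. sol M w N A B C z0 \<zeta> (\<lambda>k x. 0) (Suc k));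
        L0 = (\<lambda>v. sol M w N A B C z0 (\<lambda>x. 0) v 0);
        L1 = (\<lambda>v k. sol M w N A B C z0 (\<lambda>x. 0) v (Suc k));
        Q0 = sol M w N A B C q (\<lambda>x. 0) (\<lambda>k x. 0) 0;
        Q1 = (\<lambda>k. sol M w N A B C q (\<lambda>x. 0) (\<lambda>k x. 0) (Suc k));
        Phi = (\<lambda>\<phi> k. cexp M (filt M w k) (\<phi> k));
        G0op = (\<lambda>X x. G0 *v X x);
        Qop = (\<lambda>\<phi> k x. Q k *v \<phi> k x);
        Sop = (\<lambda>\<phi> k x. S k *v \<phi> k x);
        StOp = (\<lambda>v k x. transpose (S k) *v v k x);
        Rop = (\<lambda>v k x. R k *v v k x);
        L0s = hadj U (ipp M N) (ipx M) L0;
        L1s = hadj U (ipp M N) (ipp M N) L1;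
        Phis = hadj Y (ipp M N) (ipp M N) Phi;
        Au = (\<lambda>k x. L0s (G0op (L0 u)) k x + L1s (Phis (Qop (Phi (L1 u)))) k x
                    + L1s (Phis (StOp u)) k x + Sop (Phi (L1 u)) k x + Rop u k x);
        Bxi = (\<lambda>k x. L0s (G0op (I0 xi)) k x + L1s (Phis (Qop (Phi (I1 xi)))) k x
                    + Sop (Phi (I1 xi)) k x);
        a = (\<lambda>k x. L0s (G0op Q0) k x + L1s (Phis (Qop (Phi Q1))) k x + L1s (Phis eta) k x
                  + Sop (Phi Q1) k x + rho k x)
    in frechet_at U (\<lambda>v. sqrt (ipp M N v v))
         (\<lambda>v. cost M w N A B C q G0 Q S R eta rho xi v) u
         (\<lambda>v. ipp M N (\<lambda>k x. Au k x + Bxi k x + a k x) v)"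
proof -
  interpret stp M w N by (rule stp)
  define U where "U = {h :: nat \<Rightarrow> 'a \<Rightarrow> real^'m. predL2 M w N h}"
  define Yset where "Yset = {h :: nat \<Rightarrow> 'a \<Rightarrow> real^'n. adaptL2 M w N h}"
  define z0 :: "nat \<Rightarrow> 'a \<Rightarrow> real^'n" where "z0 = (\<lambda>k x. 0 :: real^'n)"
  define I0 where "I0 = (\<lambda>\<zeta>. sol M w N A B C z0 \<zeta> (\<lambda>k x. 0) 0)"
  define I1 where "I1 = (\<lambda>\<zeta> k. sol M w N A B C z0 \<zeta> (\<lambda>k x. 0) (Suc k))"
  define L0 where "L0 = (\<lambda>v. sol M w N A B C z0 (\<lambda>x. 0) v 0)"
  define L1 where "L1 = (\<lambda>v k. sol M w N A B C z0 (\<lambda>x. 0) v (Suc k))"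
  define Q0 where "Q0 = sol M w N A B C q (\<lambda>x. 0) (\<lambda>k x. 0) 0"
  define Q1 where "Q1 = (\<lambda>k. sol M w N A B C q (\<lambda>x. 0) (\<lambda>k x. 0) (Suc k))"
  define Phi :: "(nat \<Rightarrow> 'a \<Rightarrow> real^'n) \<Rightarrow> nat \<Rightarrow> 'a \<Rightarrow> real^'n" where "Phi = (\<lambda>\<phi> k. cexp M (filt M w k) (\<phi> k))"
  define G0op :: "('a \<Rightarrow> real^'n) \<Rightarrow> 'a \<Rightarrow> real^'n" where "G0op = (\<lambda>X x. G0 *v X x)"
  define Qop :: "(nat \<Rightarrow> 'a \<Rightarrow> real^'n) \<Rightarrow> nat \<Rightarrow> 'a \<Rightarrow> real^'n" where "Qop = (\<lambda>\<phi> k x. Q k *v \<phi> k x)"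
  define Sop :: "(nat \<Rightarrow> 'a \<Rightarrow> real^'n) \<Rightarrow> nat \<Rightarrow> 'a \<Rightarrow> real^'m" where "Sop = (\<lambda>\<phi> k x. S k *v \<phi> k x)"
  define StOp :: "(nat \<Rightarrow> 'a \<Rightarrow> real^'m) \<Rightarrow> nat \<Rightarrow> 'a \<Rightarrow> real^'n" where "StOp = (\<lambda>v k x. transpose (S k) *v v k x)"
  define Rop :: "(nat \<Rightarrow> 'a \<Rightarrow> real^'m) \<Rightarrow> nat \<Rightarrow> 'a \<Rightarrow> real^'m" where "Rop = (\<lambda>v k x. R k *v v k x)"
  define L0s where "L0s = hadj U (ipp M N) (ipx M) L0"
  define L1s where "L1s = hadj U (ipp M N) (ipp M N) L1"
  define Phis where "Phis = hadj Yset (ipp M N) (ipp M N) Phi"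
  define Au where "Au = (\<lambda>k x. L0s (G0op (L0 u)) k x + L1s (Phis (Qop (Phi (L1 u)))) k x
                    + L1s (Phis (StOp u)) k x + Sop (Phi (L1 u)) k x + Rop u k x)"
  define Bxi where "Bxi = (\<lambda>k x. L0s (G0op (I0 xi)) k x + L1s (Phis (Qop (Phi (I1 xi)))) k x
                    + Sop (Phi (I1 xi)) k x)"
  define a where "a = (\<lambda>k x. L0s (G0op Q0) k x + L1s (Phis (Qop (Phi Q1))) k x + L1s (Phis eta) k x
                  + Sop (Phi Q1) k x + rho k x)"
  define g where "g = (\<lambda>k x. Au k x + Bxi k x + a k x)"
  have main: "frechet_at U (\<lambda>v. sqrt (ipp M N v v)) (\<lambda>v. cost M w N A B C q G0 Q S R eta rho xi v) u (\<lambda>v. ipp M N g v)"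
  proof -
    have z0P: "predL2 M w N z0" unfolding z0_def by (rule predL2_zero)
    define y where "y = sol M w N A B C q xi u"
    define Is where "Is = sol M w N A B C z0 xi (\<lambda>k x. 0)"
    define Ls where "Ls = sol M w N A B C z0 (\<lambda>x. 0) u"
    define Qz where "Qz = sol M w N A B C q (\<lambda>x. 0) (\<lambda>k x. 0)"
    define Ps where "Ps = sol M w N A B C z0 xi u"
    have yS: "is_sol M w N A B C q xi u y" unfolding y_def by (rule sol_is[OF uP qP xiP])
    have IsS: "is_sol M w N A B C z0 xi (\<lambda>k x. 0) Is" unfolding Is_def by (rule sol_is[OF predL2_zero z0P xiP])
    have LsS: "is_sol M w N A B C z0 (\<lambda>x. 0) u Ls" unfolding Ls_def by (rule sol_is[OF uP z0P sqint_zero])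
    have QzS: "is_sol M w N A B C q (\<lambda>x. 0) (\<lambda>k x. 0) Qz" unfolding Qz_def by (rule sol_is[OF predL2_zero qP sqint_zero])
    have PsS: "is_sol M w N A B C z0 xi u Ps" unfolding Ps_def by (rule sol_is[OF uP z0P xiP])
    have PsD: "AE x in M. Ps k x = Is k x + Ls k x" if "k \<le> N" for k
      by (rule sol_lin[OF IsS LsS PsS]) (use that in \<open>auto simp: z0_def\<close>)
    have yD0: "AE x in M. y k x = Ps k x + Qz k x" if "k \<le> N" for k
      by (rule sol_lin[OF PsS QzS yS]) (use that in \<open>auto simp: z0_def\<close>)
    have yD: "AE x in M. y k x = Is k x + Ls k x + Qz k x" if "k \<le> N" for k
      using PsD[OF that] yD0[OF that] by eventually_elim simp
    have Ly: "k \<le> N \<Longrightarrow> sqint M M (y k)" for k using sol_L2[OF yS] .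
    have LIs: "k \<le> N \<Longrightarrow> sqint M M (Is k)" for k using sol_L2[OF IsS] .
    have LLs: "k \<le> N \<Longrightarrow> sqint M M (Ls k)" for k using sol_L2[OF LsS] .
    have LQz: "k \<le> N \<Longrightarrow> sqint M M (Qz k)" for k using sol_L2[OF QzS] .
    have LcF: "sqint M (F k) (cexp M (F k) X)" if k: "k < N" and X: "sqint M M X" for k and X :: "'a \<Rightarrow> real^'n"
      using cexp_L2(1)[OF _ X] k by simp
    have Lc: "sqint M M (cexp M (F k) X)" if k: "k < N" and X: "sqint M M X" for k and X :: "'a \<Rightarrow> real^'n"
      using sqint_subalg[OF LcF[OF k X] subalg] k by simp
    have LSc: "sqint M M (Y (Suc k))" if "k < N" "\<And>j. j \<le> N \<Longrightarrow> sqint M M (Y j)" for k and Y :: "nat \<Rightarrow> 'a \<Rightarrow> real^'n"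
      using that by simp
    have Lu: "k < N \<Longrightarrow> sqint M M (u k)" for k using predL2_L2[OF uP] .
    have Leta: "k < N \<Longrightarrow> sqint M M (eta k)" for k using predL2_L2[OF etaP] .
    have Lrho: "k < N \<Longrightarrow> sqint M M (rho k)" for k using predL2_L2[OF rhoP] .
    have ybD: "AE x in M. cexp M (F k) (y (Suc k)) x = cexp M (F k) (Is (Suc k)) x + cexp M (F k) (Ls (Suc k)) x + cexp M (F k) (Qz (Suc k)) x"
      if k: "k < N" for k
    proof -
      have kN: "k \<le> N" "Suc k \<le> N" using k by auto
      have a: "sqint M M (\<lambda>x. Is (Suc k) x + Ls (Suc k) x)" using L2_add[OF LIs[OF kN(2)] LLs[OF kN(2)]] .
      have 1: "AE x in M. cexp M (F k) (y (Suc k)) x = cexp M (F k) (\<lambda>x. Is (Suc k) x + Ls (Suc k) x + Qz (Suc k) x) x"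
        by (rule cexp_cong[OF kN(1) yD[OF kN(2)]]) (use L2_meas[OF Ly[OF kN(2)]] L2_meas[OF L2_add[OF a LQz[OF kN(2)]]] in auto)
      have 2: "AE x in M. cexp M (F k) (\<lambda>x. Is (Suc k) x + Ls (Suc k) x + Qz (Suc k) x) x
          = cexp M (F k) (\<lambda>x. Is (Suc k) x + Ls (Suc k) x) x + cexp M (F k) (Qz (Suc k)) x"
        by (rule cexp_add[OF kN(1) a LQz[OF kN(2)]])
      have 3: "AE x in M. cexp M (F k) (\<lambda>x. Is (Suc k) x + Ls (Suc k) x) x = cexp M (F k) (Is (Suc k)) x + cexp M (F k) (Ls (Suc k)) x"
        by (rule cexp_add[OF kN(1) LIs[OF kN(2)] LLs[OF kN(2)]])
      show ?thesis using 1 2 3 by eventually_elim simp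
    qed
    have L0sP: "predL2 M w N (L0s X) \<and> (\<forall>v. predL2 M w N v \<longrightarrow> ipp M N (L0s X) v = ipx M X (L0 v))" if X: "sqint M M X" for X
      using adjL0[OF N0 X, of A B C] unfolding L0s_def U_def L0_def z0_def by auto
    have L1sP: "predL2 M w N (L1s \<phi>) \<and> (\<forall>v. predL2 M w N v \<longrightarrow> ipp M N (L1s \<phi>) v = ipp M N \<phi> (L1 v))" if "adaptL2 M w N \<phi>" for \<phi>
      using adjL1[OF that, of A B C] unfolding L1s_def U_def L1_def z0_def by auto
    have PhisP: "adaptL2 M w N (Phis x) \<and> (\<forall>\<phi>. adaptL2 M w N \<phi> \<longrightarrow> ipp M N (Phis x) \<phi> = ipp M N x (Phi \<phi>))" if "predL2 M w N x" for x
      using adjPhi[OF that] unfolding Phis_def Yset_def Phi_def by auto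
    have L1Y: "adaptL2 M w N (L1 v)" if "predL2 M w N v" for v
      using L1_Y[OF that, of A B C] unfolding L1_def z0_def .
    have PQ: "predL2 M w N (Qop (Phi Y1))" if Y1: "\<And>k. k < N \<Longrightarrow> sqint M M (Y1 k)" for Y1
      unfolding predL2_def Qop_def Phi_def
    proof (intro allI impI)
      fix k assume k: "k < N"
      have c: "sqint M (F k) (cexp M (F k) (Y1 k))" by (rule LcF[OF k Y1[OF k]])
      show "sqint M (F k) (\<lambda>x. Q k *v cexp M (F k) (Y1 k) x)"
        using sqint_mat[OF c meas_FM[OF _ sqint_meas[OF c]]] k by simp
    qed
    have L1u: "L1 u = (\<lambda>k. Ls (Suc k))" unfolding L1_def Ls_def ..
    have I1x: "I1 xi = (\<lambda>k. Is (Suc k))" unfolding I1_def Is_def ..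
    have Q1z: "Q1 = (\<lambda>k. Qz (Suc k))" unfolding Q1_def Qz_def ..
    have P1: "predL2 M w N (Qop (Phi (L1 u)))" unfolding L1u by (rule PQ) (rule LLs, simp)
    have P2: "predL2 M w N (Qop (Phi (I1 xi)))" unfolding I1x by (rule PQ) (rule LIs, simp)
    have P3: "predL2 M w N (Qop (Phi Q1))" unfolding Q1z by (rule PQ) (rule LQz, simp)
    have P4: "predL2 M w N (StOp u)" unfolding predL2_def StOp_def
    proof (intro allI impI)
      fix k assume k: "k < N"
      have c: "sqint M (F k) (u k)" using uP k by (simp add: predL2_def)
      show "sqint M (F k) (\<lambda>x. transpose (S k) *v u k x)"
        using sqint_mat[OF c meas_FM[OF _ sqint_meas[OF c]]] k by simp
    qed
    have XG: "sqint M M (G0op X)" if "sqint M M X" for X unfolding G0op_def by (rule L2_mat_g[OF that])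
    have X1: "sqint M M (G0op (L0 u))" unfolding L0_def by (rule XG) (rule sol_L2[OF LsS[unfolded Ls_def]], simp)
    have X2: "sqint M M (G0op (I0 xi))" unfolding I0_def by (rule XG) (rule sol_L2[OF IsS[unfolded Is_def]], simp)
    have X3: "sqint M M (G0op Q0)" unfolding Q0_def by (rule XG) (rule sol_L2[OF QzS[unfolded Qz_def]], simp)
    have PL2: "k < N \<Longrightarrow> sqint M M (h k)" if "predL2 M w N h" for h :: "nat \<Rightarrow> 'a \<Rightarrow> real^'m" and k
      using predL2_L2[OF that] by blast
    have PhisA: "adaptL2 M w N (Phis x)" if "predL2 M w N x" for x using PhisP[OF that] by blast
    have T1: "k < N \<Longrightarrow> sqint M M (L0s (G0op (L0 u)) k)" for k using PL2 L0sP[OF X1] by blast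
    have T2: "k < N \<Longrightarrow> sqint M M (L1s (Phis (Qop (Phi (L1 u)))) k)" for k using PL2 L1sP[OF PhisA[OF P1]] by blast
    have T3: "k < N \<Longrightarrow> sqint M M (L1s (Phis (StOp u)) k)" for k using PL2 L1sP[OF PhisA[OF P4]] by blast
    have T6: "k < N \<Longrightarrow> sqint M M (L0s (G0op (I0 xi)) k)" for k using PL2 L0sP[OF X2] by blast
    have T7: "k < N \<Longrightarrow> sqint M M (L1s (Phis (Qop (Phi (I1 xi)))) k)" for k using PL2 L1sP[OF PhisA[OF P2]] by blast
    have T9: "k < N \<Longrightarrow> sqint M M (L0s (G0op Q0) k)" for k using PL2 L0sP[OF X3] by blast
    have T10: "k < N \<Longrightarrow> sqint M M (L1s (Phis (Qop (Phi Q1))) k)" for k using PL2 L1sP[OF PhisA[OF P3]] by blast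
    have T11: "k < N \<Longrightarrow> sqint M M (L1s (Phis eta) k)" for k using PL2 L1sP[OF PhisA[OF etaP]] by blast
    have TS: "sqint M M (Sop (Phi Y1) k)" if "k < N" "sqint M M (Y1 k)" for k Y1
      unfolding Sop_def Phi_def by (rule L2_mat_g[OF Lc[OF that]])
    have T4: "k < N \<Longrightarrow> sqint M M (Sop (Phi (L1 u)) k)" for k by (rule TS) (simp_all add: L1u LLs)
    have T8: "k < N \<Longrightarrow> sqint M M (Sop (Phi (I1 xi)) k)" for k by (rule TS) (simp_all add: I1x LIs)
    have T12: "k < N \<Longrightarrow> sqint M M (Sop (Phi Q1) k)" for k by (rule TS) (simp_all add: Q1z LQz)
    have T5: "sqint M M (Rop u k)" if "k < N" for k unfolding Rop_def by (rule L2_mat_g[OF Lu[OF that]])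
    note TT = T1 T2 T3 T4 T5 T6 T7 T8 T9 T10 T11 T12 Lrho
    have gL: "k < N \<Longrightarrow> sqint M M (g k)" for k
      unfolding g_def Au_def Bxi_def a_def using TT by (auto intro!: L2_add)
    obtain K where K0: "K \<ge> 0" and KB: "\<forall>v d. predL2 M w N v \<longrightarrow> is_sol M w N A B C (\<lambda>k x. 0) (\<lambda>x. 0) v d \<longrightarrow>
     \<bar>integral\<^sup>L M (\<lambda>x. inner (G0 *v d 0 x) (d 0 x) + (\<Sum>k<N. inner (Q k *v cexp M (F k) (d (Suc k)) x) (cexp M (F k) (d (Suc k)) x)
          + 2 * inner (S k *v cexp M (F k) (d (Suc k)) x) (v k x) + inner (R k *v v k x) (v k x)))\<bar> \<le> K * vnorm v"
      using quad_bound[where A=A and B=B and C=C and Q=Q and S=S and R=R] by blast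
    show ?thesis
      unfolding U_def
    proof (rule frechet_intro[where K = K and Qd = "\<lambda>v. 1/2 * integral\<^sup>L M (\<lambda>x. inner (G0 *v sol M w N A B C (\<lambda>k x. 0) (\<lambda>x. 0) v 0 x) (sol M w N A B C (\<lambda>k x. 0) (\<lambda>x. 0) v 0 x)
          + (\<Sum>k<N. inner (Q k *v cexp M (F k) (sol M w N A B C (\<lambda>k x. 0) (\<lambda>x. 0) v (Suc k)) x) (cexp M (F k) (sol M w N A B C (\<lambda>k x. 0) (\<lambda>x. 0) v (Suc k)) x)
          + 2 * inner (S k *v cexp M (F k) (sol M w N A B C (\<lambda>k x. 0) (\<lambda>x. 0) v (Suc k)) x) (v k x) + inner (R k *v v k x) (v k x)))"])
      show "\<And>k. k < N \<Longrightarrow> sqint M M (g k)" by (rule gL)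
      show "0 \<le> K" by (rule K0)
    next
      fix v :: "nat \<Rightarrow> 'a \<Rightarrow> real^'m" assume v: "predL2 M w N v"
      define d where "d = sol M w N A B C (\<lambda>k x. 0) (\<lambda>x. 0) v"
      have dS: "is_sol M w N A B C (\<lambda>k x. 0) (\<lambda>x. 0) v d" unfolding d_def by (rule sol_is[OF v predL2_zero sqint_zero])
      have ippv: "ipp M N v v = vnorm v" by (rule ipp_vnorm[OF v])
      have Vn: "0 \<le> vnorm v" by (rule vnorm_nonneg)
      have kb: "\<bar>integral\<^sup>L M (\<lambda>x. inner (G0 *v d 0 x) (d 0 x) + (\<Sum>k<N. inner (Q k *v cexp M (F k) (d (Suc k)) x) (cexp M (F k) (d (Suc k)) x)
          + 2 * inner (S k *v cexp M (F k) (d (Suc k)) x) (v k x) + inner (R k *v v k x) (v k x)))\<bar> \<le> K * vnorm v"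
        using KB v dS by blast
      show "\<bar>1/2 * integral\<^sup>L M (\<lambda>x. inner (G0 *v sol M w N A B C (\<lambda>k x. 0) (\<lambda>x. 0) v 0 x) (sol M w N A B C (\<lambda>k x. 0) (\<lambda>x. 0) v 0 x)
          + (\<Sum>k<N. inner (Q k *v cexp M (F k) (sol M w N A B C (\<lambda>k x. 0) (\<lambda>x. 0) v (Suc k)) x) (cexp M (F k) (sol M w N A B C (\<lambda>k x. 0) (\<lambda>x. 0) v (Suc k)) x)
          + 2 * inner (S k *v cexp M (F k) (sol M w N A B C (\<lambda>k x. 0) (\<lambda>x. 0) v (Suc k)) x) (v k x) + inner (R k *v v k x) (v k x)))\<bar> \<le> K * ipp M N v v"
        using kb K0 Vn unfolding d_def[symmetric] ippv by (simp add: abs_mult mult_nonneg_nonneg)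
      show "cost M w N A B C q G0 Q S R eta rho xi (\<lambda>k x. u k x + v k x) - cost M w N A B C q G0 Q S R eta rho xi u - ipp M N g v =
         1/2 * integral\<^sup>L M (\<lambda>x. inner (G0 *v sol M w N A B C (\<lambda>k x. 0) (\<lambda>x. 0) v 0 x) (sol M w N A B C (\<lambda>k x. 0) (\<lambda>x. 0) v 0 x)
          + (\<Sum>k<N. inner (Q k *v cexp M (F k) (sol M w N A B C (\<lambda>k x. 0) (\<lambda>x. 0) v (Suc k)) x) (cexp M (F k) (sol M w N A B C (\<lambda>k x. 0) (\<lambda>x. 0) v (Suc k)) x)
          + 2 * inner (S k *v cexp M (F k) (sol M w N A B C (\<lambda>k x. 0) (\<lambda>x. 0) v (Suc k)) x) (v k x) + inner (R k *v v k x) (v k x)))"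
      proof -
        have Lv: "k < N \<Longrightarrow> sqint M M (v k)" for k using predL2_L2[OF v] .
        have Ld: "k \<le> N \<Longrightarrow> sqint M M (d k)" for k using sol_L2[OF dS] .
        have Ldb: "k < N \<Longrightarrow> sqint M M (cexp M (F k) (d (Suc k)))" for k using Lc Ld by simp
        have chain: "ipp M N (L1s (Phis X)) v = ipp M N X (Phi (L1 v))" if "predL2 M w N X" for X
          using L1sP[OF PhisA[OF that]] PhisP[OF that] L1Y[OF v] v by auto
        have PhiL1v: "Phi (L1 v) = (\<lambda>k. cexp M (F k) (d (Suc k)))" unfolding Phi_def L1_def d_def z0_def ..
        have ippdb: "ipp M N X (Phi (L1 v)) = (\<Sum>k<N. integral\<^sup>L M (\<lambda>x. inner (X k x) (cexp M (F k) (d (Suc k)) x)))"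
          if "\<And>k. k < N \<Longrightarrow> sqint M M (X k)" for X
          unfolding PhiL1v by (rule ipp_sum) (use that Ldb in auto)
        have ippv: "ipp M N X v = (\<Sum>k<N. integral\<^sup>L M (\<lambda>x. inner (X k x) (v k x)))"
          if "\<And>k. k < N \<Longrightarrow> sqint M M (X k)" for X :: "nat \<Rightarrow> 'a \<Rightarrow> real^'m"
          by (rule ipp_sum) (use that Lv in auto)
        have S1: "ipp M N g v = ipp M N (L0s (G0op (L0 u))) v + ipp M N (L1s (Phis (Qop (Phi (L1 u))))) v
            + ipp M N (L1s (Phis (StOp u))) v + ipp M N (Sop (Phi (L1 u))) v + ipp M N (Rop u) v
            + ipp M N (L0s (G0op (I0 xi))) v + ipp M N (L1s (Phis (Qop (Phi (I1 xi))))) v + ipp M N (Sop (Phi (I1 xi))) v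
            + ipp M N (L0s (G0op Q0)) v + ipp M N (L1s (Phis (Qop (Phi Q1)))) v + ipp M N (L1s (Phis eta)) v
            + ipp M N (Sop (Phi Q1)) v + ipp M N rho v"
          unfolding g_def Au_def Bxi_def a_def using TT Lv by (simp add: ipp_add L2_add add.assoc)
        have e1: "ipp M N (L0s (G0op (L0 u))) v = integral\<^sup>L M (\<lambda>x. inner (G0 *v Ls 0 x) (d 0 x))"
          using L0sP[OF X1] v unfolding ipx_def G0op_def L0_def Ls_def d_def z0_def by simp
        have e6: "ipp M N (L0s (G0op (I0 xi))) v = integral\<^sup>L M (\<lambda>x. inner (G0 *v Is 0 x) (d 0 x))"
          using L0sP[OF X2] v unfolding ipx_def G0op_def L0_def I0_def Is_def d_def z0_def by simp
        have e9: "ipp M N (L0s (G0op Q0)) v = integral\<^sup>L M (\<lambda>x. inner (G0 *v Qz 0 x) (d 0 x))"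
          using L0sP[OF X3] v unfolding ipx_def G0op_def L0_def Q0_def Qz_def d_def z0_def by simp
        have e2: "ipp M N (L1s (Phis (Qop (Phi (L1 u))))) v = (\<Sum>k<N. integral\<^sup>L M (\<lambda>x. inner (Q k *v cexp M (F k) (Ls (Suc k)) x) (cexp M (F k) (d (Suc k)) x)))"
          using chain[OF P1] ippdb[OF predL2_L2[OF P1]] unfolding Qop_def Phi_def L1u by simp
        have e7: "ipp M N (L1s (Phis (Qop (Phi (I1 xi))))) v = (\<Sum>k<N. integral\<^sup>L M (\<lambda>x. inner (Q k *v cexp M (F k) (Is (Suc k)) x) (cexp M (F k) (d (Suc k)) x)))"
          using chain[OF P2] ippdb[OF predL2_L2[OF P2]] unfolding Qop_def Phi_def I1x by simp
        have e10: "ipp M N (L1s (Phis (Qop (Phi Q1)))) v = (\<Sum>k<N. integral\<^sup>L M (\<lambda>x. inner (Q k *v cexp M (F k) (Qz (Suc k)) x) (cexp M (F k) (d (Suc k)) x)))"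
          using chain[OF P3] ippdb[OF predL2_L2[OF P3]] unfolding Qop_def Phi_def Q1z by simp
        have e3: "ipp M N (L1s (Phis (StOp u))) v = (\<Sum>k<N. integral\<^sup>L M (\<lambda>x. inner (transpose (S k) *v u k x) (cexp M (F k) (d (Suc k)) x)))"
          using chain[OF P4] ippdb[OF predL2_L2[OF P4]] unfolding StOp_def Phi_def by simp
        have e11: "ipp M N (L1s (Phis eta)) v = (\<Sum>k<N. integral\<^sup>L M (\<lambda>x. inner (eta k x) (cexp M (F k) (d (Suc k)) x)))"
          using chain[OF etaP] ippdb[OF Leta] unfolding Phi_def by simp
        have e4: "ipp M N (Sop (Phi (L1 u))) v = (\<Sum>k<N. integral\<^sup>L M (\<lambda>x. inner (S k *v cexp M (F k) (Ls (Suc k)) x) (v k x)))"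
          using ippv[OF T4] unfolding Sop_def Phi_def L1u by simp
        have e8: "ipp M N (Sop (Phi (I1 xi))) v = (\<Sum>k<N. integral\<^sup>L M (\<lambda>x. inner (S k *v cexp M (F k) (Is (Suc k)) x) (v k x)))"
          using ippv[OF T8] unfolding Sop_def Phi_def I1x by simp
        have e12: "ipp M N (Sop (Phi Q1)) v = (\<Sum>k<N. integral\<^sup>L M (\<lambda>x. inner (S k *v cexp M (F k) (Qz (Suc k)) x) (v k x)))"
          using ippv[OF T12] unfolding Sop_def Phi_def Q1z by simp
        have e5: "ipp M N (Rop u) v = (\<Sum>k<N. integral\<^sup>L M (\<lambda>x. inner (R k *v u k x) (v k x)))"
          using ippv[OF T5] unfolding Rop_def by simp
        have e13: "ipp M N rho v = (\<Sum>k<N. integral\<^sup>L M (\<lambda>x. inner (rho k x) (v k x)))"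
          using ippv[OF Lrho] by simp
        have Lyb: "k < N \<Longrightarrow> sqint M M (cexp M (F k) (y (Suc k)))" for k using Lc Ly by simp
        have LIb: "k < N \<Longrightarrow> sqint M M (cexp M (F k) (Is (Suc k)))" for k using Lc LIs by simp
        have LLb: "k < N \<Longrightarrow> sqint M M (cexp M (F k) (Ls (Suc k)))" for k using Lc LLs by simp
        have LQb: "k < N \<Longrightarrow> sqint M M (cexp M (F k) (Qz (Suc k)))" for k using Lc LQz by simp
        have d0: "integral\<^sup>L M (\<lambda>x. inner (G0 *v y 0 x) (d 0 x)) = integral\<^sup>L M (\<lambda>x. inner (G0 *v Is 0 x) (d 0 x))
            + integral\<^sup>L M (\<lambda>x. inner (G0 *v Ls 0 x) (d 0 x)) + integral\<^sup>L M (\<lambda>x. inner (G0 *v Qz 0 x) (d 0 x))"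
          by (rule int3_AE[OF yD]) (simp_all add: Ly LIs LLs LQz Ld)
        have dQ: "integral\<^sup>L M (\<lambda>x. inner (Q k *v cexp M (F k) (y (Suc k)) x) (cexp M (F k) (d (Suc k)) x))
            = integral\<^sup>L M (\<lambda>x. inner (Q k *v cexp M (F k) (Is (Suc k)) x) (cexp M (F k) (d (Suc k)) x))
            + integral\<^sup>L M (\<lambda>x. inner (Q k *v cexp M (F k) (Ls (Suc k)) x) (cexp M (F k) (d (Suc k)) x))
            + integral\<^sup>L M (\<lambda>x. inner (Q k *v cexp M (F k) (Qz (Suc k)) x) (cexp M (F k) (d (Suc k)) x))" if k: "k < N" for k
          by (rule int3_AE[OF ybD[OF k]]) (simp_all add: k Lyb LIb LLb LQb Ldb)
        have dS': "integral\<^sup>L M (\<lambda>x. inner (S k *v cexp M (F k) (y (Suc k)) x) (v k x))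
            = integral\<^sup>L M (\<lambda>x. inner (S k *v cexp M (F k) (Is (Suc k)) x) (v k x))
            + integral\<^sup>L M (\<lambda>x. inner (S k *v cexp M (F k) (Ls (Suc k)) x) (v k x))
            + integral\<^sup>L M (\<lambda>x. inner (S k *v cexp M (F k) (Qz (Suc k)) x) (v k x))" if k: "k < N" for k
          by (rule int3_AE[OF ybD[OF k]]) (simp_all add: k Lyb LIb LLb LQb Lv)
        have iI: "integrable M (\<lambda>x. inner (X x) (Z x))" if "sqint M M X" "sqint M M Z" for X Z :: "'a \<Rightarrow> real^'d"
          by (rule L2_inner[OF that])
        have split6: "integral\<^sup>L M (\<lambda>x. inner (Q k *v cexp M (F k) (y (Suc k)) x) (cexp M (F k) (d (Suc k)) x)
            + inner (S k *v cexp M (F k) (y (Suc k)) x) (v k x) + inner (transpose (S k) *v u k x) (cexp M (F k) (d (Suc k)) x)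
            + inner (R k *v u k x) (v k x) + inner (eta k x) (cexp M (F k) (d (Suc k)) x) + inner (rho k x) (v k x))
          = integral\<^sup>L M (\<lambda>x. inner (Q k *v cexp M (F k) (y (Suc k)) x) (cexp M (F k) (d (Suc k)) x))
            + integral\<^sup>L M (\<lambda>x. inner (S k *v cexp M (F k) (y (Suc k)) x) (v k x))
            + integral\<^sup>L M (\<lambda>x. inner (transpose (S k) *v u k x) (cexp M (F k) (d (Suc k)) x))
            + integral\<^sup>L M (\<lambda>x. inner (R k *v u k x) (v k x)) + integral\<^sup>L M (\<lambda>x. inner (eta k x) (cexp M (F k) (d (Suc k)) x))
            + integral\<^sup>L M (\<lambda>x. inner (rho k x) (v k x))" if k: "k < N" for k
          by (rule int6) (use k in \<open>auto intro!: L2_inner L2_mat_g Lyb Ldb Lv Lu Leta Lrho\<close>)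
        have splitD: "integral\<^sup>L M (\<lambda>x. inner (G0 *v y 0 x) (d 0 x) + (\<Sum>k<N. inner (Q k *v cexp M (F k) (y (Suc k)) x) (cexp M (F k) (d (Suc k)) x)
            + inner (S k *v cexp M (F k) (y (Suc k)) x) (v k x) + inner (transpose (S k) *v u k x) (cexp M (F k) (d (Suc k)) x)
            + inner (R k *v u k x) (v k x) + inner (eta k x) (cexp M (F k) (d (Suc k)) x) + inner (rho k x) (v k x)))
          = integral\<^sup>L M (\<lambda>x. inner (G0 *v y 0 x) (d 0 x)) + (\<Sum>k<N. integral\<^sup>L M (\<lambda>x. inner (Q k *v cexp M (F k) (y (Suc k)) x) (cexp M (F k) (d (Suc k)) x)
            + inner (S k *v cexp M (F k) (y (Suc k)) x) (v k x) + inner (transpose (S k) *v u k x) (cexp M (F k) (d (Suc k)) x)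
            + inner (R k *v u k x) (v k x) + inner (eta k x) (cexp M (F k) (d (Suc k)) x) + inner (rho k x) (v k x)))"
          by (rule int_split) (auto intro!: Bochner_Integration.integrable_add L2_inner L2_mat_g Ly Ld Lyb Ldb Lv Lu Leta Lrho)
        have Df: "ipp M N g v = integral\<^sup>L M (\<lambda>x. inner (G0 *v y 0 x) (d 0 x) + (\<Sum>k<N. inner (Q k *v cexp M (F k) (y (Suc k)) x) (cexp M (F k) (d (Suc k)) x)
            + inner (S k *v cexp M (F k) (y (Suc k)) x) (v k x) + inner (transpose (S k) *v u k x) (cexp M (F k) (d (Suc k)) x)
            + inner (R k *v u k x) (v k x) + inner (eta k x) (cexp M (F k) (d (Suc k)) x) + inner (rho k x) (v k x)))"
          unfolding splitD d0 S1 e1 e2 e3 e4 e5 e6 e7 e8 e9 e10 e11 e12 e13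
          by (simp add: split6 dQ dS' sum.distrib)
        show ?thesis
          using cost_diff[OF qP G0s Qs Rs etaP rhoP xiP uP v] Df unfolding y_def d_def by simp
      qed
    qed
  qed
  then show ?thesis
    unfolding Let_def g_def Au_def Bxi_def a_def L0s_def L1s_def Phis_def Rop_def StOp_def Sop_def Qop_def G0op_def
      Phi_def Q1_def Q0_def L1_def L0_def I1_def I0_def z0_def Yset_def U_def .
qed


theorem lemma3p3:
  fixes M :: "'a measure" and w :: "nat \<Rightarrow> 'a \<Rightarrow> real" and N :: nat
    and A C :: "nat \<Rightarrow> real^'n^'n" and B :: "nat \<Rightarrow> real^'m^'n"
    and q eta :: "nat \<Rightarrow> 'a \<Rightarrow> real^'n" and rho :: "nat \<Rightarrow> 'a \<Rightarrow> real^'m"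
    and G0 :: "real^'n^'n" and Q :: "nat \<Rightarrow> real^'n^'n" and S :: "nat \<Rightarrow> real^'n^'m"
    and R :: "nat \<Rightarrow> real^'m^'m"
    and xi :: "'a \<Rightarrow> real^'n" and u :: "nat \<Rightarrow> 'a \<Rightarrow> real^'m"
  assumes "prob_space M" and "complete_measure M" and "N \<ge> 1"
    and "\<forall>k<N. w k \<in> borel_measurable M \<and> integrable M (\<lambda>x. (w k x)\<^sup>2)"
    and "\<forall>k<N. AE x in M. real_cond_exp M (filt M w k) (w k) x = 0"
    and "\<forall>k<N. AE x in M. real_cond_exp M (filt M w k) (\<lambda>y. (w k y)\<^sup>2) x = 1"
    and "predL2 M w N q"
    and "transpose G0 = G0" and "\<forall>k<N. transpose (Q k) = Q k" and "\<forall>k<N. transpose (R k) = R k"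
    and "predL2 M w N eta" and "predL2 M w N rho"
    and "sqint M (filt M w N) xi"
    and "predL2 M w N u"
  shows
   "let U = {h :: nat \<Rightarrow> 'a \<Rightarrow> real^'m. predL2 M w N h};
        Y = {h :: nat \<Rightarrow> 'a \<Rightarrow> real^'n. adaptL2 M w N h};
        z0 = (\<lambda>k x. 0 :: real^'n);
        I0 = (\<lambda>\<zeta>. sol M w N A B C z0 \<zeta> (\<lambda>k x. 0) 0);
        I1 = (\<lambda>\<zeta> k. sol M w N A B C z0 \<zeta> (\<lambda>k x. 0) (Suc k));
        L0 = (\<lambda>v. sol M w N A B C z0 (\<lambda>x. 0) v 0);
        L1 = (\<lambda>v k. sol M w N A B C z0 (\<lambda>x. 0) v (Suc k));
        Q0 = sol M w N A B C q (\<lambda>x. 0) (\<lambda>k x. 0) 0;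
        Q1 = (\<lambda>k. sol M w N A B C q (\<lambda>x. 0) (\<lambda>k x. 0) (Suc k));
        Phi = (\<lambda>\<phi> k. cexp M (filt M w k) (\<phi> k));
        G0op = (\<lambda>X x. G0 *v X x);
        Qop = (\<lambda>\<phi> k x. Q k *v \<phi> k x);
        Sop = (\<lambda>\<phi> k x. S k *v \<phi> k x);
        StOp = (\<lambda>v k x. transpose (S k) *v v k x);
        Rop = (\<lambda>v k x. R k *v v k x);
        L0s = hadj U (ipp M N) (ipx M) L0;
        L1s = hadj U (ipp M N) (ipp M N) L1;
        Phis = hadj Y (ipp M N) (ipp M N) Phi;
        Au = (\<lambda>k x. L0s (G0op (L0 u)) k x + L1s (Phis (Qop (Phi (L1 u)))) k x
                    + L1s (Phis (StOp u)) k x + Sop (Phi (L1 u)) k x + Rop u k x);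
        Bxi = (\<lambda>k x. L0s (G0op (I0 xi)) k x + L1s (Phis (Qop (Phi (I1 xi)))) k x
                    + Sop (Phi (I1 xi)) k x);
        a = (\<lambda>k x. L0s (G0op Q0) k x + L1s (Phis (Qop (Phi Q1))) k x + L1s (Phis eta) k x
                  + Sop (Phi Q1) k x + rho k x)
    in frechet_at U (\<lambda>v. sqrt (ipp M N v v))
         (\<lambda>v. cost M w N A B C q G0 Q S R eta rho xi v) u
         (\<lambda>v. ipp M N (\<lambda>k x. Au k x + Bxi k x + a k x) v)"
proof -
  have stp: "stp M w N"
    by (rule stp.intro) (use assms in auto)
  have N0: "0 < N" using assms(3) by simp
  show ?thesis
    by (rule main_stmt[OF stp N0 assms(7) assms(8) assms(9) assms(10) assms(11) assms(12) assms(13) assms(14)])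
qed

end
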